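(* Let $n\ge 1$ and let $\theta=(\theta^{ij})$ and $\theta'=(\theta'^{ij})$ be arbitrary real antisymmetric $n\times n$ matrices. Then the differential graded algebras $(A_\theta,d)$ and $(A_{\theta'},d)$ are quasi-isomorphic.
   Context: For a real antisymmetric $n\times n$ matrix $\theta$, $A_\theta$ denotes the unital associative graded algebra over $\mathbb{R}$ generated by elements $x^1,\dots,x^n$ of degree $0$ and $\xi^1,\dots,\xi^n$ of degree $1$ subject to the relations $x^ix^j-x^jx^i=\theta^{ij}$ (times the unit), $x^i\xi^j-\xi^jx^i=0$, $\xi^i\xi^j=0$ for all $i,j$. It carries the differential $d$ of degree $+1$ determined by $dx^i=\xi^i$, $d\xi^i=0$ and the graded Leibniz rule. Two dg-algebras $A,B$ are called quasi-isomorphic if there is a zig-zag $A\leftarrow C_1\rightarrow C_2\leftarrow\cdots\leftarrow C_m\rightarrow B$ of dg-algebra morphisms each of which induces an isomorphism in cohomology. *)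

theory Defs
  imports Complex_Main
begin

record 'a dga =
  dg_carrier :: "'a set"
  dg_hom     :: "int \<Rightarrow> 'a set"     (* homogeneous component of degree k *)
  dg_add     :: "'a \<Rightarrow> 'a \<Rightarrow> 'a"
  dg_zero    :: 'a
  dg_smult   :: "real \<Rightarrow> 'a \<Rightarrow> 'a"
  dg_mult    :: "'a \<Rightarrow> 'a \<Rightarrow> 'a"
  dg_one     :: 'a
  dg_diff    :: "'a \<Rightarrow> 'a"

definition dg_sum :: "'a dga \<Rightarrow> (int \<Rightarrow> 'a) \<Rightarrow> 'a" where
  "dg_sum A c = foldr (\<lambda>k acc. dg_add A (c k) acc)
      (sorted_list_of_set {k. c k \<noteq> dg_zero A}) (dg_zero A)"

definition dga :: "'a dga \<Rightarrow> bool" where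
  "dga A \<longleftrightarrow>
   (let C = dg_carrier A; pl = dg_add A; z = dg_zero A; sm = dg_smult A;
        mu = dg_mult A; u = dg_one A; d = dg_diff A; H = dg_hom A in
    \<comment> \<open>closure\<close>
    z \<in> C \<and> u \<in> C \<and>
    (\<forall>x\<in>C. \<forall>y\<in>C. pl x y \<in> C \<and> mu x y \<in> C) \<and>
    (\<forall>a. \<forall>x\<in>C. sm a x \<in> C) \<and> (\<forall>x\<in>C. d x \<in> C) \<and>
    \<comment> \<open>real vector space\<close>
    (\<forall>x\<in>C. \<forall>y\<in>C. \<forall>w\<in>C. pl (pl x y) w = pl x (pl y w)) \<and>
    (\<forall>x\<in>C. \<forall>y\<in>C. pl x y = pl y x) \<and>
    (\<forall>x\<in>C. pl z x = x) \<and>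
    (\<forall>x\<in>C. \<exists>y\<in>C. pl x y = z) \<and>
    (\<forall>a b. \<forall>x\<in>C. sm a (sm b x) = sm (a * b) x) \<and>
    (\<forall>x\<in>C. sm 1 x = x) \<and>
    (\<forall>a. \<forall>x\<in>C. \<forall>y\<in>C. sm a (pl x y) = pl (sm a x) (sm a y)) \<and>
    (\<forall>a b. \<forall>x\<in>C. sm (a + b) x = pl (sm a x) (sm b x)) \<and>
    \<comment> \<open>unital associative algebra\<close>
    (\<forall>x\<in>C. \<forall>y\<in>C. \<forall>w\<in>C. mu (mu x y) w = mu x (mu y w)) \<and>
    (\<forall>x\<in>C. mu u x = x \<and> mu x u = x) \<and>
    (\<forall>x\<in>C. \<forall>y\<in>C. \<forall>w\<in>C. mu x (pl y w) = pl (mu x y) (mu x w)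
                        \<and> mu (pl y w) x = pl (mu y x) (mu w x)) \<and>
    (\<forall>a. \<forall>x\<in>C. \<forall>y\<in>C. sm a (mu x y) = mu (sm a x) y \<and> sm a (mu x y) = mu x (sm a y)) \<and>
    \<comment> \<open>grading: direct sum of subspaces, compatible with product and unit\<close>
    (\<forall>k. H k \<subseteq> C \<and> z \<in> H k \<and> (\<forall>x\<in>H k. \<forall>y\<in>H k. pl x y \<in> H k)
         \<and> (\<forall>a. \<forall>x\<in>H k. sm a x \<in> H k)) \<and>
    (\<forall>x\<in>C. \<exists>!c. (\<forall>k. c k \<in> H k) \<and> finite {k. c k \<noteq> z} \<and> x = dg_sum A c) \<and>
    (\<forall>k l. \<forall>x\<in>H k. \<forall>y\<in>H l. mu x y \<in> H (k + l)) \<and> u \<in> H 0 \<and>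
    \<comment> \<open>differential of degree +1, square zero, graded Leibniz rule\<close>
    (\<forall>x\<in>C. \<forall>y\<in>C. d (pl x y) = pl (d x) (d y)) \<and>
    (\<forall>a. \<forall>x\<in>C. d (sm a x) = sm a (d x)) \<and>
    (\<forall>k. \<forall>x\<in>H k. d x \<in> H (k + 1)) \<and>
    (\<forall>x\<in>C. d (d x) = z) \<and>
    (\<forall>k. \<forall>x\<in>H k. \<forall>y\<in>C.
        d (mu x y) = pl (mu (d x) y) (sm (if even k then 1 else -1) (mu x (d y)))))"

definition dga_morphism :: "'a dga \<Rightarrow> 'b dga \<Rightarrow> ('a \<Rightarrow> 'b) \<Rightarrow> bool" where
  "dga_morphism A B f \<longleftrightarrow> dga A \<and> dga B \<and>
    (\<forall>x\<in>dg_carrier A. f x \<in> dg_carrier B) \<and>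
    (\<forall>x\<in>dg_carrier A. \<forall>y\<in>dg_carrier A. f (dg_add A x y) = dg_add B (f x) (f y)) \<and>
    (\<forall>a. \<forall>x\<in>dg_carrier A. f (dg_smult A a x) = dg_smult B a (f x)) \<and>
    (\<forall>x\<in>dg_carrier A. \<forall>y\<in>dg_carrier A. f (dg_mult A x y) = dg_mult B (f x) (f y)) \<and>
    f (dg_one A) = dg_one B \<and>
    (\<forall>k. \<forall>x\<in>dg_hom A k. f x \<in> dg_hom B k) \<and>
    (\<forall>x\<in>dg_carrier A. f (dg_diff A x) = dg_diff B (f x))"

text \<open>The map induced on $H^k = (\ker d \cap A^k) / d(A^{k-1})$ is bijective for every k
  (surjectivity and injectivity written out).\<close>
definition quasi_isomorphism :: "'a dga \<Rightarrow> 'b dga \<Rightarrow> ('a \<Rightarrow> 'b) \<Rightarrow> bool" where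
  "quasi_isomorphism A B f \<longleftrightarrow> dga_morphism A B f \<and>
    (\<forall>k. (\<forall>z'\<in>dg_hom B k. dg_diff B z' = dg_zero B \<longrightarrow>
            (\<exists>z\<in>dg_hom A k. dg_diff A z = dg_zero A \<and>
               (\<exists>b\<in>dg_hom B (k - 1). dg_add B (f z) (dg_diff B b) = z'))) \<and>
         (\<forall>z\<in>dg_hom A k. dg_diff A z = dg_zero A \<and>
               (\<exists>b\<in>dg_hom B (k - 1). f z = dg_diff B b) \<longrightarrow>
            (\<exists>a\<in>dg_hom A (k - 1). z = dg_diff A a)))"

definition qiso_from :: "'a dga \<Rightarrow> 'a dga \<Rightarrow> bool" where
  "qiso_from A B \<longleftrightarrow> (\<exists>f. quasi_isomorphism A B f)"

text \<open>Zig-zag  A <- C_1 -> C_2 <- ... <- C_m -> B  (m odd), all of quasi-isomorphisms.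
  With D = A # Cs @ [B], for even j the arrow goes D_(j+1) -> D_j, for odd j D_j -> D_(j+1).\<close>
definition quasi_isomorphic :: "'a dga \<Rightarrow> 'a dga \<Rightarrow> bool" where
  "quasi_isomorphic A B \<longleftrightarrow>
    (\<exists>Cs. odd (length Cs) \<and>
       (let D = A # Cs @ [B] in
        \<forall>j\<le>length Cs. (if even j then qiso_from (D ! (j + 1)) (D ! j)
                                 else qiso_from (D ! j) (D ! (j + 1)))))"

datatype gen = Xg nat | Eg nat   (* Xg i = x^(i+1), Eg i = xi^(i+1), i < n *)

definition gens :: "nat \<Rightarrow> gen set" where
  "gens n = {Xg i | i. i < n} \<union> {Eg i | i. i < n}"

definition FA :: "nat \<Rightarrow> (gen list \<Rightarrow> real) set" where
  "FA n = {f. finite {w. f w \<noteq> 0} \<and> (\<forall>w. f w \<noteq> 0 \<longrightarrow> set w \<subseteq> gens n)}"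

definition fa_add :: "(gen list \<Rightarrow> real) \<Rightarrow> (gen list \<Rightarrow> real) \<Rightarrow> (gen list \<Rightarrow> real)" where
  "fa_add f g = (\<lambda>w. f w + g w)"
definition fa_smult :: "real \<Rightarrow> (gen list \<Rightarrow> real) \<Rightarrow> (gen list \<Rightarrow> real)" where
  "fa_smult c f = (\<lambda>w. c * f w)"
definition fa_sub :: "(gen list \<Rightarrow> real) \<Rightarrow> (gen list \<Rightarrow> real) \<Rightarrow> (gen list \<Rightarrow> real)" where
  "fa_sub f g = (\<lambda>w. f w - g w)"
definition fa_zero :: "gen list \<Rightarrow> real" where
  "fa_zero = (\<lambda>w. 0)"
definition fa_one :: "gen list \<Rightarrow> real" where
  "fa_one = (\<lambda>w. if w = [] then 1 else 0)"
definition fa_gen :: "gen \<Rightarrow> gen list \<Rightarrow> real" where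
  "fa_gen a = (\<lambda>w. if w = [a] then 1 else 0)"
definition fa_mult :: "(gen list \<Rightarrow> real) \<Rightarrow> (gen list \<Rightarrow> real) \<Rightarrow> (gen list \<Rightarrow> real)" where
  "fa_mult f g = (\<lambda>w. \<Sum>k\<in>{0..length w}. f (take k w) * g (drop k w))"

definition A_rels :: "nat \<Rightarrow> (nat \<Rightarrow> nat \<Rightarrow> real) \<Rightarrow> (gen list \<Rightarrow> real) set" where
  "A_rels n \<theta> =
     {fa_sub (fa_sub (fa_mult (fa_gen (Xg i)) (fa_gen (Xg j))) (fa_mult (fa_gen (Xg j)) (fa_gen (Xg i))))
             (fa_smult (\<theta> i j) fa_one) | i j. i < n \<and> j < n}
   \<union> {fa_sub (fa_mult (fa_gen (Xg i)) (fa_gen (Eg j))) (fa_mult (fa_gen (Eg j)) (fa_gen (Xg i)))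
       | i j. i < n \<and> j < n}
   \<union> {fa_mult (fa_gen (Eg i)) (fa_gen (Eg j)) | i j. i < n \<and> j < n}"

inductive_set A_ideal :: "nat \<Rightarrow> (nat \<Rightarrow> nat \<Rightarrow> real) \<Rightarrow> (gen list \<Rightarrow> real) set"
  for n \<theta> where
  rel: "r \<in> A_rels n \<theta> \<Longrightarrow> r \<in> A_ideal n \<theta>"
| zero: "fa_zero \<in> A_ideal n \<theta>"
| add: "f \<in> A_ideal n \<theta> \<Longrightarrow> g \<in> A_ideal n \<theta> \<Longrightarrow> fa_add f g \<in> A_ideal n \<theta>"
| smult: "f \<in> A_ideal n \<theta> \<Longrightarrow> fa_smult c f \<in> A_ideal n \<theta>"
| lmult: "f \<in> A_ideal n \<theta> \<Longrightarrow> a \<in> FA n \<Longrightarrow> fa_mult a f \<in> A_ideal n \<theta>"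
| rmult: "f \<in> A_ideal n \<theta> \<Longrightarrow> a \<in> FA n \<Longrightarrow> fa_mult f a \<in> A_ideal n \<theta>"

definition A_cls :: "nat \<Rightarrow> (nat \<Rightarrow> nat \<Rightarrow> real) \<Rightarrow> (gen list \<Rightarrow> real) \<Rightarrow> (gen list \<Rightarrow> real) set" where
  "A_cls n \<theta> f = {g \<in> FA n. fa_sub f g \<in> A_ideal n \<theta>}"

definition A_rep :: "(gen list \<Rightarrow> real) set \<Rightarrow> (gen list \<Rightarrow> real)" where
  "A_rep P = (SOME f. f \<in> P)"

fun is_xi :: "gen \<Rightarrow> bool" where
  "is_xi (Xg i) = False"
| "is_xi (Eg i) = True"

definition word_deg :: "gen list \<Rightarrow> nat" where
  "word_deg w = length (filter is_xi w)"

definition fa_homog :: "int \<Rightarrow> (gen list \<Rightarrow> real) \<Rightarrow> bool" where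
  "fa_homog k f \<longleftrightarrow> (\<forall>w. f w \<noteq> 0 \<longrightarrow> int (word_deg w) = k)"

text \<open>Graded derivation of the free algebra with d x^i = xi^i, d xi^i = 0:
  d(u x^i v) contributes (-1)^(deg u) u xi^i v.\<close>
definition fa_d :: "(gen list \<Rightarrow> real) \<Rightarrow> (gen list \<Rightarrow> real)" where
  "fa_d f = (\<lambda>w. \<Sum>p<length w. (case w ! p of
       Eg i \<Rightarrow> (if even (word_deg (take p w)) then 1 else -1) * f (w[p := Xg i])
     | Xg i \<Rightarrow> 0))"

definition A_theta :: "nat \<Rightarrow> (nat \<Rightarrow> nat \<Rightarrow> real) \<Rightarrow> (gen list \<Rightarrow> real) set dga" where
  "A_theta n \<theta> =
    \<lparr> dg_carrier = {A_cls n \<theta> f | f. f \<in> FA n},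
      dg_hom = (\<lambda>k. {A_cls n \<theta> f | f. f \<in> FA n \<and> fa_homog k f}),
      dg_add = (\<lambda>P Q. A_cls n \<theta> (fa_add (A_rep P) (A_rep Q))),
      dg_zero = A_cls n \<theta> fa_zero,
      dg_smult = (\<lambda>c P. A_cls n \<theta> (fa_smult c (A_rep P))),
      dg_mult = (\<lambda>P Q. A_cls n \<theta> (fa_mult (A_rep P) (A_rep Q))),
      dg_one = A_cls n \<theta> fa_one,
      dg_diff = (\<lambda>P. A_cls n \<theta> (fa_d (A_rep P))) \<rparr>"

definition antisymmetric_matrix :: "nat \<Rightarrow> (nat \<Rightarrow> nat \<Rightarrow> real) \<Rightarrow> bool" where
  "antisymmetric_matrix n \<theta> \<longleftrightarrow> (\<forall>i<n. \<forall>j<n. \<theta> i j = - \<theta> j i)"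

end

theory Submission
  imports Defs
begin

type_synonym mon = "(nat \<Rightarrow> nat) \<times> nat option"
type_synonym pv = "mon \<Rightarrow> real"

definition mulop :: "nat \<Rightarrow> pv \<Rightarrow> pv" where
  "mulop i p = (\<lambda>(a,s). if a i = 0 then 0 else p (a(i := a i - 1), s))"
definition derop :: "nat \<Rightarrow> pv \<Rightarrow> pv" where
  "derop j p = (\<lambda>(a,s). real (a j + 1) * p (a(j := a j + 1), s))"
definition xop :: "(nat \<Rightarrow> nat \<Rightarrow> real) \<Rightarrow> nat \<Rightarrow> pv \<Rightarrow> pv" where
  "xop th i p = (\<lambda>m. mulop i p m + (\<Sum>j<i. th i j * derop j p m))"
definition eop :: "nat \<Rightarrow> pv \<Rightarrow> pv" where
  "eop i p = (\<lambda>(a,s). if s = Some i then p (a, None) else 0)"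
definition dop :: "pv \<Rightarrow> pv" where
  "dop p = (\<lambda>(a,s). case s of None \<Rightarrow> 0 | Some i \<Rightarrow> derop i p (a, None))"

lemma mulop_ap: "mulop i p (a,s) = (if a i = 0 then 0 else p (a(i := a i - 1), s))"
  by (simp add: mulop_def)
lemma derop_ap: "derop j p (a,s) = real (a j + 1) * p (a(j := a j + 1), s)"
  by (simp add: derop_def)
lemma eop_ap: "eop i p (a,s) = (if s = Some i then p (a, None) else 0)"
  by (simp add: eop_def)
lemma dop_ap: "dop p (a,s) = (case s of None \<Rightarrow> 0 | Some i \<Rightarrow> derop i p (a, None))"
  by (simp add: dop_def)

definition lin :: "(pv \<Rightarrow> pv) \<Rightarrow> bool" where
  "lin T \<longleftrightarrow> (\<forall>p q. T (\<lambda>m. p m + q m) = (\<lambda>m. T p m + T q m)) \<and>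
              (\<forall>c p. T (\<lambda>m. c * p m) = (\<lambda>m. c * T p m))"

lemma lin_add: "lin T \<Longrightarrow> T (\<lambda>m. p m + q m) = (\<lambda>m. T p m + T q m)"
  by (simp add: lin_def)
lemma lin_smult: "lin T \<Longrightarrow> T (\<lambda>m. c * p m) = (\<lambda>m. c * T p m)"
  by (simp add: lin_def)
lemma lin_zero: "lin T \<Longrightarrow> T (\<lambda>m. 0) = (\<lambda>m. 0)"
  using lin_smult[of T 0 "\<lambda>m. 0"] by simp
lemma lin_sum: "lin T \<Longrightarrow> T (\<lambda>m. \<Sum>k\<in>K. F k m) = (\<lambda>m. \<Sum>k\<in>K. T (F k) m)"
proof (induction K rule: infinite_finite_induct)
  case (infinite A) then show ?case using lin_zero by simp
next
  case empty then show ?case using lin_zero by simp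
next
  case (insert x F')
  then show ?case using lin_add[of T "F x" "\<lambda>m. \<Sum>k\<in>F'. F k m"] by simp
qed
lemma lin_diff: "lin T \<Longrightarrow> T (\<lambda>m. p m - q m) = (\<lambda>m. T p m - T q m)"
proof -
  assume l: "lin T"
  have e: "(\<lambda>m. p m - q m) = (\<lambda>m. p m + (\<lambda>m. (-1) * q m) m)" by auto
  show ?thesis unfolding e lin_add[OF l, of p "\<lambda>m. (-1) * q m"] lin_smult[OF l] by simp
qed
lemma lin_comp: "lin S \<Longrightarrow> lin T \<Longrightarrow> lin (\<lambda>p. S (T p))"
  by (simp add: lin_def)
lemma lin_id: "lin (\<lambda>p. p)" by (simp add: lin_def)

lemma lin_mulop: "lin (mulop i)"
  unfolding lin_def by (auto simp: mulop_def fun_eq_iff)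
lemma lin_derop: "lin (derop i)"
  unfolding lin_def by (auto simp: derop_def fun_eq_iff algebra_simps)
lemma lin_eop: "lin (eop i)"
  unfolding lin_def by (auto simp: eop_def fun_eq_iff)
lemma lin_dop: "lin dop"
  unfolding lin_def by (auto simp: dop_def derop_def fun_eq_iff algebra_simps split: option.splits)
lemma lin_xop: "lin (xop th i)"
  unfolding lin_def xop_def
  by (auto simp: lin_add[OF lin_mulop] lin_add[OF lin_derop] lin_smult[OF lin_mulop]
      lin_smult[OF lin_derop] fun_eq_iff algebra_simps sum.distrib sum_distrib_left)

lemma mulop_comm: "mulop i (mulop j p) = mulop j (mulop i p)"
  by (cases "i = j") (auto simp: mulop_def fun_eq_iff fun_upd_twist)

lemma derop_comm: "derop i (derop j p) = derop j (derop i p)"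
  by (cases "i = j") (auto simp: derop_def fun_eq_iff fun_upd_twist)

lemma derop_mulop: "derop k (mulop i p) = (\<lambda>m. mulop i (derop k p) m + (if k = i then p m else 0))"
proof (rule ext, clarify)
  fix a s
  show "derop k (mulop i p) (a,s) = mulop i (derop k p) (a,s) + (if k = i then p (a,s) else 0)"
  proof (cases "k = i")
    case True
    then show ?thesis by (auto simp: derop_def mulop_def algebra_simps)
  next
    case False
    then show ?thesis by (auto simp: derop_def mulop_def fun_upd_twist)
  qed
qed



lemma xx_expand:
  "xop th i (xop th j p) m = mulop i (mulop j p) m + (\<Sum>l<j. th j l * mulop i (derop l p) m)
     + (\<Sum>k<i. th i k * mulop j (derop k p) m) + (if j < i then th i j * p m else 0)
     + (\<Sum>k<i. \<Sum>l<j. th i k * th j l * derop l (derop k p) m)"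
proof -
  have A: "mulop i (xop th j p) m = mulop i (mulop j p) m + (\<Sum>l<j. th j l * mulop i (derop l p) m)"
    unfolding xop_def lin_add[OF lin_mulop] lin_sum[OF lin_mulop] lin_smult[OF lin_mulop] by simp
  have B: "derop k (xop th j p) m = mulop j (derop k p) m + (if k = j then p m else 0)
            + (\<Sum>l<j. th j l * derop l (derop k p) m)" for k
    unfolding xop_def lin_add[OF lin_derop] lin_sum[OF lin_derop] lin_smult[OF lin_derop]
    by (simp add: derop_mulop derop_comm)
  have C: "(\<Sum>k<i. th i k * (if k = j then p m else 0)) = (if j < i then th i j * p m else 0)"
    by (auto simp: if_distrib sum.delta cong: if_cong)
  have "xop th i (xop th j p) m = mulop i (xop th j p) m + (\<Sum>k<i. th i k * derop k (xop th j p) m)"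
    by (simp add: xop_def)
  also have "\<dots> = mulop i (mulop j p) m + (\<Sum>l<j. th j l * mulop i (derop l p) m)
     + (\<Sum>k<i. th i k * mulop j (derop k p) m) + (\<Sum>k<i. th i k * (if k = j then p m else 0))
     + (\<Sum>k<i. \<Sum>l<j. th i k * th j l * derop l (derop k p) m)"
    unfolding A B by (simp only: distrib_left sum.distrib sum_distrib_left mult.assoc add.assoc)
  finally show ?thesis unfolding C .
qed

lemma xop_comm:
  "xop th i (xop th j p) m - xop th j (xop th i p) m =
     ((if j < i then th i j else 0) - (if i < j then th j i else 0)) * p m"
proof -
  have S: "(\<Sum>k<i. \<Sum>l<j. th i k * th j l * derop l (derop k p) m) =
           (\<Sum>l<j. \<Sum>k<i. th j l * th i k * derop k (derop l p) m)"
    by (subst sum.swap) (simp add: derop_comm mult.commute)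
  have M: "mulop i (mulop j p) m = mulop j (mulop i p) m" by (simp add: mulop_comm)
  have R: "((if j < i then th i j else 0) - (if i < j then th j i else 0)) * p m
     = (if j < i then th i j * p m else 0) - (if i < j then th j i * p m else 0)"
    by (simp add: left_diff_distrib)
  show ?thesis unfolding xx_expand[of th i j] xx_expand[of th j i] S R M
    by linarith
qed

definition antisym_th :: "nat \<Rightarrow> (nat \<Rightarrow> nat \<Rightarrow> real) \<Rightarrow> bool" where
  "antisym_th n th \<longleftrightarrow> (\<forall>i<n. \<forall>j<n. th i j = - th j i)"

lemma xop_comm_anti:
  assumes "antisym_th n th" "i < n" "j < n"
  shows "xop th i (xop th j p) m - xop th j (xop th i p) m = th i j * p m"
proof -
  have a: "th i j = - th j i" using assms unfolding antisym_th_def by blast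
  have "th i i = - th i i" using assms unfolding antisym_th_def by blast
  then have z: "th i i = 0" by linarith
  consider "i < j" | "j < i" | "i = j" by linarith
  then show ?thesis
  proof cases
    case 1 then show ?thesis using xop_comm[of th i j p m] by (simp add: a)
  next
    case 2 then show ?thesis using xop_comm[of th i j p m] by simp
  next
    case 3 then show ?thesis using xop_comm[of th i j p m] z by simp
  qed
qed
lemma xop_eop: "xop th i (eop j p) = eop j (xop th i p)"
proof (rule ext, clarify)
  fix a s
  have m: "mulop i (eop j p) (a, s) = (if s = Some j then mulop i p (a, None) else 0)"
    by (simp add: mulop_ap eop_ap)
  have d: "derop l (eop j p) (a, s) = (if s = Some j then derop l p (a, None) else 0)" for l
    by (simp add: derop_ap eop_ap)
  show "xop th i (eop j p) (a, s) = eop j (xop th i p) (a, s)"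
    unfolding xop_def m d eop_ap by simp
qed

lemma eop_eop: "eop i (eop j p) = (\<lambda>m. 0)"
  by (auto simp: eop_def fun_eq_iff)

lemma dop_eop: "dop (eop i p) = (\<lambda>m. 0)"
  by (auto simp: eop_def dop_def derop_def fun_eq_iff split: option.splits)

lemma eop_dop: "eop i (dop p) = (\<lambda>m. 0)"
  by (auto simp: eop_def dop_def derop_def fun_eq_iff split: option.splits)

lemma dop_dop: "dop (dop p) = (\<lambda>m. 0)"
  by (auto simp: dop_def derop_def fun_eq_iff split: option.splits)


lemma dop_xop: "dop (xop th i p) = (\<lambda>m. xop th i (dop p) m + eop i p m)"
proof (rule ext, clarify)
  fix a s
  show "dop (xop th i p) (a, s) = xop th i (dop p) (a, s) + eop i p (a, s)"
  proof (cases s)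
    case None
    have m: "mulop i (dop p) (a, None) = 0" by (simp add: mulop_ap dop_ap)
    have d: "derop l (dop p) (a, None) = 0" for l by (simp add: derop_ap dop_ap)
    show ?thesis unfolding None xop_def m d by (simp add: dop_ap eop_ap)
  next
    case (Some k)
    have "dop (xop th i p) (a, s) = derop k (xop th i p) (a, None)" by (simp add: dop_def Some)
    also have "\<dots> = mulop i (derop k p) (a, None) + (if k = i then p (a, None) else 0)
         + (\<Sum>l<i. th i l * derop l (derop k p) (a, None))"
      unfolding xop_def lin_add[OF lin_derop] lin_sum[OF lin_derop] lin_smult[OF lin_derop]
      by (simp add: derop_mulop derop_comm)
    also have "\<dots> = xop th i (dop p) (a, s) + eop i p (a, s)"
    proof -
      have m: "mulop i (dop p) (a, Some k) = mulop i (derop k p) (a, None)"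
        by (simp add: mulop_ap dop_ap)
      have d: "derop l (dop p) (a, Some k) = derop l (derop k p) (a, None)" for l
        by (simp add: derop_ap dop_ap)
      have e: "eop i p (a, Some k) = (if k = i then p (a, None) else 0)"
        by (simp add: eop_ap)
      show ?thesis unfolding Some xop_def m d e by simp
    qed
    finally show ?thesis .
  qed
qed

lemma antisym_th_eq: "antisym_th n th = antisymmetric_matrix n th"
  by (simp add: antisym_th_def antisymmetric_matrix_def)

fun genop :: "(nat \<Rightarrow> nat \<Rightarrow> real) \<Rightarrow> gen \<Rightarrow> pv \<Rightarrow> pv" where
  "genop th (Xg i) = xop th i"
| "genop th (Eg i) = eop i"

fun wop :: "(nat \<Rightarrow> nat \<Rightarrow> real) \<Rightarrow> gen list \<Rightarrow> pv \<Rightarrow> pv" where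
  "wop th [] p = p"
| "wop th (a # w) p = genop th a (wop th w p)"

lemma lin_genop: "lin (genop th a)"
  by (cases a) (simp_all add: lin_xop lin_eop)

lemma lin_wop: "lin (wop th w)"
proof (induction w)
  case Nil
  then show ?case by (simp add: lin_def)
next
  case (Cons a w)
  have "wop th (a # w) = (\<lambda>p. genop th a (wop th w p))" by (rule ext) simp
  then show ?case using lin_comp[OF lin_genop Cons.IH] by simp
qed

lemma wop_append: "wop th (u @ v) p = wop th u (wop th v p)"
  by (induction u) auto

definition fsupp :: "('a \<Rightarrow> real) \<Rightarrow> 'a set" where
  "fsupp f = {w. f w \<noteq> 0}"

definition rho :: "(nat \<Rightarrow> nat \<Rightarrow> real) \<Rightarrow> (gen list \<Rightarrow> real) \<Rightarrow> pv \<Rightarrow> pv" where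
  "rho th f p = (\<lambda>m. \<Sum>w\<in>fsupp f. f w * wop th w p m)"

lemma rho_superset:
  assumes "finite S" "fsupp f \<subseteq> S"
  shows "rho th f p = (\<lambda>m. \<Sum>w\<in>S. f w * wop th w p m)"
  unfolding rho_def
  by (rule ext, rule sum.mono_neutral_left) (use assms in \<open>auto simp: fsupp_def\<close>)

lemma lin_rho: "lin (rho th f)"
  unfolding lin_def rho_def
  by (simp add: lin_add[OF lin_wop] lin_smult[OF lin_wop] algebra_simps sum.distrib sum_distrib_left)

lemma FA_iff: "f \<in> FA n \<longleftrightarrow> finite (fsupp f) \<and> (\<forall>w. f w \<noteq> 0 \<longrightarrow> set w \<subseteq> gens n)"
  by (simp add: FA_def fsupp_def)

lemma FA_fin: "f \<in> FA n \<Longrightarrow> finite (fsupp f)"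
  by (simp add: FA_iff)

definition dl :: "gen list \<Rightarrow> gen list \<Rightarrow> real" where
  "dl w = (\<lambda>v. if v = w then 1 else 0)"

lemma fsupp_dl: "fsupp (dl w) = {w}"
  by (auto simp: fsupp_def dl_def)

lemma rho_dl: "rho th (dl w) p = wop th w p"
  unfolding rho_def fsupp_dl by (simp add: dl_def)

lemma fa_one_dl: "fa_one = dl []" by (simp add: fa_one_def dl_def)
lemma fa_gen_dl: "fa_gen a = dl [a]" by (simp add: fa_gen_def dl_def)

lemma rho_one: "rho th fa_one p = p"
  by (simp add: fa_one_dl rho_dl)
lemma rho_gen: "rho th (fa_gen a) p = genop th a p"
  by (simp add: fa_gen_dl rho_dl)

lemma rho_zero: "rho th fa_zero p = (\<lambda>m. 0)"
  by (simp add: rho_def fa_zero_def fsupp_def)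

lemma rho_zero2: "rho th f (\<lambda>m. 0) = (\<lambda>m. 0)"
  using lin_zero[OF lin_rho] by blast

lemma fsupp_add: "fsupp (fa_add f g) \<subseteq> fsupp f \<union> fsupp g"
  by (auto simp: fsupp_def fa_add_def)
lemma fsupp_sub: "fsupp (fa_sub f g) \<subseteq> fsupp f \<union> fsupp g"
  by (auto simp: fsupp_def fa_sub_def)
lemma fsupp_smult: "fsupp (fa_smult c f) \<subseteq> fsupp f"
  by (auto simp: fsupp_def fa_smult_def)

lemma rho_add:
  assumes "finite (fsupp f)" "finite (fsupp g)"
  shows "rho th (fa_add f g) p = (\<lambda>m. rho th f p m + rho th g p m)"
proof -
  let ?S = "fsupp f \<union> fsupp g"
  have "finite ?S" using assms by simp
  then show ?thesis
    using rho_superset[of ?S "fa_add f g"] rho_superset[of ?S f] rho_superset[of ?S g] fsupp_add[of f g]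
    by (simp add: fa_add_def algebra_simps sum.distrib)
qed

lemma rho_sub:
  assumes "finite (fsupp f)" "finite (fsupp g)"
  shows "rho th (fa_sub f g) p = (\<lambda>m. rho th f p m - rho th g p m)"
proof -
  let ?S = "fsupp f \<union> fsupp g"
  have "finite ?S" using assms by simp
  then show ?thesis
    using rho_superset[of ?S "fa_sub f g"] rho_superset[of ?S f] rho_superset[of ?S g] fsupp_sub[of f g]
    by (simp add: fa_sub_def algebra_simps sum_subtractf)
qed

lemma rho_smult:
  assumes "finite (fsupp f)"
  shows "rho th (fa_smult c f) p = (\<lambda>m. c * rho th f p m)"
  using assms rho_superset[of "fsupp f" "fa_smult c f"] fsupp_smult[of c f]
  by (simp add: rho_def fa_smult_def sum_distrib_left mult.assoc)

definition splits :: "gen list \<Rightarrow> (gen list \<times> gen list) set" where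
  "splits w = {(u,v). u @ v = w}"

lemma splits_img: "splits w = (\<lambda>k. (take k w, drop k w)) ` {0..length w}"
proof
  show "splits w \<subseteq> (\<lambda>k. (take k w, drop k w)) ` {0..length w}"
  proof clarify
    fix u v assume "(u,v) \<in> splits w"
    then have "u @ v = w" by (simp add: splits_def)
    then show "(u,v) \<in> (\<lambda>k. (take k w, drop k w)) ` {0..length w}"
      by (intro image_eqI[of _ _ "length u"]) auto
  qed
qed (auto simp: splits_def)

lemma splits_finite: "finite (splits w)"
  by (simp add: splits_img)

lemma fa_mult_splits: "fa_mult f g w = (\<Sum>x\<in>splits w. f (fst x) * g (snd x))"
proof -
  have inj: "inj_on (\<lambda>k. (take k w, drop k w)) {0..length w}"
    by (rule inj_onI) (auto dest: arg_cong[of _ _ length])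
  show ?thesis
    unfolding splits_img fa_mult_def sum.reindex[OF inj] by (simp add: comp_def)
qed

lemma fa_mult_nz: "fa_mult f g w \<noteq> 0 \<Longrightarrow> \<exists>u v. w = u @ v \<and> f u \<noteq> 0 \<and> g v \<noteq> 0"
proof -
  assume "fa_mult f g w \<noteq> 0"
  then obtain x where "x \<in> splits w" "f (fst x) * g (snd x) \<noteq> 0"
    unfolding fa_mult_splits by (meson sum.not_neutral_contains_not_neutral)
  then show ?thesis by (cases x) (auto simp: splits_def)
qed

lemma fsupp_mult: "fsupp (fa_mult f g) \<subseteq> (\<lambda>x. fst x @ snd x) ` (fsupp f \<times> fsupp g)"
proof
  fix w assume "w \<in> fsupp (fa_mult f g)"
  then have "fa_mult f g w \<noteq> 0" by (simp add: fsupp_def)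
  then obtain u v where "w = u @ v" "f u \<noteq> 0" "g v \<noteq> 0" using fa_mult_nz by blast
  then show "w \<in> (\<lambda>x. fst x @ snd x) ` (fsupp f \<times> fsupp g)"
    by (intro image_eqI[of _ _ "(u,v)"]) (auto simp: fsupp_def)
qed

lemma fa_mult_restrict:
  assumes "finite A" "finite B" "fsupp f \<subseteq> A" "fsupp g \<subseteq> B"
  shows "fa_mult f g w = (\<Sum>x\<in>{x\<in>A \<times> B. fst x @ snd x = w}. f (fst x) * g (snd x))"
proof -
  have "fa_mult f g w = (\<Sum>x\<in>splits w. f (fst x) * g (snd x))" by (rule fa_mult_splits)
  also have "\<dots> = (\<Sum>x\<in>splits w \<inter> (A \<times> B). f (fst x) * g (snd x))"
    by (rule sum.mono_neutral_right) (use assms splits_finite in \<open>auto simp: fsupp_def\<close>)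
  also have "splits w \<inter> (A \<times> B) = {x\<in>A \<times> B. fst x @ snd x = w}"
    by (auto simp: splits_def)
  finally show ?thesis .
qed

lemma rho_mult:
  assumes "finite (fsupp f)" "finite (fsupp g)"
  shows "rho th (fa_mult f g) p = rho th f (rho th g p)"
proof (rule ext)
  fix m
  let ?A = "fsupp f" and ?B = "fsupp g"
  let ?S = "(\<lambda>x. fst x @ snd x) ` (?A \<times> ?B)"
  have fS: "finite ?S" using assms by simp
  have "rho th (fa_mult f g) p m = (\<Sum>w\<in>?S. fa_mult f g w * wop th w p m)"
    using rho_superset[OF fS fsupp_mult] by simp
  also have "\<dots> = (\<Sum>w\<in>?S. \<Sum>x\<in>{x\<in>?A \<times> ?B. fst x @ snd x = w}. f (fst x) * g (snd x) * wop th (fst x @ snd x) p m)"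
    by (rule sum.cong[OF refl]) (simp add: fa_mult_restrict[OF assms order_refl order_refl] sum_distrib_right)
  also have "\<dots> = (\<Sum>x\<in>?A \<times> ?B. f (fst x) * g (snd x) * wop th (fst x @ snd x) p m)"
    by (rule sum.group) (use assms in auto)
  also have "\<dots> = (\<Sum>u\<in>?A. \<Sum>v\<in>?B. f u * g v * wop th u (wop th v p) m)"
    by (simp add: sum.cartesian_product wop_append case_prod_beta)
  also have "\<dots> = rho th f (rho th g p) m"
    unfolding rho_def lin_sum[OF lin_wop] lin_smult[OF lin_wop]
    by (simp add: sum_distrib_left mult.assoc)
  finally show "rho th (fa_mult f g) p m = rho th f (rho th g p) m" .
qed


lemma gens_X[simp]: "Xg i \<in> gens n \<longleftrightarrow> i < n" by (auto simp: gens_def)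
lemma gens_E[simp]: "Eg i \<in> gens n \<longleftrightarrow> i < n" by (auto simp: gens_def)

lemma FA_add: "f \<in> FA n \<Longrightarrow> g \<in> FA n \<Longrightarrow> fa_add f g \<in> FA n"
proof -
  assume f: "f \<in> FA n" and g: "g \<in> FA n"
  have "finite (fsupp (fa_add f g))"
    by (rule finite_subset[OF fsupp_add]) (use f g FA_fin in auto)
  moreover have "set w \<subseteq> gens n" if nz: "fa_add f g w \<noteq> 0" for w
  proof -
    have "f w \<noteq> 0 \<or> g w \<noteq> 0" using nz by (auto simp: fa_add_def)
    then show ?thesis using f g by (auto simp: FA_iff)
  qed
  ultimately show ?thesis by (simp add: FA_iff)
qed
lemma FA_sub: "f \<in> FA n \<Longrightarrow> g \<in> FA n \<Longrightarrow> fa_sub f g \<in> FA n"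
proof -
  assume f: "f \<in> FA n" and g: "g \<in> FA n"
  have "finite (fsupp (fa_sub f g))"
    by (rule finite_subset[OF fsupp_sub]) (use f g FA_fin in auto)
  moreover have "set w \<subseteq> gens n" if nz: "fa_sub f g w \<noteq> 0" for w
  proof -
    have "f w \<noteq> 0 \<or> g w \<noteq> 0" using nz by (auto simp: fa_sub_def)
    then show ?thesis using f g by (auto simp: FA_iff)
  qed
  ultimately show ?thesis by (simp add: FA_iff)
qed
lemma FA_smult: "f \<in> FA n \<Longrightarrow> fa_smult c f \<in> FA n"
  unfolding FA_iff using fsupp_smult[of c f]
  by (auto intro: finite_subset simp: fa_smult_def)
lemma FA_zero: "fa_zero \<in> FA n"
  by (simp add: FA_iff fa_zero_def fsupp_def)
lemma FA_dl: "set w \<subseteq> gens n \<Longrightarrow> dl w \<in> FA n"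
  by (simp add: FA_iff fsupp_dl) (simp add: dl_def)
lemma FA_one: "fa_one \<in> FA n"
  by (simp add: fa_one_dl FA_dl)
lemma FA_gen: "a \<in> gens n \<Longrightarrow> fa_gen a \<in> FA n"
  by (simp add: fa_gen_dl FA_dl)
lemma FA_mult: "f \<in> FA n \<Longrightarrow> g \<in> FA n \<Longrightarrow> fa_mult f g \<in> FA n"
proof -
  assume f: "f \<in> FA n" and g: "g \<in> FA n"
  have "finite (fsupp (fa_mult f g))"
    by (rule finite_subset[OF fsupp_mult]) (use f g FA_fin in auto)
  moreover have "set w \<subseteq> gens n" if nz: "fa_mult f g w \<noteq> 0" for w
  proof -
    obtain u v where "w = u @ v" "f u \<noteq> 0" "g v \<noteq> 0" using fa_mult_nz[OF nz] by blast
    then show ?thesis using f g by (auto simp: FA_iff)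
  qed
  ultimately show ?thesis by (simp add: FA_iff)
qed

lemma rels_FA: "r \<in> A_rels n th \<Longrightarrow> r \<in> FA n"
  unfolding A_rels_def
  by (auto intro!: FA_sub FA_mult FA_gen FA_smult FA_one)

lemma ideal_FA: "f \<in> A_ideal n th \<Longrightarrow> f \<in> FA n"
  by (induction rule: A_ideal.induct) (auto intro: rels_FA FA_zero FA_add FA_smult FA_mult)

lemma rho_rels:
  assumes "antisymmetric_matrix n th" "r \<in> A_rels n th"
  shows "rho th r p = (\<lambda>m. 0)"
proof -
  have an: "antisym_th n th" using assms(1) by (simp add: antisym_th_eq)
  have fg: "finite (fsupp (fa_gen a))" for a by (simp add: fa_gen_dl fsupp_dl)
  have fm: "finite (fsupp (fa_mult (fa_gen a) (fa_gen b)))" for a b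
    by (rule finite_subset[OF fsupp_mult]) (simp add: fg)
  have f1: "finite (fsupp fa_one)" by (simp add: fa_one_dl fsupp_dl)
  have fs: "finite (fsupp (fa_smult c fa_one))" for c by (rule finite_subset[OF fsupp_smult f1])
  have fsb: "finite (fsupp (fa_sub f g))" if "finite (fsupp f)" "finite (fsupp g)" for f g
    by (rule finite_subset[OF fsupp_sub]) (use that in auto)
  have rm: "rho th (fa_mult (fa_gen a) (fa_gen b)) q = genop th a (genop th b q)" for a b q
    by (simp add: rho_mult fg rho_gen)
  from assms(2) consider
      (1) i j where "i < n" "j < n" "r = fa_sub (fa_sub (fa_mult (fa_gen (Xg i)) (fa_gen (Xg j))) (fa_mult (fa_gen (Xg j)) (fa_gen (Xg i)))) (fa_smult (th i j) fa_one)"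
    | (2) i j where "i < n" "j < n" "r = fa_sub (fa_mult (fa_gen (Xg i)) (fa_gen (Eg j))) (fa_mult (fa_gen (Eg j)) (fa_gen (Xg i)))"
    | (3) i j where "i < n" "j < n" "r = fa_mult (fa_gen (Eg i)) (fa_gen (Eg j))"
    unfolding A_rels_def by blast
  then show ?thesis
  proof cases
    case 1
    show ?thesis unfolding 1(3)
      by (simp add: rho_sub fsb fm fs rm rho_smult f1 rho_one xop_comm_anti[OF an 1(1,2)])
  next
    case 2
    show ?thesis unfolding 2(3)
      by (simp add: rho_sub fm rm xop_eop)
  next
    case 3
    show ?thesis unfolding 3(3)
      by (simp add: rm eop_eop)
  qed
qed

lemma rho_ideal:
  assumes "antisymmetric_matrix n th"
  shows "f \<in> A_ideal n th \<Longrightarrow> rho th f p = (\<lambda>m. 0)"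
proof (induction arbitrary: p rule: A_ideal.induct)
  case (rel r)
  then show ?case using rho_rels[OF assms] by blast
next
  case zero
  then show ?case by (simp add: rho_zero)
next
  case (add f g)
  then show ?case using ideal_FA[OF add.hyps(1)] ideal_FA[OF add.hyps(2)]
    by (simp add: rho_add FA_fin)
next
  case (smult f c)
  then show ?case using ideal_FA[OF smult.hyps(1)] by (simp add: rho_smult FA_fin)
next
  case (lmult f a)
  then show ?case using ideal_FA[OF lmult.hyps(1)] by (simp add: rho_mult FA_fin rho_zero2)
next
  case (rmult f a)
  then show ?case using ideal_FA[OF rmult.hyps(1)] by (simp add: rho_mult FA_fin)
qed

definition sg :: "gen list \<Rightarrow> real" where
  "sg w = (if even (word_deg w) then 1 else -1)"

lemma word_deg_Nil[simp]: "word_deg [] = 0" by (simp add: word_deg_def)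
lemma word_deg_X[simp]: "word_deg (Xg i # w) = word_deg w" by (simp add: word_deg_def)
lemma word_deg_E[simp]: "word_deg (Eg i # w) = Suc (word_deg w)" by (simp add: word_deg_def)
lemma word_deg_append[simp]: "word_deg (u @ v) = word_deg u + word_deg v" by (simp add: word_deg_def)
lemma sg_Nil[simp]: "sg [] = 1" by (simp add: sg_def)
lemma sg_X[simp]: "sg (Xg i # w) = sg w" by (simp add: sg_def)
lemma sg_E[simp]: "sg (Eg i # w) = - sg w" by (simp add: sg_def)

fun wdop :: "(nat \<Rightarrow> nat \<Rightarrow> real) \<Rightarrow> gen list \<Rightarrow> pv \<Rightarrow> pv" where
  "wdop th [] p = (\<lambda>m. 0)"
| "wdop th (Xg i # w) p = (\<lambda>m. eop i (wop th w p) m + xop th i (wdop th w p) m)"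
| "wdop th (Eg i # w) p = (\<lambda>m. - eop i (wdop th w p) m)"

lemma dop_wop: "dop (wop th w p) = (\<lambda>m. wdop th w p m + sg w * wop th w (dop p) m)"
proof (induction w)
  case Nil
  then show ?case by simp
next
  case (Cons a w)
  show ?case
  proof (cases a)
    case (Xg i)
    have "dop (wop th (a # w) p) = dop (xop th i (wop th w p))" by (simp add: Xg)
    also have "\<dots> = (\<lambda>m. xop th i (dop (wop th w p)) m + eop i (wop th w p) m)" by (rule dop_xop)
    also have "\<dots> = (\<lambda>m. wdop th (a # w) p m + sg (a # w) * wop th (a # w) (dop p) m)"
      unfolding Cons.IH lin_add[OF lin_xop] lin_smult[OF lin_xop] by (simp add: Xg fun_eq_iff)
    finally show ?thesis .
  next
    case (Eg i)
    have "(\<lambda>m. wdop th (a # w) p m + sg (a # w) * wop th (a # w) (dop p) m)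
        = (\<lambda>m. - eop i (\<lambda>m. wdop th w p m + sg w * wop th w (dop p) m) m)"
      unfolding lin_add[OF lin_eop] lin_smult[OF lin_eop] by (simp add: Eg)
    also have "\<dots> = (\<lambda>m. 0)" unfolding Cons.IH[symmetric] eop_dop by simp
    finally show ?thesis by (simp add: Eg dop_eop)
  qed
qed

lemma lin_wdop: "lin (wdop th w)"
proof (induction w)
  case Nil
  then show ?case by (simp add: lin_def)
next
  case (Cons a w)
  show ?case
  proof (cases a)
    case (Xg i)
    show ?thesis unfolding Xg lin_def
      by (simp add: lin_add[OF lin_wop] lin_smult[OF lin_wop] lin_add[OF lin_eop] lin_smult[OF lin_eop]
        lin_add[OF lin_xop] lin_smult[OF lin_xop] lin_add[OF Cons.IH] lin_smult[OF Cons.IH] algebra_simps)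
  next
    case (Eg i)
    show ?thesis unfolding Eg lin_def
      by (simp add: lin_add[OF lin_eop] lin_smult[OF lin_eop] lin_add[OF Cons.IH] lin_smult[OF Cons.IH] algebra_simps)
  qed
qed

lemma fa_mult_dl_left:
  "fa_mult (dl u) g w = (if take (length u) w = u then g (drop (length u) w) else 0)"
proof -
  have "fa_mult (dl u) g w = (\<Sum>x\<in>splits w. dl u (fst x) * g (snd x))" by (rule fa_mult_splits)
  also have "\<dots> = (\<Sum>x\<in>splits w \<inter> {x. fst x = u}. g (snd x))"
    by (rule sum.mono_neutral_cong_right) (auto simp: splits_finite dl_def)
  also have "splits w \<inter> {x. fst x = u} = (if take (length u) w = u then {(u, drop (length u) w)} else {})"
    by (auto simp: splits_def) (metis append_take_drop_id)+
  finally show ?thesis by simp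
qed

lemma fa_mult_dl1: "fa_mult (dl [a]) g [] = 0" "fa_mult (dl [a]) g (b # v) = (if b = a then g v else 0)"
  by (simp_all add: fa_mult_dl_left)

lemma fa_d_Nil: "fa_d f [] = 0" by (simp add: fa_d_def)

lemma fa_d_Cons: "fa_d f (b # v) =
   (case b of Eg i \<Rightarrow> f (Xg i # v) | Xg i \<Rightarrow> 0) +
   (if is_xi b then -1 else 1) * fa_d (\<lambda>u. f (b # u)) v"
proof -
  have "fa_d f (b # v) = (\<Sum>p<Suc (length v). (case (b # v) ! p of
       Eg i \<Rightarrow> (if even (word_deg (take p (b # v))) then 1 else -1) * f ((b # v)[p := Xg i])
     | Xg i \<Rightarrow> 0))" by (simp add: fa_d_def)
  also have "\<dots> = (case b of Eg i \<Rightarrow> f (Xg i # v) | Xg i \<Rightarrow> 0) +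
     (\<Sum>p<length v. (case v ! p of
       Eg i \<Rightarrow> (if even (word_deg (take (Suc p) (b # v))) then 1 else -1) * f (b # v[p := Xg i])
     | Xg i \<Rightarrow> 0))"
  proof -
    have u: "(b # v)[Suc p := x] = b # v[p := x]" for p x by simp
    have h: "(case (b # v) ! 0 of
       Eg i \<Rightarrow> (if even (word_deg (take 0 (b # v))) then 1 else -1) * f ((b # v)[0 := Xg i])
     | Xg i \<Rightarrow> 0) = (case b of Eg i \<Rightarrow> f (Xg i # v) | Xg i \<Rightarrow> 0)"
      by (cases b) simp_all
    show ?thesis unfolding sum.lessThan_Suc_shift h nth_Cons_Suc u ..
  qed
  also have "(\<Sum>p<length v. (case v ! p of
       Eg i \<Rightarrow> (if even (word_deg (take (Suc p) (b # v))) then 1 else -1) * f (b # v[p := Xg i])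
     | Xg i \<Rightarrow> 0)) = (if is_xi b then -1 else 1) * fa_d (\<lambda>u. f (b # u)) v"
    unfolding fa_d_def sum_distrib_left
    by (rule sum.cong[OF refl]) (cases b; simp split: gen.split)
  finally show ?thesis .
qed

lemma dl_Cons_ap: "dl (a # w) (b # v) = (if b = a then dl w v else 0)"
  by (simp add: dl_def)

lemma fa_d_dl_X: "fa_d (dl (Xg i # w)) = fa_add (dl (Eg i # w)) (fa_mult (dl [Xg i]) (fa_d (dl w)))"
proof (rule ext)
  fix v show "fa_d (dl (Xg i # w)) v = fa_add (dl (Eg i # w)) (fa_mult (dl [Xg i]) (fa_d (dl w))) v"
  proof (cases v)
    case Nil
    then show ?thesis by (simp add: fa_d_Nil fa_add_def fa_mult_dl1) (simp add: dl_def)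
  next
    case (Cons b v')
    have e: "(\<lambda>u. dl (Xg i # w) (b # u)) = (if b = Xg i then dl w else (\<lambda>u. 0))"
      by (auto simp: dl_def)
    have z: "fa_d (\<lambda>u. 0) v' = 0" unfolding fa_d_def by (rule sum.neutral) (simp split: gen.split)
    show ?thesis unfolding Cons fa_d_Cons e fa_add_def fa_mult_dl1(2)
      by (cases b) (auto simp: dl_def z)
  qed
qed

lemma fa_d_dl_E: "fa_d (dl (Eg i # w)) = fa_smult (-1) (fa_mult (dl [Eg i]) (fa_d (dl w)))"
proof (rule ext)
  fix v show "fa_d (dl (Eg i # w)) v = fa_smult (-1) (fa_mult (dl [Eg i]) (fa_d (dl w))) v"
  proof (cases v)
    case Nil
    then show ?thesis by (simp add: fa_d_Nil fa_smult_def fa_mult_dl1)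
  next
    case (Cons b v')
    have e: "(\<lambda>u. dl (Eg i # w) (b # u)) = (if b = Eg i then dl w else (\<lambda>u. 0))"
      by (auto simp: dl_def)
    have z: "fa_d (\<lambda>u. 0) v' = 0" unfolding fa_d_def by (rule sum.neutral) (simp split: gen.split)
    show ?thesis unfolding Cons fa_d_Cons e fa_smult_def fa_mult_dl1(2)
      by (cases b) (auto simp: dl_def z)
  qed
qed


lemma fsupp_lincomb: "fsupp (\<lambda>v. \<Sum>k\<in>K. c k * F k v) \<subseteq> (\<Union>k\<in>K. fsupp (F k))"
  by (auto simp: fsupp_def intro: ccontr)

lemma FA_lincomb:
  assumes "finite K" "\<And>k. k \<in> K \<Longrightarrow> F k \<in> FA n"
  shows "(\<lambda>v. \<Sum>k\<in>K. c k * F k v) \<in> FA n"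
proof -
  have "finite (fsupp (\<lambda>v. \<Sum>k\<in>K. c k * F k v))"
    by (rule finite_subset[OF fsupp_lincomb]) (use assms FA_fin in auto)
  moreover have "set v \<subseteq> gens n" if nz: "(\<Sum>k\<in>K. c k * F k v) \<noteq> 0" for v
  proof -
    obtain k where "k \<in> K" "c k * F k v \<noteq> 0" using nz by (meson sum.not_neutral_contains_not_neutral)
    then show ?thesis using assms(2)[of k] by (auto simp: FA_iff)
  qed
  ultimately show ?thesis by (simp add: FA_iff)
qed

lemma fa_decomp:
  assumes "finite S" "fsupp f \<subseteq> S"
  shows "f = (\<lambda>w. \<Sum>u\<in>S. f u * dl u w)"
proof (rule ext)
  fix w
  have "(\<Sum>u\<in>S. f u * dl u w) = (\<Sum>u\<in>S. if u = w then f u else 0)"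
    by (rule sum.cong) (auto simp: dl_def)
  also have "\<dots> = f w" using assms by (auto simp: sum.delta fsupp_def)
  finally show "f w = (\<Sum>u\<in>S. f u * dl u w)" by simp
qed

lemma fa_d_lincomb:
  "fa_d (\<lambda>w. \<Sum>k\<in>K. c k * F k w) = (\<lambda>v. \<Sum>k\<in>K. c k * fa_d (F k) v)"
proof (rule ext)
  fix v
  have "fa_d (\<lambda>w. \<Sum>k\<in>K. c k * F k w) v = (\<Sum>p<length v. \<Sum>k\<in>K. c k * (case v ! p of
       Eg i \<Rightarrow> (if even (word_deg (take p v)) then 1 else -1) * F k (v[p := Xg i])
     | Xg i \<Rightarrow> 0))"
    unfolding fa_d_def
    by (rule sum.cong[OF refl]) (simp add: sum_distrib_left algebra_simps split: gen.split)
  also have "\<dots> = (\<Sum>k\<in>K. c k * fa_d (F k) v)"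
    by (subst sum.swap) (simp add: fa_d_def sum_distrib_left)
  finally show "fa_d (\<lambda>w. \<Sum>k\<in>K. c k * F k w) v = (\<Sum>k\<in>K. c k * fa_d (F k) v)" .
qed

lemma fa_d_dl_Nil: "fa_d (dl []) = fa_zero"
proof (rule ext)
  fix x :: "gen list"
  have ne: "x[p := y] \<noteq> []" if "p < length x" for p y using that by (cases x; cases p) auto
  show "fa_d (dl []) x = fa_zero x"
    unfolding fa_d_def fa_zero_def by (rule sum.neutral) (auto simp: dl_def ne split: gen.split)
qed

lemma FA_d_dl: "set w \<subseteq> gens n \<Longrightarrow> fa_d (dl w) \<in> FA n"
proof (induction w)
  case Nil
  then show ?case by (simp add: FA_zero fa_d_dl_Nil)
next
  case (Cons a w)
  then have a: "a \<in> gens n" and w: "set w \<subseteq> gens n" by auto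
  show ?case
  proof (cases a)
    case (Xg i)
    then have "i < n" using a by simp
    then show ?thesis unfolding Xg fa_d_dl_X
      using Cons.IH[OF w] w by (auto intro!: FA_add FA_dl FA_mult)
  next
    case (Eg i)
    then have "i < n" using a by simp
    then show ?thesis unfolding Eg fa_d_dl_E
      using Cons.IH[OF w] w by (auto intro!: FA_smult FA_dl FA_mult)
  qed
qed

lemma fa_d_decomp:
  assumes "finite S" "fsupp f \<subseteq> S"
  shows "fa_d f = (\<lambda>v. \<Sum>u\<in>S. f u * fa_d (dl u) v)"
  by (subst fa_decomp[OF assms]) (rule fa_d_lincomb)

lemma FA_d: "f \<in> FA n \<Longrightarrow> fa_d f \<in> FA n"
proof -
  assume f: "f \<in> FA n"
  have "fa_d f = (\<lambda>v. \<Sum>u\<in>fsupp f. f u * fa_d (dl u) v)"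
    by (rule fa_d_decomp) (use f FA_fin in auto)
  also have "\<dots> \<in> FA n"
  proof (rule FA_lincomb)
    show "finite (fsupp f)" using f by (rule FA_fin)
    fix k assume "k \<in> fsupp f"
    then have "set k \<subseteq> gens n" using f by (auto simp: FA_iff fsupp_def)
    then show "fa_d (dl k) \<in> FA n" by (rule FA_d_dl)
  qed
  finally show ?thesis .
qed

lemma rho_lincomb:
  assumes "finite K" "\<And>k. k \<in> K \<Longrightarrow> finite (fsupp (F k))"
  shows "rho th (\<lambda>v. \<Sum>k\<in>K. c k * F k v) p = (\<lambda>m. \<Sum>k\<in>K. c k * rho th (F k) p m)"
proof (rule ext)
  fix m
  let ?S = "\<Union>k\<in>K. fsupp (F k)"
  have fS: "finite ?S" using assms by auto
  have "rho th (\<lambda>v. \<Sum>k\<in>K. c k * F k v) p m = (\<Sum>w\<in>?S. (\<Sum>k\<in>K. c k * F k w) * wop th w p m)"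
    using rho_superset[OF fS fsupp_lincomb] by simp
  also have "\<dots> = (\<Sum>k\<in>K. c k * (\<Sum>w\<in>?S. F k w * wop th w p m))"
    by (simp add: sum_distrib_right sum_distrib_left mult.assoc) (rule sum.swap)
  also have "\<dots> = (\<Sum>k\<in>K. c k * rho th (F k) p m)"
  proof (rule sum.cong[OF refl])
    fix k assume "k \<in> K"
    then have "fsupp (F k) \<subseteq> ?S" by auto
    then show "c k * (\<Sum>w\<in>?S. F k w * wop th w p m) = c k * rho th (F k) p m"
      using rho_superset[OF fS, of "F k" th p] by simp
  qed
  finally show "rho th (\<lambda>v. \<Sum>k\<in>K. c k * F k v) p m = (\<Sum>k\<in>K. c k * rho th (F k) p m)" .
qed

lemma fin_dl: "finite (fsupp (dl w))" by (simp add: fsupp_dl)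

lemma fin_d_dl: "finite (fsupp (fa_d (dl w)))"
proof (induction w)
  case Nil
  then show ?case by (simp add: fa_d_dl_Nil fsupp_def fa_zero_def)
next
  case (Cons a w)
  have fm: "finite (fsupp (fa_mult (dl [a]) (fa_d (dl w))))"
    by (rule finite_subset[OF fsupp_mult]) (simp add: fin_dl Cons.IH)
  show ?case
  proof (cases a)
    case (Xg i)
    show ?thesis unfolding Xg fa_d_dl_X
      by (rule finite_subset[OF fsupp_add]) (use fm Xg fin_dl in auto)
  next
    case (Eg i)
    show ?thesis unfolding Eg fa_d_dl_E
      by (rule finite_subset[OF fsupp_smult]) (use fm Eg in auto)
  qed
qed


lemma rho_d_dl: "rho th (fa_d (dl w)) p = wdop th w p"
proof (induction w arbitrary: p)
  case Nil
  then show ?case by (simp add: rho_zero fa_d_dl_Nil)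
next
  case (Cons a w)
  have fm: "finite (fsupp (fa_mult (dl [a]) (fa_d (dl w))))"
    by (rule finite_subset[OF fsupp_mult]) (simp add: fin_dl fin_d_dl)
  show ?case
  proof (cases a)
    case (Xg i)
    show ?thesis unfolding Xg fa_d_dl_X
      using fm Xg by (simp add: rho_add fin_dl rho_mult fin_d_dl rho_dl Cons.IH)
  next
    case (Eg i)
    show ?thesis unfolding Eg fa_d_dl_E
      using fm Eg by (simp add: rho_smult rho_mult fin_dl fin_d_dl rho_dl Cons.IH)
  qed
qed

lemma rho_d:
  assumes "finite S" "fsupp f \<subseteq> S"
  shows "rho th (fa_d f) p = (\<lambda>m. \<Sum>u\<in>S. f u * wdop th u p m)"
  unfolding fa_d_decomp[OF assms]
  by (subst rho_lincomb) (simp_all add: assms fin_d_dl rho_d_dl)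

definition e0 :: pv where
  "e0 = (\<lambda>(a,s). if a = (\<lambda>_. 0) \<and> s = None then 1 else 0)"

lemma dop_e0: "dop e0 = (\<lambda>m. 0)"
proof (rule ext, clarify)
  fix a :: "nat \<Rightarrow> nat" and s :: "nat option"
  have "a(i := Suc (a i)) \<noteq> (\<lambda>_. 0)" for i by (metis fun_upd_same nat.distinct(1))
  then show "dop e0 (a, s) = 0"
    by (auto simp: dop_def derop_def e0_def split: option.splits)
qed

definition Lmap :: "(nat \<Rightarrow> nat \<Rightarrow> real) \<Rightarrow> (gen list \<Rightarrow> real) \<Rightarrow> pv" where
  "Lmap th f = rho th f e0"

lemma dop_rho:
  assumes "finite (fsupp f)"
  shows "dop (rho th f q) = (\<lambda>m. rho th (fa_d f) q m + (\<Sum>u\<in>fsupp f. f u * sg u * wop th u (dop q) m))"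
proof -
  have "dop (rho th f q) = (\<lambda>m. \<Sum>u\<in>fsupp f. f u * dop (wop th u q) m)"
    unfolding rho_def lin_sum[OF lin_dop] lin_smult[OF lin_dop] ..
  also have "\<dots> = (\<lambda>m. rho th (fa_d f) q m + (\<Sum>u\<in>fsupp f. f u * sg u * wop th u (dop q) m))"
    unfolding dop_wop rho_d[OF assms order_refl]
    by (simp add: algebra_simps sum.distrib)
  finally show ?thesis .
qed

lemma Lmap_d:
  assumes "finite (fsupp f)"
  shows "Lmap th (fa_d f) = dop (Lmap th f)"
  unfolding Lmap_def dop_rho[OF assms] dop_e0
  by (simp add: lin_zero[OF lin_wop])

lemma homog_sg: "fa_homog k f \<Longrightarrow> f u \<noteq> 0 \<Longrightarrow> sg u = (if even k then 1 else -1)"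
  by (auto simp: fa_homog_def sg_def)

lemma dop_rho_homog:
  assumes "finite (fsupp f)" "fa_homog k f"
  shows "dop (rho th f q) = (\<lambda>m. rho th (fa_d f) q m + (if even k then 1 else -1) * rho th f (dop q) m)"
proof -
  have "(\<Sum>u\<in>fsupp f. f u * sg u * wop th u (dop q) m) = (if even k then 1 else -1) * rho th f (dop q) m" for m
    unfolding rho_def sum_distrib_left
    by (rule sum.cong[OF refl]) (use homog_sg[OF assms(2)] in \<open>auto simp: fsupp_def\<close>)
  then show ?thesis unfolding dop_rho[OF assms(1)] by simp
qed

definition em :: "mon \<Rightarrow> pv" where
  "em m = (\<lambda>m'. if m' = m then 1 else 0)"

lemma e0_em: "e0 = em (\<lambda>_. 0, None)"
  by (auto simp: e0_def em_def fun_eq_iff)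

definition Valid :: "nat \<Rightarrow> mon \<Rightarrow> bool" where
  "Valid n m \<longleftrightarrow> (\<forall>j. n \<le> j \<longrightarrow> fst m j = 0) \<and> (case snd m of None \<Rightarrow> True | Some i \<Rightarrow> i < n)"

definition xw :: "nat \<Rightarrow> nat \<Rightarrow> (nat \<Rightarrow> nat) \<Rightarrow> gen list" where
  "xw n k a = concat (map (\<lambda>j. replicate (a j) (Xg j)) [k..<n])"

definition tl_of :: "nat option \<Rightarrow> gen list" where
  "tl_of s = (case s of None \<Rightarrow> [] | Some i \<Rightarrow> [Eg i])"

definition word_of :: "nat \<Rightarrow> mon \<Rightarrow> gen list" where
  "word_of n m = xw n 0 (fst m) @ tl_of (snd m)"

lemma xw_step: "k < n \<Longrightarrow> xw n k a = replicate (a k) (Xg k) @ xw n (Suc k) a"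
  by (simp add: xw_def upt_conv_Cons)

lemma xw_end: "n \<le> k \<Longrightarrow> xw n k a = []"
  by (simp add: xw_def)

lemma xop_em:
  assumes "\<forall>j<k. b j = 0"
  shows "xop th k (em (b,s)) = em (b(k := Suc (b k)), s)"
proof -
  have d: "derop j (em (b,s)) = (\<lambda>m. 0)" if "j < k" for j
  proof (rule ext, clarify)
    fix a :: "nat \<Rightarrow> nat" and s' :: "nat option"
    have "a(j := Suc (a j)) \<noteq> b" using assms that by (metis fun_upd_same nat.distinct(1))
    then show "derop j (em (b,s)) (a,s') = 0" by (simp add: derop_def em_def)
  qed
  have m: "mulop k (em (b,s)) = em (b(k := Suc (b k)), s)"
  proof (rule ext, clarify)
    fix a :: "nat \<Rightarrow> nat" and s' :: "nat option"
    have "(a k \<noteq> 0 \<and> a(k := a k - 1) = b) \<longleftrightarrow> a = b(k := Suc (b k))"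
    proof
      assume h: "a k \<noteq> 0 \<and> a(k := a k - 1) = b"
      show "a = b(k := Suc (b k))"
      proof
        fix x show "a x = (b(k := Suc (b k))) x"
          using h by (cases "x = k") (auto dest: fun_cong[of _ _ x] fun_cong[of _ _ k])
      qed
    next
      assume "a = b(k := Suc (b k))"
      then show "a k \<noteq> 0 \<and> a(k := a k - 1) = b" by auto
    qed
    then show "mulop k (em (b,s)) (a,s') = em (b(k := Suc (b k)), s) (a,s')"
      by (auto simp: mulop_def em_def)
  qed
  show ?thesis unfolding xop_def m by (simp add: d)
qed

lemma wop_rep:
  assumes "\<forall>j<k. b j = 0"
  shows "wop th (replicate c (Xg k)) (em (b,s)) = em (b(k := b k + c), s)"
proof (induction c)
  case 0
  then show ?case by simp
next
  case (Suc c)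
  have z: "\<forall>j<k. (b(k := b k + c)) j = 0" using assms by auto
  have "wop th (replicate (Suc c) (Xg k)) (em (b,s)) = xop th k (em (b(k := b k + c), s))"
    unfolding Suc[symmetric] by simp
  also have "\<dots> = em ((b(k := b k + c))(k := Suc ((b(k := b k + c)) k)), s)" by (rule xop_em[OF z])
  also have "(b(k := b k + c))(k := Suc ((b(k := b k + c)) k)) = b(k := b k + Suc c)" by (simp add: fun_eq_iff)
  finally show ?case .
qed

lemma wop_append_rep: "wop th (u @ v) p = wop th u (wop th v p)" by (rule wop_append)

lemma wop_xw:
  "k \<le> n \<Longrightarrow> wop th (xw n k a) (em (\<lambda>_. 0, s)) = em (\<lambda>j. if k \<le> j \<and> j < n then a j else 0, s)"
proof (induction "n - k" arbitrary: k)
  case 0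
  then have "k = n" by simp
  moreover have "(\<lambda>j. if n \<le> j \<and> j < n then a j else 0) = (\<lambda>_. 0)" by auto
  ultimately show ?case by (simp add: xw_end)
next
  case (Suc x)
  then have k: "k < n" by simp
  have IH: "wop th (xw n (Suc k) a) (em (\<lambda>_. 0, s)) = em (\<lambda>j. if Suc k \<le> j \<and> j < n then a j else 0, s)"
    using Suc by simp
  have z: "\<forall>j<k. (\<lambda>j. if Suc k \<le> j \<and> j < n then a j else 0) j = 0" by simp
  have e: "(\<lambda>j. if Suc k \<le> j \<and> j < n then a j else 0)(k := (if Suc k \<le> k \<and> k < n then a k else 0) + a k)
      = (\<lambda>j. if k \<le> j \<and> j < n then a j else 0)"
    using k by (auto simp: fun_eq_iff)
  show ?case unfolding xw_step[OF k] wop_append IH wop_rep[OF z] e ..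
qed

lemma wop_tl: "wop th (tl_of s) (em (\<lambda>_. 0, None)) = em (\<lambda>_. 0, s)"
  by (cases s) (auto simp: tl_of_def eop_def em_def fun_eq_iff)

lemma Lmap_word:
  assumes "Valid n m"
  shows "Lmap th (dl (word_of n m)) = em m"
proof -
  obtain a s where m: "m = (a, s)" by (cases m)
  have a: "(\<lambda>j. if 0 \<le> j \<and> j < n then a j else 0) = a" "(\<lambda>j. if j < n then a j else 0) = a"
    using assms by (auto simp: m Valid_def fun_eq_iff)
  show ?thesis
    unfolding Lmap_def rho_dl e0_em word_of_def m
    by (simp add: wop_append wop_tl wop_xw a)
qed

lemma count_xw: "k \<le> n \<Longrightarrow> count_list (xw n k a) (Xg j) = (if k \<le> j \<and> j < n then a j else 0)"
proof (induction "n - k" arbitrary: k)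
  case 0
  then show ?case by (simp add: xw_end)
next
  case (Suc x)
  then have k: "k < n" by simp
  have "count_list (replicate c (Xg k)) (Xg j) = (if j = k then c else 0)" for c
    by (induction c) auto
  then show ?case unfolding xw_step[OF k] using Suc k by auto
qed

lemma xis_xw: "filter is_xi (xw n k a) = []"
  by (auto simp: xw_def filter_empty_conv)

lemma word_of_inj:
  assumes "Valid n m" "Valid n m'" "word_of n m = word_of n m'"
  shows "m = m'"
proof -
  obtain a s a' s' where m: "m = (a,s)" and m': "m' = (a',s')" by (cases m, cases m')
  have "a j = a' j" for j
  proof (cases "j < n")
    case True
    have "count_list (word_of n m) (Xg j) = count_list (word_of n m') (Xg j)" using assms(3) by simp
    then show ?thesis using True
      by (simp add: m m' word_of_def count_xw tl_of_def split: option.splits)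
  next
    case False
    then show ?thesis using assms(1,2) by (simp add: m m' Valid_def)
  qed
  moreover have "filter is_xi (word_of n m) = filter is_xi (word_of n m')" using assms(3) by simp
  then have "s = s'"
    by (simp add: m m' word_of_def xis_xw tl_of_def split: option.splits)
  ultimately show ?thesis by (simp add: m m' fun_eq_iff)
qed

lemma word_of_gens: "Valid n m \<Longrightarrow> set (word_of n m) \<subseteq> gens n"
  by (cases m) (auto simp: word_of_def xw_def tl_of_def Valid_def split: option.splits)

lemma word_deg_word_of: "word_deg (word_of n m) = (case snd m of None \<Rightarrow> 0 | Some _ \<Rightarrow> 1)"
  by (simp add: word_deg_def word_of_def xis_xw[unfolded] tl_of_def split: option.splits)

definition Sn :: "nat \<Rightarrow> pv \<Rightarrow> gen list \<Rightarrow> real" where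
  "Sn n p w = (if \<exists>m. Valid n m \<and> word_of n m = w then p (THE m. Valid n m \<and> word_of n m = w) else 0)"

lemma Sn_word: "Valid n m \<Longrightarrow> Sn n p (word_of n m) = p m"
proof -
  assume v: "Valid n m"
  have "(THE m'. Valid n m' \<and> word_of n m' = word_of n m) = m"
  proof (rule the_equality)
    show "Valid n m \<and> word_of n m = word_of n m" using v by simp
    fix m' assume "Valid n m' \<and> word_of n m' = word_of n m"
    then show "m' = m" using word_of_inj[of n m' m] v by blast
  qed
  moreover have ex: "\<exists>m'. Valid n m' \<and> word_of n m' = word_of n m" using v by blast
  ultimately show ?thesis unfolding Sn_def if_P[OF ex] by simp
qed

lemma Sn_nz: "Sn n p w \<noteq> 0 \<Longrightarrow> \<exists>m. Valid n m \<and> word_of n m = w \<and> p m \<noteq> 0"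
  by (metis Sn_def Sn_word)

definition Pset :: "nat \<Rightarrow> pv set" where
  "Pset n = {p. finite (fsupp p) \<and> (\<forall>m. p m \<noteq> 0 \<longrightarrow> Valid n m)}"

lemma fsupp_Sn: "fsupp (Sn n p) \<subseteq> word_of n ` fsupp p"
  using Sn_nz by (force simp: fsupp_def)

lemma FA_Sn: "p \<in> Pset n \<Longrightarrow> Sn n p \<in> FA n"
proof -
  assume p: "p \<in> Pset n"
  have "finite (fsupp (Sn n p))"
    by (rule finite_subset[OF fsupp_Sn]) (use p in \<open>simp add: Pset_def\<close>)
  moreover have "set w \<subseteq> gens n" if "Sn n p w \<noteq> 0" for w
    using Sn_nz[OF that] word_of_gens by blast
  ultimately show ?thesis by (simp add: FA_iff)
qed

lemma Sn_em: "Valid n m \<Longrightarrow> Sn n (em m) = dl (word_of n m)"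
proof (rule ext)
  fix w assume v: "Valid n m"
  show "Sn n (em m) w = dl (word_of n m) w"
  proof (cases "\<exists>m'. Valid n m' \<and> word_of n m' = w")
    case True
    then obtain m' where "Valid n m'" "word_of n m' = w" by blast
    then show ?thesis using v word_of_inj[of n m m'] by (auto simp: Sn_word em_def dl_def)
  next
    case False
    then have "w \<noteq> word_of n m" using v by blast
    then show ?thesis unfolding Sn_def if_not_P[OF False] by (simp add: dl_def)
  qed
qed

lemma Lmap_Sn:
  assumes "p \<in> Pset n"
  shows "Lmap th (Sn n p) = p"
proof (rule ext)
  fix m'
  have fin: "finite (fsupp p)" and val: "\<And>m. m \<in> fsupp p \<Longrightarrow> Valid n m"
    using assms by (auto simp: Pset_def fsupp_def)
  have inj: "inj_on (word_of n) (fsupp p)" using word_of_inj val by (meson inj_onI)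
  have "Lmap th (Sn n p) m' = (\<Sum>w\<in>word_of n ` fsupp p. Sn n p w * wop th w e0 m')"
    unfolding Lmap_def using rho_superset[OF _ fsupp_Sn] fin by simp
  also have "\<dots> = (\<Sum>m\<in>fsupp p. p m * em m m')"
    unfolding sum.reindex[OF inj] using val
    by (intro sum.cong) (auto simp: Sn_word Lmap_word[unfolded Lmap_def rho_dl])
  also have "\<dots> = (\<Sum>m\<in>fsupp p. if m = m' then p m else 0)"
    by (rule sum.cong) (auto simp: em_def)
  also have "\<dots> = p m'"
    using fin by (simp add: sum.delta fsupp_def)
  finally show "Lmap th (Sn n p) m' = p m'" .
qed

lemma Pset_iff: "p \<in> Pset n \<longleftrightarrow> finite (fsupp p) \<and> (\<forall>m. p m \<noteq> 0 \<longrightarrow> Valid n m)"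
  by (simp add: Pset_def)

lemma Pset_lincomb:
  assumes "finite K" "\<And>k. k \<in> K \<Longrightarrow> F k \<in> Pset n"
  shows "(\<lambda>m. \<Sum>k\<in>K. c k * F k m) \<in> Pset n"
proof -
  have "finite (fsupp (\<lambda>m. \<Sum>k\<in>K. c k * F k m))"
    by (rule finite_subset[OF fsupp_lincomb]) (use assms in \<open>auto simp: Pset_iff\<close>)
  moreover have "Valid n m" if nz: "(\<Sum>k\<in>K. c k * F k m) \<noteq> 0" for m
  proof -
    obtain k where "k \<in> K" "c k * F k m \<noteq> 0" using nz by (meson sum.not_neutral_contains_not_neutral)
    then have "F k m \<noteq> 0" by simp
    then show ?thesis using assms(2)[of k] \<open>k \<in> K\<close> unfolding Pset_def by blast
  qed
  ultimately show ?thesis unfolding Pset_def by blast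
qed

lemma Pset_add: "p \<in> Pset n \<Longrightarrow> q \<in> Pset n \<Longrightarrow> (\<lambda>m. p m + q m) \<in> Pset n"
proof -
  assume p: "p \<in> Pset n" and q: "q \<in> Pset n"
  have "finite (fsupp (\<lambda>m. p m + q m))"
    by (rule finite_subset[of _ "fsupp p \<union> fsupp q"]) (use p q in \<open>auto simp: Pset_iff fsupp_def\<close>)
  moreover have "Valid n m" if "p m + q m \<noteq> 0" for m
  proof -
    have "p m \<noteq> 0 \<or> q m \<noteq> 0" using that by auto
    then show ?thesis using p q unfolding Pset_def by blast
  qed
  ultimately show ?thesis unfolding Pset_def by blast
qed

lemma Pset_smult: "p \<in> Pset n \<Longrightarrow> (\<lambda>m. c * p m) \<in> Pset n"
proof -
  assume p: "p \<in> Pset n"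
  have "finite (fsupp (\<lambda>m. c * p m))"
    by (rule finite_subset[of _ "fsupp p"]) (use p in \<open>auto simp: Pset_iff fsupp_def\<close>)
  then show ?thesis using p by (auto simp: Pset_iff)
qed

lemma Pset_zero: "(\<lambda>m. 0) \<in> Pset n"
  by (simp add: Pset_iff fsupp_def)

lemma Pset_mulop: "p \<in> Pset n \<Longrightarrow> i < n \<Longrightarrow> mulop i p \<in> Pset n"
proof -
  assume p: "p \<in> Pset n" and i: "i < n"
  have "fsupp (mulop i p) \<subseteq> (\<lambda>(a,s). (a(i := Suc (a i)), s)) ` fsupp p"
  proof (clarify)
    fix a s assume "(a,s) \<in> fsupp (mulop i p)"
    then have h: "a i \<noteq> 0" "p (a(i := a i - 1), s) \<noteq> 0" by (auto simp: fsupp_def mulop_def split: if_splits)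
    then show "(a,s) \<in> (\<lambda>(a,s). (a(i := Suc (a i)), s)) ` fsupp p"
      by (intro image_eqI[of _ _ "(a(i := a i - 1), s)"]) (auto simp: fsupp_def fun_eq_iff)
  qed
  then have "finite (fsupp (mulop i p))" by (rule finite_subset) (use p in \<open>simp add: Pset_iff\<close>)
  moreover have "Valid n (a,s)" if "mulop i p (a,s) \<noteq> 0" for a s
  proof -
    have h: "a i \<noteq> 0" "p (a(i := a i - 1), s) \<noteq> 0" using that by (auto simp: mulop_def split: if_splits)
    then have "Valid n (a(i := a i - 1), s)" using p by (simp add: Pset_iff)
    then show ?thesis using i by (auto simp: Valid_def)
  qed
  ultimately show ?thesis by (auto simp: Pset_iff)
qed

lemma Pset_derop: "p \<in> Pset n \<Longrightarrow> derop j p \<in> Pset n"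
proof -
  assume p: "p \<in> Pset n"
  have "fsupp (derop j p) \<subseteq> (\<lambda>(a,s). (a(j := a j - 1), s)) ` fsupp p"
  proof (clarify)
    fix a s assume "(a,s) \<in> fsupp (derop j p)"
    then have h: "p (a(j := a j + 1), s) \<noteq> 0" by (auto simp: fsupp_def derop_def)
    then show "(a,s) \<in> (\<lambda>(a,s). (a(j := a j - 1), s)) ` fsupp p"
      by (intro image_eqI[of _ _ "(a(j := a j + 1), s)"]) (auto simp: fsupp_def fun_eq_iff)
  qed
  then have "finite (fsupp (derop j p))" by (rule finite_subset) (use p in \<open>simp add: Pset_iff\<close>)
  moreover have "Valid n (a,s)" if "derop j p (a,s) \<noteq> 0" for a s
  proof -
    have h: "p (a(j := a j + 1), s) \<noteq> 0" using that by (auto simp: derop_def)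
    then have v: "Valid n (a(j := a j + 1), s)" using p by (simp add: Pset_iff)
    show ?thesis
    proof (cases "j < n")
      case True then show ?thesis using v by (auto simp: Valid_def)
    next
      case False then show ?thesis using v by (auto simp: Valid_def dest: spec[of _ j])
    qed
  qed
  ultimately show ?thesis by (auto simp: Pset_iff)
qed

lemma Pset_eop: "p \<in> Pset n \<Longrightarrow> i < n \<Longrightarrow> eop i p \<in> Pset n"
proof -
  assume p: "p \<in> Pset n" and i: "i < n"
  have "fsupp (eop i p) \<subseteq> (\<lambda>(a,s). (a, Some i)) ` fsupp p"
    by (auto simp: fsupp_def eop_def split: if_splits)
  then have "finite (fsupp (eop i p))" by (rule finite_subset) (use p in \<open>simp add: Pset_iff\<close>)
  moreover have "Valid n (a,s)" if "eop i p (a,s) \<noteq> 0" for a s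
  proof -
    have "s = Some i" "p (a, None) \<noteq> 0" using that by (auto simp: eop_def split: if_splits)
    then show ?thesis using p i by (auto simp: Pset_iff Valid_def)
  qed
  ultimately show ?thesis by (auto simp: Pset_iff)
qed

lemma Pset_xop: "p \<in> Pset n \<Longrightarrow> i < n \<Longrightarrow> xop th i p \<in> Pset n"
  unfolding xop_def
  by (intro Pset_add Pset_mulop Pset_lincomb Pset_derop) auto

lemma Pset_wop: "p \<in> Pset n \<Longrightarrow> set w \<subseteq> gens n \<Longrightarrow> wop th w p \<in> Pset n"
proof (induction w)
  case Nil then show ?case by simp
next
  case (Cons a w)
  then show ?case by (cases a) (auto intro: Pset_xop Pset_eop)
qed

lemma Pset_e0: "e0 \<in> Pset n"
proof -
  have "fsupp e0 \<subseteq> {(\<lambda>_. 0, None)}" by (auto simp: fsupp_def e0_def split: if_splits)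
  then show ?thesis by (auto simp: Pset_iff e0_def Valid_def finite_subset split: if_splits)
qed

lemma Pset_Lmap: "f \<in> FA n \<Longrightarrow> Lmap th f \<in> Pset n"
  unfolding Lmap_def rho_def
  by (rule Pset_lincomb) (auto simp: FA_iff fsupp_def intro!: Pset_wop Pset_e0)

lemma Lmap_add: "f \<in> FA n \<Longrightarrow> g \<in> FA n \<Longrightarrow> Lmap th (fa_add f g) = (\<lambda>m. Lmap th f m + Lmap th g m)"
  by (simp add: Lmap_def rho_add FA_fin)
lemma Lmap_sub: "f \<in> FA n \<Longrightarrow> g \<in> FA n \<Longrightarrow> Lmap th (fa_sub f g) = (\<lambda>m. Lmap th f m - Lmap th g m)"
  by (simp add: Lmap_def rho_sub FA_fin)
lemma Lmap_smult: "f \<in> FA n \<Longrightarrow> Lmap th (fa_smult c f) = (\<lambda>m. c * Lmap th f m)"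
  by (simp add: Lmap_def rho_smult FA_fin)
lemma Lmap_zero: "Lmap th fa_zero = (\<lambda>m. 0)"
  by (simp add: Lmap_def rho_zero)

lemma Sn_add: "Sn n (\<lambda>m. p m + q m) = fa_add (Sn n p) (Sn n q)"
  by (auto simp: Sn_def fa_add_def fun_eq_iff)
lemma Sn_smult: "Sn n (\<lambda>m. c * p m) = fa_smult c (Sn n p)"
  by (auto simp: Sn_def fa_smult_def fun_eq_iff)
lemma Sn_zero: "Sn n (\<lambda>m. 0) = fa_zero"
  by (auto simp: Sn_def fa_zero_def fun_eq_iff)

lemma ideal_Lmap: "antisymmetric_matrix n th \<Longrightarrow> f \<in> A_ideal n th \<Longrightarrow> Lmap th f = (\<lambda>m. 0)"
  by (simp add: Lmap_def rho_ideal)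

lemma ideal_eq_Lmap:
  assumes "antisymmetric_matrix n th" "f \<in> FA n" "g \<in> FA n" "fa_sub f g \<in> A_ideal n th"
  shows "Lmap th f = Lmap th g"
proof -
  have "Lmap th (fa_sub f g) = (\<lambda>m. 0)" using ideal_Lmap[OF assms(1,4)] .
  then show ?thesis using Lmap_sub[OF assms(2,3), of th] by (auto simp: fun_eq_iff dest: fun_cong)
qed

definition Good :: "nat \<Rightarrow> (nat \<Rightarrow> nat \<Rightarrow> real) \<Rightarrow> (gen list \<Rightarrow> real) set" where
  "Good n th = {f \<in> FA n. fa_sub f (Sn n (Lmap th f)) \<in> A_ideal n th}"

context
  fixes n :: nat and th :: "nat \<Rightarrow> nat \<Rightarrow> real"
  assumes anti: "antisymmetric_matrix n th"
begin

lemma Good_equiv: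
  assumes "f \<in> FA n" "g \<in> Good n th" "fa_sub f g \<in> A_ideal n th"
  shows "f \<in> Good n th"
proof -
  have g: "g \<in> FA n" "fa_sub g (Sn n (Lmap th g)) \<in> A_ideal n th" using assms(2) by (auto simp: Good_def)
  have L: "Lmap th f = Lmap th g" by (rule ideal_eq_Lmap[OF anti assms(1) g(1) assms(3)])
  have "fa_sub f (Sn n (Lmap th f)) = fa_add (fa_sub f g) (fa_sub g (Sn n (Lmap th g)))"
    by (simp add: L fa_sub_def fa_add_def fun_eq_iff)
  then show ?thesis using assms(1,3) g(2) by (auto simp: Good_def intro: A_ideal.add)
qed

lemma Good_add: "f \<in> Good n th \<Longrightarrow> g \<in> Good n th \<Longrightarrow> fa_add f g \<in> Good n th"
proof -
  assume f: "f \<in> Good n th" and g: "g \<in> Good n th"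
  have F: "f \<in> FA n" "g \<in> FA n" using f g by (auto simp: Good_def)
  have "fa_sub (fa_add f g) (Sn n (Lmap th (fa_add f g))) =
      fa_add (fa_sub f (Sn n (Lmap th f))) (fa_sub g (Sn n (Lmap th g)))"
    unfolding Lmap_add[OF F] Sn_add by (simp add: fa_sub_def fa_add_def fun_eq_iff)
  then show ?thesis using f g F by (auto simp: Good_def intro: A_ideal.add FA_add)
qed

lemma Good_smult: "f \<in> Good n th \<Longrightarrow> fa_smult c f \<in> Good n th"
proof -
  assume f: "f \<in> Good n th"
  have F: "f \<in> FA n" using f by (auto simp: Good_def)
  have "fa_sub (fa_smult c f) (Sn n (Lmap th (fa_smult c f))) = fa_smult c (fa_sub f (Sn n (Lmap th f)))"
    unfolding Lmap_smult[OF F] Sn_smult by (simp add: fa_sub_def fa_smult_def fun_eq_iff algebra_simps)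
  then show ?thesis using f F by (auto simp: Good_def intro: A_ideal.smult FA_smult)
qed

lemma Good_zero: "fa_zero \<in> Good n th"
proof -
  have "fa_sub fa_zero (Sn n (Lmap th fa_zero)) = fa_zero"
    unfolding Lmap_zero Sn_zero by (simp add: fa_sub_def fa_zero_def)
  then show ?thesis by (simp add: Good_def FA_zero A_ideal.zero)
qed

lemma Good_lincomb:
  assumes "finite K" "\<And>k. k \<in> K \<Longrightarrow> F k \<in> Good n th"
  shows "(\<lambda>v. \<Sum>k\<in>K. c k * F k v) \<in> Good n th"
  using assms
proof (induction K rule: finite_induct)
  case empty
  then show ?case using Good_zero by (simp add: fa_zero_def)
next
  case (insert x K)
  have "(\<lambda>v. \<Sum>k\<in>insert x K. c k * F k v) = fa_add (fa_smult (c x) (F x)) (\<lambda>v. \<Sum>k\<in>K. c k * F k v)"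
    using insert by (simp add: fa_add_def fa_smult_def fun_eq_iff)
  then show ?case using insert by (auto intro!: Good_add Good_smult)
qed

lemma Good_word: "Valid n m \<Longrightarrow> dl (word_of n m) \<in> Good n th"
proof -
  assume v: "Valid n m"
  have "fa_sub (dl (word_of n m)) (Sn n (Lmap th (dl (word_of n m)))) = fa_zero"
    by (simp add: Lmap_word[OF v] Sn_em[OF v] fa_sub_def fa_zero_def)
  then show ?thesis using v by (simp add: Good_def FA_dl word_of_gens A_ideal.zero)
qed

end


definition key :: "nat \<Rightarrow> gen \<Rightarrow> nat" where
  "key n a = (case a of Xg i \<Rightarrow> i | Eg i \<Rightarrow> n)"

fun phi :: "nat \<Rightarrow> nat \<Rightarrow> gen list \<Rightarrow> nat" where
  "phi n k [] = 0"
| "phi n k (a # w) = k * key n a + phi n (Suc k) w"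

lemma phi_append: "phi n k (u @ x) = phi n k u + phi n (k + length u) x"
  by (induction u arbitrary: k) auto

lemma key_le: "a \<in> gens n \<Longrightarrow> key n a \<le> n"
  by (auto simp: gens_def key_def)

lemma phi_bound: "set w \<subseteq> gens n \<Longrightarrow> phi n k w \<le> (k + length w) * length w * n"
proof (induction w arbitrary: k)
  case Nil then show ?case by simp
next
  case (Cons a w)
  let ?l = "length w"
  have "k * key n a \<le> k * n" using key_le Cons.prems by auto
  moreover have "phi n (Suc k) w \<le> (Suc k + ?l) * ?l * n" using Cons.IH[of "Suc k"] Cons.prems by auto
  ultimately have "k * key n a + phi n (Suc k) w \<le> k * n + (Suc k + ?l) * ?l * n" by (rule add_mono)
  then have "phi n k (a # w) \<le> k * n + (Suc k + ?l) * ?l * n" by simp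
  also have "k * n \<le> (Suc k + ?l) * n" by (rule mult_le_mono1) simp
  then have "k * n + (Suc k + ?l) * ?l * n \<le> (Suc k + ?l) * n + (Suc k + ?l) * ?l * n" by simp
  also have "(Suc k + ?l) * n + (Suc k + ?l) * ?l * n = (k + length (a # w)) * length (a # w) * n"
    by (simp add: algebra_simps)
  finally show ?case .
qed

lemma phi_swap: "phi n 0 (u @ [a,b] @ v) + key n a = phi n 0 (u @ [b,a] @ v) + key n b"
  by (simp add: phi_append algebra_simps)

lemma fa_mult_dl_dl: "fa_mult (dl u) (dl v) = dl (u @ v)"
proof (rule ext)
  fix x
  show "fa_mult (dl u) (dl v) x = dl (u @ v) x"
    unfolding fa_mult_dl_left by (auto simp: dl_def) (metis append_take_drop_id)
qed

lemma fa_mult_sub_right: "fa_mult f (fa_sub g h) = fa_sub (fa_mult f g) (fa_mult f h)"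
  by (simp add: fa_mult_def fa_sub_def fun_eq_iff algebra_simps sum_subtractf)
lemma fa_mult_sub_left: "fa_mult (fa_sub g h) f = fa_sub (fa_mult g f) (fa_mult h f)"
  by (simp add: fa_mult_def fa_sub_def fun_eq_iff algebra_simps sum_subtractf)
lemma fa_mult_smult_right: "fa_mult f (fa_smult c g) = fa_smult c (fa_mult f g)"
  by (simp add: fa_mult_def fa_smult_def fun_eq_iff algebra_simps sum_distrib_left)
lemma fa_mult_smult_left: "fa_mult (fa_smult c g) f = fa_smult c (fa_mult g f)"
  by (simp add: fa_mult_def fa_smult_def fun_eq_iff algebra_simps sum_distrib_left)

definition nobad :: "nat \<Rightarrow> gen list \<Rightarrow> bool" where
  "nobad n w \<longleftrightarrow> \<not> (\<exists>u a b v. w = u @ [a,b] @ v \<and> (key n b < key n a \<or> (is_xi a \<and> is_xi b)))"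

lemma nobad_Cons: "nobad n (c # w) \<Longrightarrow> nobad n w"
  unfolding nobad_def by (metis append_Cons)

lemma nobad_head: "nobad n (c # d # w) \<Longrightarrow> key n c \<le> key n d \<and> \<not> (is_xi c \<and> is_xi d)"
  unfolding nobad_def by (metis append_Cons append_Nil not_less)

lemma nobad_sorted: "nobad n w \<Longrightarrow> sorted (map (key n) w)"
proof (induction w)
  case Nil then show ?case by simp
next
  case (Cons c w)
  have s: "sorted (map (key n) w)" using Cons nobad_Cons by blast
  show ?case
  proof (cases w)
    case Nil then show ?thesis by simp
  next
    case (Cons d w')
    have cd: "key n c \<le> key n d" using nobad_head[of n c d w'] Cons.prems Cons by simp
    have "\<forall>x\<in>set w'. key n d \<le> key n x" using s Cons by simp
    then have "\<forall>x\<in>set w'. key n c \<le> key n x" using cd by (auto intro: order_trans)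
    then show ?thesis using s cd Cons by simp
  qed
qed

lemma xw_cong: "(\<And>i. k \<le> i \<Longrightarrow> i < n \<Longrightarrow> a i = b i) \<Longrightarrow> xw n k a = xw n k b"
  unfolding xw_def by (rule arg_cong[of _ _ concat]) (rule map_cong; auto)

lemma xw_skip: "k \<le> j \<Longrightarrow> j \<le> n \<Longrightarrow> (\<And>i. k \<le> i \<Longrightarrow> i < j \<Longrightarrow> a i = 0) \<Longrightarrow> xw n k a = xw n j a"
proof (induction "j - k" arbitrary: k)
  case 0 then show ?case by simp
next
  case (Suc x)
  then have k: "k < n" "k < j" by auto
  have "xw n k a = replicate (a k) (Xg k) @ xw n (Suc k) a" by (rule xw_step[OF k(1)])
  also have "a k = 0" using Suc.prems k by auto
  also have "xw n (Suc k) a = xw n j a" using Suc k by auto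
  finally show ?case by simp
qed

lemma xw_cons: "j < n \<Longrightarrow> Xg j # xw n j a = xw n j (a(j := Suc (a j)))"
proof -
  assume j: "j < n"
  have "xw n (Suc j) (a(j := Suc (a j))) = xw n (Suc j) a" by (rule xw_cong) auto
  then show ?thesis using xw_step[OF j, of a] xw_step[OF j, of "a(j := Suc (a j))"] by simp
qed

lemma xw_zero: "xw n k (\<lambda>_. 0) = []"
  by (simp add: xw_def)

lemma key_ge_n: "y \<in> gens n \<Longrightarrow> n \<le> key n y \<Longrightarrow> is_xi y"
  by (auto simp: gens_def key_def)

lemma nobad_char:
  "set w \<subseteq> gens n \<Longrightarrow> nobad n w \<Longrightarrow> (\<forall>y\<in>set w. k \<le> key n y) \<Longrightarrow> k \<le> n \<Longrightarrow>
   \<exists>a s. Valid n (a,s) \<and> (\<forall>j<k. a j = 0) \<and> w = xw n k a @ tl_of s"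
proof (induction w arbitrary: k)
  case Nil
  show ?case
    by (rule exI[of _ "\<lambda>_. 0"], rule exI[of _ None]) (simp add: Valid_def xw_zero tl_of_def)
next
  case (Cons c w)
  have sw: "set w \<subseteq> gens n" and nw: "nobad n w" using Cons.prems nobad_Cons by auto
  have srt: "\<forall>y\<in>set w. key n c \<le> key n y" using nobad_sorted[OF Cons.prems(2)] by simp
  show ?case
  proof (cases c)
    case (Xg j)
    have j: "j < n" "k \<le> j" using Cons.prems Xg by (auto simp: key_def)
    have kc: "key n c = j" by (simp add: Xg key_def)
    obtain a s where as: "Valid n (a,s)" "\<forall>i<j. a i = 0" "w = xw n j a @ tl_of s"
      using Cons.IH[OF sw nw, of j] srt kc j by auto
    define a' where "a' = a(j := Suc (a j))"
    have "c # w = xw n j a' @ tl_of s" using as(3) xw_cons[OF j(1)] Xg by (simp add: a'_def)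
    also have "xw n j a' = xw n k a'"
      by (rule xw_skip[symmetric]) (use j as(2) in \<open>auto simp: a'_def\<close>)
    finally have e: "c # w = xw n k a' @ tl_of s" .
    have v: "Valid n (a', s)" using as(1) j by (auto simp: Valid_def a'_def)
    have z: "\<forall>i<k. a' i = 0" using as(2) j by (auto simp: a'_def)
    show ?thesis using e v z by blast
  next
    case (Eg j)
    have j: "j < n" using Cons.prems Eg by auto
    have "w = []"
    proof (cases w)
      case (Cons d w')
      have "n \<le> key n d" using srt Cons Eg by (auto simp: key_def)
      then have "is_xi d" using key_ge_n sw Cons by auto
      then show ?thesis using nobad_head[of n c d w'] Cons.prems(2) \<open>w = d # w'\<close> Eg by simp
    qed simp
    then show ?thesis
      by (intro exI[of _ "\<lambda>_. 0"] exI[of _ "Some j"]) (simp add: Eg Valid_def xw_zero tl_of_def j)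
  qed
qed

lemma nobad_word: "set w \<subseteq> gens n \<Longrightarrow> nobad n w \<Longrightarrow> \<exists>m. Valid n m \<and> w = word_of n m"
  using nobad_char[of w n 0] by (force simp: word_of_def)

context
  fixes n :: nat and th :: "nat \<Rightarrow> nat \<Rightarrow> real"
  assumes anti: "antisymmetric_matrix n th"
begin

lemma sandwich_ideal:
  "r \<in> A_rels n th \<Longrightarrow> set u \<subseteq> gens n \<Longrightarrow> set v \<subseteq> gens n \<Longrightarrow>
   fa_mult (fa_mult (dl u) r) (dl v) \<in> A_ideal n th"
  by (intro A_ideal.rmult A_ideal.lmult A_ideal.rel FA_dl)

lemma straighten: "set w \<subseteq> gens n \<Longrightarrow> dl w \<in> Good n th"
proof (induction "length w" arbitrary: w rule: less_induct)
  case less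
  let ?B = "length w * length w * n"
  have main: "\<And>w'. set w' \<subseteq> gens n \<Longrightarrow> length w' = length w \<Longrightarrow> dl w' \<in> Good n th"
  proof -
    fix w' :: "gen list"
    show "set w' \<subseteq> gens n \<Longrightarrow> length w' = length w \<Longrightarrow> dl w' \<in> Good n th"
    proof (induction "?B - phi n 0 w'" arbitrary: w' rule: less_induct)
      case less2: less
      note IH2 = less2.hyps
      have w'g: "set w' \<subseteq> gens n" and w'l: "length w' = length w" using less2.prems by auto
      show ?case
      proof (cases "nobad n w'")
        case True
        then obtain m where "Valid n m" "w' = word_of n m" using nobad_word w'g by blast
        then show ?thesis using Good_word[OF anti] by simp
      next
        case False
        then obtain u a b v where dec: "w' = u @ [a,b] @ v" and bad: "key n b < key n a \<or> (is_xi a \<and> is_xi b)"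
          unfolding nobad_def by blast
        have gu: "set u \<subseteq> gens n" and gv: "set v \<subseteq> gens n" and ga: "a \<in> gens n" and gb: "b \<in> gens n"
          using w'g dec by auto
        have FAw': "dl w' \<in> FA n" using w'g by (rule FA_dl)
        let ?sw = "u @ [b,a] @ v"
        have gsw: "set ?sw \<subseteq> gens n" using gu gv ga gb by auto
        have swap_good: "dl ?sw \<in> Good n th" if kk: "key n b < key n a"
        proof -
          have "phi n 0 w' < phi n 0 ?sw" using phi_swap[of n u a b v] kk dec by simp
          moreover have lsw: "length ?sw = length w" using w'l dec by simp
          moreover have "phi n 0 ?sw \<le> ?B" using phi_bound[OF gsw, of 0] unfolding lsw by simp
          ultimately have "?B - phi n 0 ?sw < ?B - phi n 0 w'" by simp
          then show ?thesis using IH2[of ?sw] gsw w'l dec by simp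
        qed
        show ?thesis
        proof (cases a)
          case (Xg j)
          then have jn: "j < n" using ga by simp
          show ?thesis
          proof (cases b)
            case (Xg i)
            then have "i < j" using bad \<open>a = Xg j\<close> by (simp add: key_def)
            have in_: "i < n" using gb Xg by simp
            let ?r = "fa_sub (fa_sub (fa_mult (fa_gen (Xg j)) (fa_gen (Xg i))) (fa_mult (fa_gen (Xg i)) (fa_gen (Xg j))))
                       (fa_smult (th j i) fa_one)"
            have rr: "?r \<in> A_rels n th" unfolding A_rels_def using jn in_ by blast
            have sand: "fa_mult (fa_mult (dl u) ?r) (dl v) =
                 fa_sub (fa_sub (dl w') (dl ?sw)) (fa_smult (th j i) (dl (u @ v)))"
              unfolding fa_gen_dl fa_one_dl fa_mult_sub_right fa_mult_sub_left fa_mult_smult_right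
                fa_mult_smult_left fa_mult_dl_dl dec \<open>a = Xg j\<close> Xg by simp
            have g1: "dl ?sw \<in> Good n th" using swap_good \<open>i < j\<close> \<open>a = Xg j\<close> Xg by (simp add: key_def)
            have g2: "dl (u @ v) \<in> Good n th"
              using less.hyps[of "u @ v"] gu gv less2.prems dec by simp
            have X: "fa_add (dl ?sw) (fa_smult (th j i) (dl (u @ v))) \<in> Good n th"
              by (intro Good_add[OF anti] Good_smult[OF anti] g1 g2)
            have "fa_sub (dl w') (fa_add (dl ?sw) (fa_smult (th j i) (dl (u @ v))))
                  = fa_mult (fa_mult (dl u) ?r) (dl v)"
              unfolding sand by (simp add: fa_sub_def fa_add_def fa_smult_def fun_eq_iff)
            then have "fa_sub (dl w') (fa_add (dl ?sw) (fa_smult (th j i) (dl (u @ v)))) \<in> A_ideal n th"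
              using sandwich_ideal[OF rr gu gv] by simp
            then show ?thesis using Good_equiv[OF anti FAw' X] by simp
          next
            case (Eg i)
            then show ?thesis using bad \<open>a = Xg j\<close> jn by (simp add: key_def)
          qed
        next
          case (Eg j)
          then have jn: "j < n" using ga by simp
          show ?thesis
          proof (cases b)
            case (Xg i)
            have in_: "i < n" using gb Xg by simp
            let ?r = "fa_sub (fa_mult (fa_gen (Xg i)) (fa_gen (Eg j))) (fa_mult (fa_gen (Eg j)) (fa_gen (Xg i)))"
            have rr: "?r \<in> A_rels n th" unfolding A_rels_def using jn in_ by blast
            have sand: "fa_mult (fa_mult (dl u) ?r) (dl v) = fa_sub (dl ?sw) (dl w')"
              unfolding fa_gen_dl fa_mult_sub_right fa_mult_sub_left fa_mult_dl_dl dec \<open>a = Eg j\<close> Xg by simp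
            have g1: "dl ?sw \<in> Good n th" using swap_good \<open>a = Eg j\<close> Xg in_ by (simp add: key_def)
            have "fa_sub (dl w') (dl ?sw) = fa_smult (-1) (fa_mult (fa_mult (dl u) ?r) (dl v))"
              unfolding sand by (simp add: fa_sub_def fa_smult_def fun_eq_iff)
            then have "fa_sub (dl w') (dl ?sw) \<in> A_ideal n th"
              using A_ideal.smult[OF sandwich_ideal[OF rr gu gv]] by simp
            then show ?thesis using Good_equiv[OF anti FAw' g1] by simp
          next
            case (Eg i)
            have in_: "i < n" using gb Eg by simp
            let ?r = "fa_mult (fa_gen (Eg j)) (fa_gen (Eg i))"
            have rr: "?r \<in> A_rels n th" unfolding A_rels_def using jn in_ by blast
            have sand: "fa_mult (fa_mult (dl u) ?r) (dl v) = dl w'"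
              unfolding fa_gen_dl fa_mult_dl_dl dec \<open>a = Eg j\<close> Eg by simp
            have "fa_sub (dl w') fa_zero = dl w'" by (simp add: fa_sub_def fa_zero_def)
            then have "fa_sub (dl w') fa_zero \<in> A_ideal n th"
              using sandwich_ideal[OF rr gu gv] sand by simp
            then show ?thesis using Good_equiv[OF anti FAw' Good_zero[OF anti]] by simp
          qed
        qed
      qed
    qed
  qed
  show ?case using main less.prems by simp
qed

lemma FA_Good: "f \<in> FA n \<Longrightarrow> f \<in> Good n th"
proof -
  assume f: "f \<in> FA n"
  have "f = (\<lambda>w. \<Sum>u\<in>fsupp f. f u * dl u w)" by (rule fa_decomp) (use f FA_fin in auto)
  also have "\<dots> \<in> Good n th"
  proof (rule Good_lincomb[OF anti])
    show "finite (fsupp f)" using f by (rule FA_fin)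
    fix u assume "u \<in> fsupp f"
    then have "set u \<subseteq> gens n" using f by (auto simp: FA_iff fsupp_def)
    then show "dl u \<in> Good n th" by (rule straighten)
  qed
  finally show ?thesis .
qed

lemma Lmap_zero_ideal: "f \<in> FA n \<Longrightarrow> Lmap th f = (\<lambda>m. 0) \<Longrightarrow> f \<in> A_ideal n th"
proof -
  assume f: "f \<in> FA n" and z: "Lmap th f = (\<lambda>m. 0)"
  have "fa_sub f (Sn n (Lmap th f)) \<in> A_ideal n th" using FA_Good[OF f] by (simp add: Good_def)
  moreover have "fa_sub f (Sn n (Lmap th f)) = f" unfolding z Sn_zero by (simp add: fa_sub_def fa_zero_def)
  ultimately show ?thesis by simp
qed

lemma ideal_iff: "f \<in> FA n \<Longrightarrow> f \<in> A_ideal n th \<longleftrightarrow> Lmap th f = (\<lambda>m. 0)"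
  using Lmap_zero_ideal ideal_Lmap[OF anti] by blast

end

lemma At_car: "dg_carrier (A_theta n th) = {A_cls n th f | f. f \<in> FA n}" by (simp add: A_theta_def)
lemma At_hom: "dg_hom (A_theta n th) k = {A_cls n th f | f. f \<in> FA n \<and> fa_homog k f}" by (simp add: A_theta_def)
lemma At_add: "dg_add (A_theta n th) x y = A_cls n th (fa_add (A_rep x) (A_rep y))" by (simp add: A_theta_def)
lemma At_zero: "dg_zero (A_theta n th) = A_cls n th fa_zero" by (simp add: A_theta_def)
lemma At_smult: "dg_smult (A_theta n th) c x = A_cls n th (fa_smult c (A_rep x))" by (simp add: A_theta_def)
lemma At_mult: "dg_mult (A_theta n th) x y = A_cls n th (fa_mult (A_rep x) (A_rep y))" by (simp add: A_theta_def)
lemma At_one: "dg_one (A_theta n th) = A_cls n th fa_one" by (simp add: A_theta_def)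
lemma At_diff: "dg_diff (A_theta n th) x = A_cls n th (fa_d (A_rep x))" by (simp add: A_theta_def)

definition sdeg :: "nat option \<Rightarrow> int" where
  "sdeg s = (case s of None \<Rightarrow> 0 | Some _ \<Rightarrow> 1)"

definition pdeg :: "int \<Rightarrow> pv \<Rightarrow> bool" where
  "pdeg k p \<longleftrightarrow> (\<forall>a s. p (a,s) \<noteq> 0 \<longrightarrow> sdeg s = k)"

definition pproj :: "int \<Rightarrow> pv \<Rightarrow> pv" where
  "pproj k p = (\<lambda>(a,s). if sdeg s = k then p (a,s) else 0)"

lemma pdegD: "pdeg k p \<Longrightarrow> p (a,s) \<noteq> 0 \<Longrightarrow> sdeg s = k"
  by (simp add: pdeg_def)

lemma pdegI: "(\<And>a s. p (a,s) \<noteq> 0 \<Longrightarrow> sdeg s = k) \<Longrightarrow> pdeg k p"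
  by (simp add: pdeg_def)

lemma pdeg_lincomb: "(\<And>k. k \<in> K \<Longrightarrow> pdeg j (F k)) \<Longrightarrow> pdeg j (\<lambda>m. \<Sum>k\<in>K. c k * F k m)"
proof (rule pdegI)
  fix a s assume F: "\<And>k. k \<in> K \<Longrightarrow> pdeg j (F k)" and nz: "(\<Sum>k\<in>K. c k * F k (a,s)) \<noteq> 0"
  then obtain k where "k \<in> K" "c k * F k (a,s) \<noteq> 0" by (meson sum.not_neutral_contains_not_neutral)
  then show "sdeg s = j" using pdegD[OF F[of k]] by auto
qed

lemma pdeg_add: "pdeg k p \<Longrightarrow> pdeg k q \<Longrightarrow> pdeg k (\<lambda>m. p m + q m)"
proof (rule pdegI)
  fix a s assume "pdeg k p" "pdeg k q" "p (a,s) + q (a,s) \<noteq> 0"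
  then show "sdeg s = k" using pdegD by (cases "p (a,s) = 0") auto
qed
lemma pdeg_smult: "pdeg k p \<Longrightarrow> pdeg k (\<lambda>m. c * p m)"
proof (rule pdegI)
  fix a s assume "pdeg k p" "c * p (a,s) \<noteq> 0"
  then show "sdeg s = k" using pdegD by auto
qed
lemma pdeg_mulop: "pdeg k p \<Longrightarrow> pdeg k (mulop i p)"
proof (rule pdegI)
  fix a s assume "pdeg k p" "mulop i p (a,s) \<noteq> 0"
  then show "sdeg s = k" using pdegD[of k p "a(i := a i - 1)" s] by (simp add: mulop_def split: if_splits)
qed

lemma pdeg_derop: "pdeg k p \<Longrightarrow> pdeg k (derop i p)"
proof (rule pdegI)
  fix a s assume "pdeg k p" "derop i p (a,s) \<noteq> 0"
  then show "sdeg s = k" using pdegD[of k p "a(i := a i + 1)" s] by (simp add: derop_def)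
qed

lemma pdeg_xop: "pdeg k p \<Longrightarrow> pdeg k (xop th i p)"
  unfolding xop_def by (intro pdeg_add pdeg_mulop pdeg_lincomb pdeg_derop)

lemma pdeg_eop: "pdeg k p \<Longrightarrow> pdeg (k + 1) (eop i p)"
proof (rule pdegI)
  fix a s assume p: "pdeg k p" and nz: "eop i p (a,s) \<noteq> 0"
  then have "s = Some i" "p (a, None) \<noteq> 0" by (auto simp: eop_def split: if_splits)
  moreover have "sdeg None = k" using pdegD[OF p \<open>p (a, None) \<noteq> 0\<close>] .
  ultimately show "sdeg s = k + 1" by (simp add: sdeg_def)
qed

lemma pdeg_wop: "pdeg k p \<Longrightarrow> pdeg (k + int (word_deg w)) (wop th w p)"
proof (induction w arbitrary: k)
  case Nil then show ?case by simp
next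
  case (Cons a w)
  show ?case
  proof (cases a)
    case (Xg i) then show ?thesis using Cons by (simp add: pdeg_xop)
  next
    case (Eg i) then show ?thesis using pdeg_eop[OF Cons.IH[OF Cons.prems]] by (simp add: algebra_simps)
  qed
qed

lemma pdeg_e0: "pdeg 0 e0" by (auto simp: pdeg_def e0_def sdeg_def split: if_splits)

lemma pdeg_rho: "fa_homog k f \<Longrightarrow> pdeg j q \<Longrightarrow> pdeg (j + k) (rho th f q)"
  unfolding rho_def
proof (rule pdeg_lincomb)
  fix w assume "fa_homog k f" "pdeg j q" "w \<in> fsupp f"
  then have e: "int (word_deg w) = k" by (auto simp: fa_homog_def fsupp_def)
  show "pdeg (j + k) (wop th w q)" using pdeg_wop[OF \<open>pdeg j q\<close>, of w th] unfolding e .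
qed

lemma pdeg_Lmap: "fa_homog k f \<Longrightarrow> pdeg k (Lmap th f)"
  using pdeg_rho[OF _ pdeg_e0] by (simp add: Lmap_def)

lemma pdeg_dop: "pdeg k p \<Longrightarrow> pdeg (k + 1) (dop p)"
proof (rule pdegI)
  fix a s assume p: "pdeg k p" and nz: "dop p (a,s) \<noteq> 0"
  then obtain i where "s = Some i" "p (a(i := a i + 1), None) \<noteq> 0"
    by (auto simp: dop_def derop_def split: option.splits)
  moreover have "sdeg None = k" using pdegD[OF p \<open>p (a(i := a i + 1), None) \<noteq> 0\<close>] .
  ultimately show "sdeg s = k + 1" by (simp add: sdeg_def)
qed

lemma pdeg_zero: "pdeg k (\<lambda>m. 0)" by (simp add: pdeg_def)

lemma homog_Sn: "pdeg k p \<Longrightarrow> fa_homog k (Sn n p)"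
proof -
  assume p: "pdeg k p"
  show ?thesis unfolding fa_homog_def
  proof (intro allI impI)
    fix w assume "Sn n p w \<noteq> 0"
    then obtain m where "Valid n m" "word_of n m = w" "p m \<noteq> 0" using Sn_nz by blast
    moreover obtain a s where "m = (a,s)" by (cases m)
    ultimately have "sdeg s = k" "word_of n (a,s) = w" using pdegD[OF p] by auto
    then show "int (word_deg w) = k"
      by (auto simp: word_deg_word_of sdeg_def split: option.splits)
  qed
qed

lemma pproj_pdeg: "pdeg k (pproj k p)"
  by (auto simp: pdeg_def pproj_def)

lemma pproj_of_pdeg: "pdeg k p \<Longrightarrow> pproj j p = (if j = k then p else (\<lambda>m. 0))"
proof (rule ext, clarify)
  fix a s assume p: "pdeg k p"
  show "pproj j p (a,s) = (if j = k then p else (\<lambda>m. 0)) (a,s)"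
    using pdegD[OF p, of a s] by (auto simp: pproj_def)
qed

lemma Pset_pproj: "p \<in> Pset n \<Longrightarrow> pproj k p \<in> Pset n"
proof -
  assume p: "p \<in> Pset n"
  have "fsupp (pproj k p) \<subseteq> fsupp p" by (auto simp: fsupp_def pproj_def split: if_splits)
  then have "finite (fsupp (pproj k p))" using p unfolding Pset_def by (blast intro: finite_subset)
  moreover have "Valid n m" if "pproj k p m \<noteq> 0" for m
  proof -
    have "p m \<noteq> 0" using that by (cases m) (auto simp: pproj_def split: if_splits)
    then show ?thesis using p unfolding Pset_def by blast
  qed
  ultimately show ?thesis unfolding Pset_def by blast
qed

lemma pdeg_range: "pdeg k p \<Longrightarrow> k \<noteq> 0 \<Longrightarrow> k \<noteq> 1 \<Longrightarrow> p = (\<lambda>m. 0)"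
proof (rule ext, clarify)
  fix a s assume "pdeg k p" "k \<noteq> 0" "k \<noteq> 1"
  moreover have "sdeg s = 0 \<or> sdeg s = 1" by (simp add: sdeg_def split: option.splits)
  ultimately show "p (a,s) = 0" using pdegD by metis
qed

lemma pproj_sum01: "(\<lambda>m. pproj 0 p m + pproj 1 p m) = p"
  by (auto simp: pproj_def sdeg_def fun_eq_iff split: option.splits)

context
  fixes n :: nat and th :: "nat \<Rightarrow> nat \<Rightarrow> real"
  assumes anti: "antisymmetric_matrix n th"
begin

lemma cls_char: "f \<in> FA n \<Longrightarrow> A_cls n th f = {g \<in> FA n. Lmap th g = Lmap th f}"
proof -
  assume f: "f \<in> FA n"
  have "fa_sub f g \<in> A_ideal n th \<longleftrightarrow> Lmap th g = Lmap th f" if g: "g \<in> FA n" for g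
  proof -
    have "fa_sub f g \<in> A_ideal n th \<longleftrightarrow> Lmap th (fa_sub f g) = (\<lambda>m. 0)"
      by (rule ideal_iff[OF anti FA_sub[OF f g]])
    also have "\<dots> \<longleftrightarrow> Lmap th g = Lmap th f"
      unfolding Lmap_sub[OF f g] by (auto simp: fun_eq_iff)
    finally show ?thesis .
  qed
  then show ?thesis by (auto simp: A_cls_def)
qed

lemma cls_eq: "f \<in> FA n \<Longrightarrow> g \<in> FA n \<Longrightarrow> A_cls n th f = A_cls n th g \<longleftrightarrow> Lmap th f = Lmap th g"
proof -
  assume f: "f \<in> FA n" and g: "g \<in> FA n"
  show ?thesis
  proof
    assume "A_cls n th f = A_cls n th g"
    then have "f \<in> A_cls n th g" using cls_char[OF f] f by auto
    then show "Lmap th f = Lmap th g" using cls_char[OF g] by auto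
  qed (simp add: cls_char[OF f] cls_char[OF g])
qed

lemma rep_cls: "f \<in> FA n \<Longrightarrow> A_rep (A_cls n th f) \<in> FA n \<and> Lmap th (A_rep (A_cls n th f)) = Lmap th f"
proof -
  assume f: "f \<in> FA n"
  have "f \<in> A_cls n th f" using cls_char[OF f] f by simp
  then have "A_rep (A_cls n th f) \<in> A_cls n th f" unfolding A_rep_def
    by (rule someI[where P="\<lambda>g. g \<in> A_cls n th f"])
  then show ?thesis using cls_char[OF f] by simp
qed

lemma car_iff: "x \<in> dg_carrier (A_theta n th) \<longleftrightarrow> (\<exists>f\<in>FA n. x = A_cls n th f)"
  by (auto simp: At_car)

lemma car_rep: "x \<in> dg_carrier (A_theta n th) \<Longrightarrow> A_rep x \<in> FA n \<and> A_cls n th (A_rep x) = x"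
proof -
  assume "x \<in> dg_carrier (A_theta n th)"
  then obtain f where f: "f \<in> FA n" "x = A_cls n th f" by (auto simp: car_iff)
  have r: "A_rep x \<in> FA n" "Lmap th (A_rep x) = Lmap th f" using rep_cls[OF f(1)] f(2) by auto
  have "A_cls n th (A_rep x) = A_cls n th f" using cls_eq[OF r(1) f(1)] r(2) by simp
  then show ?thesis using r(1) f(2) by simp
qed

lemma cls_car: "f \<in> FA n \<Longrightarrow> A_cls n th f \<in> dg_carrier (A_theta n th)"
  by (auto simp: car_iff)

lemma NN_cls: "f \<in> FA n \<Longrightarrow> Lmap th (A_rep (A_cls n th f)) = Lmap th f"
  using rep_cls by blast

lemma car_inj:
  assumes "x \<in> dg_carrier (A_theta n th)" "y \<in> dg_carrier (A_theta n th)"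
    "Lmap th (A_rep x) = Lmap th (A_rep y)"
  shows "x = y"
proof -
  have rx: "A_rep x \<in> FA n" "A_cls n th (A_rep x) = x" using car_rep[OF assms(1)] by auto
  have ry: "A_rep y \<in> FA n" "A_cls n th (A_rep y) = y" using car_rep[OF assms(2)] by auto
  have "A_cls n th (A_rep x) = A_cls n th (A_rep y)" using cls_eq[OF rx(1) ry(1)] assms(3) by simp
  then show ?thesis using rx ry by simp
qed

lemma rho_eq: "f \<in> FA n \<Longrightarrow> g \<in> FA n \<Longrightarrow> Lmap th f = Lmap th g \<Longrightarrow> rho th f = rho th g"
proof -
  assume f: "f \<in> FA n" and g: "g \<in> FA n" and L: "Lmap th f = Lmap th g"
  have "Lmap th (fa_sub f g) = (\<lambda>m. 0)" unfolding Lmap_sub[OF f g] L by simp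
  then have "fa_sub f g \<in> A_ideal n th" using ideal_iff[OF anti FA_sub[OF f g]] by simp
  then have "rho th (fa_sub f g) p = (\<lambda>m. 0)" for p by (rule rho_ideal[OF anti])
  then show ?thesis unfolding rho_sub[OF FA_fin[OF f] FA_fin[OF g]] by (auto simp: fun_eq_iff dest: fun_cong)
qed

lemma RR_cls: "f \<in> FA n \<Longrightarrow> rho th (A_rep (A_cls n th f)) = rho th f"
proof -
  assume f: "f \<in> FA n"
  show ?thesis using rep_cls[OF f] rho_eq[OF _ f] by blast
qed

end

definition NN :: "(nat \<Rightarrow> nat \<Rightarrow> real) \<Rightarrow> (gen list \<Rightarrow> real) set \<Rightarrow> pv" where
  "NN th x = Lmap th (A_rep x)"
definition RR :: "(nat \<Rightarrow> nat \<Rightarrow> real) \<Rightarrow> (gen list \<Rightarrow> real) set \<Rightarrow> pv \<Rightarrow> pv" where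
  "RR th x = rho th (A_rep x)"

context
  fixes n :: nat and th :: "nat \<Rightarrow> nat \<Rightarrow> real"
  assumes anti: "antisymmetric_matrix n th"
begin

lemma repFA: "x \<in> dg_carrier (A_theta n th) \<Longrightarrow> A_rep x \<in> FA n"
  using car_rep[OF anti] by blast

lemma NN_cls': "f \<in> FA n \<Longrightarrow> NN th (A_cls n th f) = Lmap th f"
  unfolding NN_def by (rule NN_cls[OF anti])

lemma RR_cls': "f \<in> FA n \<Longrightarrow> RR th (A_cls n th f) = rho th f"
  unfolding RR_def by (rule RR_cls[OF anti])

lemma inj: "x \<in> dg_carrier (A_theta n th) \<Longrightarrow> y \<in> dg_carrier (A_theta n th) \<Longrightarrow> NN th x = NN th y \<Longrightarrow> x = y"
  unfolding NN_def by (rule car_inj[OF anti])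

lemma clsC: "f \<in> FA n \<Longrightarrow> A_cls n th f \<in> dg_carrier (A_theta n th)"
  by (rule cls_car[OF anti])

lemma add_C: "x \<in> dg_carrier (A_theta n th) \<Longrightarrow> y \<in> dg_carrier (A_theta n th) \<Longrightarrow>
   dg_add (A_theta n th) x y \<in> dg_carrier (A_theta n th) \<and>
   NN th (dg_add (A_theta n th) x y) = (\<lambda>m. NN th x m + NN th y m) \<and>
   RR th (dg_add (A_theta n th) x y) = (\<lambda>p m. RR th x p m + RR th y p m)"
  unfolding At_add using repFA[of x] repFA[of y]
  by (simp add: clsC FA_add NN_cls' RR_cls' Lmap_add fun_eq_iff rho_add FA_fin) (simp add: NN_def RR_def)

lemma smult_C: "x \<in> dg_carrier (A_theta n th) \<Longrightarrow>
   dg_smult (A_theta n th) c x \<in> dg_carrier (A_theta n th) \<and>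
   NN th (dg_smult (A_theta n th) c x) = (\<lambda>m. c * NN th x m) \<and>
   RR th (dg_smult (A_theta n th) c x) = (\<lambda>p m. c * RR th x p m)"
  unfolding At_smult using repFA[of x]
  by (simp add: clsC FA_smult NN_cls' RR_cls' Lmap_smult fun_eq_iff rho_smult FA_fin) (simp add: NN_def RR_def)

lemma mult_C: "x \<in> dg_carrier (A_theta n th) \<Longrightarrow> y \<in> dg_carrier (A_theta n th) \<Longrightarrow>
   dg_mult (A_theta n th) x y \<in> dg_carrier (A_theta n th) \<and>
   NN th (dg_mult (A_theta n th) x y) = RR th x (NN th y) \<and>
   RR th (dg_mult (A_theta n th) x y) = (\<lambda>p. RR th x (RR th y p))"
  unfolding At_mult using repFA[of x] repFA[of y]
  by (simp add: clsC FA_mult NN_cls' RR_cls' Lmap_def fun_eq_iff rho_mult FA_fin) (simp add: NN_def RR_def Lmap_def)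

lemma zero_C: "dg_zero (A_theta n th) \<in> dg_carrier (A_theta n th) \<and> NN th (dg_zero (A_theta n th)) = (\<lambda>m. 0)"
  unfolding At_zero by (simp add: clsC FA_zero NN_cls' Lmap_zero)

lemma one_C: "dg_one (A_theta n th) \<in> dg_carrier (A_theta n th) \<and> NN th (dg_one (A_theta n th)) = e0 \<and>
   RR th (dg_one (A_theta n th)) = (\<lambda>p. p)"
  unfolding At_one by (simp add: clsC FA_one NN_cls' RR_cls' Lmap_def rho_one fun_eq_iff)

lemma diff_C: "x \<in> dg_carrier (A_theta n th) \<Longrightarrow>
   dg_diff (A_theta n th) x \<in> dg_carrier (A_theta n th) \<and>
   NN th (dg_diff (A_theta n th) x) = dop (NN th x)"
  unfolding At_diff using repFA[of x] by (simp add: clsC FA_d NN_cls' Lmap_d FA_fin) (simp add: NN_def)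

lemma RR_e0: "x \<in> dg_carrier (A_theta n th) \<Longrightarrow> RR th x e0 = NN th x"
  by (simp add: RR_def NN_def Lmap_def)

lemma lin_RR: "lin (RR th x)"
  unfolding RR_def by (rule lin_rho)

lemma NN_Pset: "x \<in> dg_carrier (A_theta n th) \<Longrightarrow> NN th x \<in> Pset n"
  unfolding NN_def using repFA by (simp add: Pset_Lmap)

lemma cls_Sn_NN: "x \<in> dg_carrier (A_theta n th) \<Longrightarrow> A_cls n th (Sn n (NN th x)) = x"
  by (rule inj) (simp_all add: clsC FA_Sn NN_Pset NN_cls' Lmap_Sn)

lemma hom_iff: "x \<in> dg_hom (A_theta n th) k \<longleftrightarrow> x \<in> dg_carrier (A_theta n th) \<and> pdeg k (NN th x)"
proof
  assume "x \<in> dg_hom (A_theta n th) k"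
  then obtain f where f: "f \<in> FA n" "fa_homog k f" "x = A_cls n th f" by (auto simp: At_hom)
  then show "x \<in> dg_carrier (A_theta n th) \<and> pdeg k (NN th x)"
    by (simp add: clsC NN_cls' pdeg_Lmap)
next
  assume h: "x \<in> dg_carrier (A_theta n th) \<and> pdeg k (NN th x)"
  have "x = A_cls n th (Sn n (NN th x))" using cls_Sn_NN h by simp
  moreover have "Sn n (NN th x) \<in> FA n" "fa_homog k (Sn n (NN th x))"
    using h by (simp_all add: FA_Sn NN_Pset homog_Sn)
  ultimately show "x \<in> dg_hom (A_theta n th) k" unfolding At_hom by blast
qed

lemma hom_rep: "x \<in> dg_hom (A_theta n th) k \<Longrightarrow> \<exists>f. f \<in> FA n \<and> fa_homog k f \<and> RR th x = rho th f \<and> NN th x = Lmap th f"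
proof -
  assume "x \<in> dg_hom (A_theta n th) k"
  then obtain f where f: "f \<in> FA n" "fa_homog k f" "x = A_cls n th f" by (auto simp: At_hom)
  then show ?thesis by (auto simp: RR_cls' NN_cls')
qed

end

context
  fixes n :: nat and th :: "nat \<Rightarrow> nat \<Rightarrow> real"
  assumes anti: "antisymmetric_matrix n th"
begin

lemmas ops = add_C[OF anti] smult_C[OF anti] mult_C[OF anti] zero_C[OF anti] one_C[OF anti] diff_C[OF anti]
lemmas injA = inj[OF anti]

lemma foldr_C:
  "(\<And>k. k \<in> set ks \<Longrightarrow> c k \<in> dg_carrier (A_theta n th)) \<Longrightarrow>
   foldr (\<lambda>k acc. dg_add (A_theta n th) (c k) acc) ks (dg_zero (A_theta n th)) \<in> dg_carrier (A_theta n th) \<and>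
   NN th (foldr (\<lambda>k acc. dg_add (A_theta n th) (c k) acc) ks (dg_zero (A_theta n th))) =
     (\<lambda>m. sum_list (map (\<lambda>k. NN th (c k) m) ks))"
proof (induction ks)
  case Nil then show ?case by (simp add: ops)
next
  case (Cons k ks)
  then show ?case by (simp add: ops)
qed

lemma dgsum_NN:
  assumes "finite {k. c k \<noteq> dg_zero (A_theta n th)}" "\<And>k. c k \<in> dg_carrier (A_theta n th)"
  shows "dg_sum (A_theta n th) c \<in> dg_carrier (A_theta n th) \<and>
    NN th (dg_sum (A_theta n th) c) = (\<lambda>m. \<Sum>k\<in>{k. c k \<noteq> dg_zero (A_theta n th)}. NN th (c k) m)"
proof -
  let ?K = "{k. c k \<noteq> dg_zero (A_theta n th)}"
  have "dg_sum (A_theta n th) c = foldr (\<lambda>k acc. dg_add (A_theta n th) (c k) acc) (sorted_list_of_set ?K) (dg_zero (A_theta n th))"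
    by (simp add: dg_sum_def)
  then show ?thesis using foldr_C[of "sorted_list_of_set ?K" c] assms
    by (simp add: sum_list_distinct_conv_sum_set)
qed

lemma pproj_sum: "pproj j (\<lambda>m. \<Sum>k\<in>K. F k m) = (\<lambda>m. \<Sum>k\<in>K. pproj j (F k) m)"
  by (auto simp: pproj_def fun_eq_iff)

lemma decomp:
  assumes x: "x \<in> dg_carrier (A_theta n th)"
  shows "\<exists>!c. (\<forall>k. c k \<in> dg_hom (A_theta n th) k) \<and> finite {k. c k \<noteq> dg_zero (A_theta n th)} \<and>
              x = dg_sum (A_theta n th) c"
proof -
  let ?Z = "dg_zero (A_theta n th)"
  define c where "c k = A_cls n th (Sn n (pproj k (NN th x)))" for k
  have cC: "c k \<in> dg_carrier (A_theta n th)" for k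
    unfolding c_def by (rule clsC[OF anti]) (simp add: FA_Sn Pset_pproj NN_Pset[OF anti x])
  have cN: "NN th (c k) = pproj k (NN th x)" for k
    unfolding c_def by (simp add: NN_cls'[OF anti] FA_Sn Pset_pproj NN_Pset[OF anti x] Lmap_Sn)
  have cH: "c k \<in> dg_hom (A_theta n th) k" for k
    using cC cN by (simp add: hom_iff[OF anti] pproj_pdeg)
  have Kc: "{k. c k \<noteq> ?Z} \<subseteq> {0,1}"
  proof
    fix k assume "k \<in> {k. c k \<noteq> ?Z}"
    then have ne: "c k \<noteq> ?Z" by simp
    show "k \<in> {0,1}"
    proof (rule ccontr)
      assume "k \<notin> {0,1}"
      then have "NN th (c k) = (\<lambda>m. 0)" unfolding cN using pdeg_range[OF pproj_pdeg] by auto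
      then have "c k = ?Z" using injA[OF cC] ops by simp
      then show False using ne by simp
    qed
  qed
  have finK: "finite {k. c k \<noteq> ?Z}" using Kc finite_subset by auto
  have "NN th (dg_sum (A_theta n th) c) = (\<lambda>m. \<Sum>k\<in>{k. c k \<noteq> ?Z}. pproj k (NN th x) m)"
    using dgsum_NN[OF finK cC] by (simp add: cN)
  also have "\<dots> = (\<lambda>m. \<Sum>k\<in>{0,1}. pproj k (NN th x) m)"
  proof (rule ext, rule sum.mono_neutral_left)
    fix m show "\<forall>k\<in>{0,1} - {k. c k \<noteq> ?Z}. pproj k (NN th x) m = 0"
    proof
      fix k assume "k \<in> {0,1} - {k. c k \<noteq> ?Z}"
      then have "c k = ?Z" by simp
      then have "pproj k (NN th x) = (\<lambda>m. 0)" using cN[of k] zero_C[OF anti] by simp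
      then show "pproj k (NN th x) m = 0" by simp
    qed
  qed (use Kc in auto)
  also have "\<dots> = NN th x" using pproj_sum01[of "NN th x"] by simp
  finally have xs: "x = dg_sum (A_theta n th) c"
    using injA[OF x] dgsum_NN[OF finK cC] by simp
  show ?thesis
  proof (rule ex1I[of _ c])
    show "(\<forall>k. c k \<in> dg_hom (A_theta n th) k) \<and> finite {k. c k \<noteq> ?Z} \<and> x = dg_sum (A_theta n th) c"
      using cH finK xs by blast
  next
    fix c' assume h: "(\<forall>k. c' k \<in> dg_hom (A_theta n th) k) \<and> finite {k. c' k \<noteq> ?Z} \<and> x = dg_sum (A_theta n th) c'"
    have c'C: "c' k \<in> dg_carrier (A_theta n th)" and c'd: "pdeg k (NN th (c' k))" for k
      using h hom_iff[OF anti] by blast+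
    have NNx: "NN th x = (\<lambda>m. \<Sum>k\<in>{k. c' k \<noteq> ?Z}. NN th (c' k) m)"
      using h dgsum_NN[of c'] c'C by auto
    show "c' = c"
    proof
      fix j
      have "pproj j (NN th x) = (\<lambda>m. \<Sum>k\<in>{k. c' k \<noteq> ?Z}. pproj j (NN th (c' k)) m)"
        unfolding NNx pproj_sum ..
      also have "\<dots> = (\<lambda>m. \<Sum>k\<in>{k. c' k \<noteq> ?Z}. if k = j then NN th (c' k) m else 0)"
        by (rule ext, rule sum.cong) (auto simp: pproj_of_pdeg[OF c'd])
      also have "\<dots> = (\<lambda>m. if j \<in> {k. c' k \<noteq> ?Z} then NN th (c' j) m else 0)"
        using h by (simp add: sum.delta')
      also have "\<dots> = NN th (c' j)"
        using ops by (auto simp: fun_eq_iff)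
      finally show "c' j = c j" using injA[OF c'C cC] cN by simp
    qed
  qed
qed

lemma decomp_NN:
  assumes h: "(\<forall>k. c' k \<in> dg_hom (A_theta n th) k) \<and> finite {k. c' k \<noteq> dg_zero (A_theta n th)} \<and>
              x = dg_sum (A_theta n th) c'"
  shows "NN th (c' j) = pproj j (NN th x)"
proof -
  let ?Z = "dg_zero (A_theta n th)"
  have c'C: "c' k \<in> dg_carrier (A_theta n th)" and c'd: "pdeg k (NN th (c' k))" for k
    using h hom_iff[OF anti] by blast+
  have NNx: "NN th x = (\<lambda>m. \<Sum>k\<in>{k. c' k \<noteq> ?Z}. NN th (c' k) m)"
    using h dgsum_NN[of c'] c'C by auto
  have "pproj j (NN th x) = (\<lambda>m. \<Sum>k\<in>{k. c' k \<noteq> ?Z}. pproj j (NN th (c' k)) m)"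
    unfolding NNx pproj_sum ..
  also have "\<dots> = (\<lambda>m. \<Sum>k\<in>{k. c' k \<noteq> ?Z}. if k = j then NN th (c' k) m else 0)"
    by (rule ext, rule sum.cong) (auto simp: pproj_of_pdeg[OF c'd])
  also have "\<dots> = (\<lambda>m. if j \<in> {k. c' k \<noteq> ?Z} then NN th (c' j) m else 0)"
    using h by (simp add: sum.delta')
  also have "\<dots> = NN th (c' j)"
    using ops by (auto simp: fun_eq_iff)
  finally show ?thesis by simp
qed

end


context
  fixes n :: nat and th :: "nat \<Rightarrow> nat \<Rightarrow> real"
  assumes anti: "antisymmetric_matrix n th"
begin

lemmas ops2 = add_C[OF anti] smult_C[OF anti] mult_C[OF anti] zero_C[OF anti] one_C[OF anti] diff_C[OF anti]

abbreviation "AT \<equiv> A_theta n th"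
abbreviation "CT \<equiv> dg_carrier (A_theta n th)"

lemma e_add_assoc: "x \<in> CT \<Longrightarrow> y \<in> CT \<Longrightarrow> w \<in> CT \<Longrightarrow>
  dg_add AT (dg_add AT x y) w = dg_add AT x (dg_add AT y w)"
  by (rule inj[OF anti]) (simp_all add: ops2 algebra_simps)

lemma e_add_comm: "x \<in> CT \<Longrightarrow> y \<in> CT \<Longrightarrow> dg_add AT x y = dg_add AT y x"
  by (rule inj[OF anti]) (simp_all add: ops2 algebra_simps)

lemma e_zero_add: "x \<in> CT \<Longrightarrow> dg_add AT (dg_zero AT) x = x"
  by (rule inj[OF anti]) (simp_all add: ops2)

lemma e_inv: "x \<in> CT \<Longrightarrow> dg_add AT x (dg_smult AT (-1) x) = dg_zero AT"
  by (rule inj[OF anti]) (simp_all add: ops2)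

lemma e_sm_sm: "x \<in> CT \<Longrightarrow> dg_smult AT a (dg_smult AT b x) = dg_smult AT (a * b) x"
  by (rule inj[OF anti]) (simp_all add: ops2 mult.assoc)

lemma e_sm_one: "x \<in> CT \<Longrightarrow> dg_smult AT 1 x = x"
  by (rule inj[OF anti]) (simp_all add: ops2)

lemma e_sm_add: "x \<in> CT \<Longrightarrow> y \<in> CT \<Longrightarrow>
  dg_smult AT a (dg_add AT x y) = dg_add AT (dg_smult AT a x) (dg_smult AT a y)"
  by (rule inj[OF anti]) (simp_all add: ops2 algebra_simps)

lemma e_add_sm: "x \<in> CT \<Longrightarrow> dg_smult AT (a + b) x = dg_add AT (dg_smult AT a x) (dg_smult AT b x)"
  by (rule inj[OF anti]) (simp_all add: ops2 algebra_simps)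

lemma e_mult_assoc: "x \<in> CT \<Longrightarrow> y \<in> CT \<Longrightarrow> w \<in> CT \<Longrightarrow>
  dg_mult AT (dg_mult AT x y) w = dg_mult AT x (dg_mult AT y w)"
  by (rule inj[OF anti]) (simp_all add: ops2)

lemma e_unit: "x \<in> CT \<Longrightarrow> dg_mult AT (dg_one AT) x = x \<and> dg_mult AT x (dg_one AT) = x"
  using inj[OF anti] by (simp add: ops2 RR_e0[OF anti])

lemma e_distrib: "x \<in> CT \<Longrightarrow> y \<in> CT \<Longrightarrow> w \<in> CT \<Longrightarrow>
  dg_mult AT x (dg_add AT y w) = dg_add AT (dg_mult AT x y) (dg_mult AT x w) \<and>
  dg_mult AT (dg_add AT y w) x = dg_add AT (dg_mult AT y x) (dg_mult AT w x)"
proof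
  assume x: "x \<in> CT" and y: "y \<in> CT" and w: "w \<in> CT"
  show "dg_mult AT x (dg_add AT y w) = dg_add AT (dg_mult AT x y) (dg_mult AT x w)"
    by (rule inj[OF anti]) (simp_all add: x y w ops2 lin_add[OF lin_RR[OF anti]])
  show "dg_mult AT (dg_add AT y w) x = dg_add AT (dg_mult AT y x) (dg_mult AT w x)"
    by (rule inj[OF anti]) (simp_all add: x y w ops2)
qed

lemma e_sm_mult: "x \<in> CT \<Longrightarrow> y \<in> CT \<Longrightarrow>
  dg_smult AT a (dg_mult AT x y) = dg_mult AT (dg_smult AT a x) y \<and>
  dg_smult AT a (dg_mult AT x y) = dg_mult AT x (dg_smult AT a y)"
proof
  assume x: "x \<in> CT" and y: "y \<in> CT"
  show "dg_smult AT a (dg_mult AT x y) = dg_mult AT (dg_smult AT a x) y"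
    by (rule inj[OF anti]) (simp_all add: x y ops2)
  show "dg_smult AT a (dg_mult AT x y) = dg_mult AT x (dg_smult AT a y)"
    by (rule inj[OF anti]) (simp_all add: x y ops2 lin_smult[OF lin_RR[OF anti]])
qed

lemma e_grading: "dg_hom AT k \<subseteq> CT \<and> dg_zero AT \<in> dg_hom AT k \<and>
   (\<forall>x\<in>dg_hom AT k. \<forall>y\<in>dg_hom AT k. dg_add AT x y \<in> dg_hom AT k) \<and>
   (\<forall>a. \<forall>x\<in>dg_hom AT k. dg_smult AT a x \<in> dg_hom AT k)"
  by (auto simp: hom_iff[OF anti] ops2 pdeg_zero pdeg_add pdeg_smult)

lemma e_hom_mult: "x \<in> dg_hom AT k \<Longrightarrow> y \<in> dg_hom AT l \<Longrightarrow> dg_mult AT x y \<in> dg_hom AT (k + l)"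
proof -
  assume x: "x \<in> dg_hom AT k" and y: "y \<in> dg_hom AT l"
  obtain f where f: "f \<in> FA n" "fa_homog k f" "RR th x = rho th f" using hom_rep[OF anti x] by blast
  have xc: "x \<in> CT" and yc: "y \<in> CT" and yd: "pdeg l (NN th y)" using x y hom_iff[OF anti] by auto
  have "pdeg (l + k) (rho th f (NN th y))" by (rule pdeg_rho[OF f(2) yd])
  then show ?thesis using xc yc f(3) by (simp add: hom_iff[OF anti] ops2 add.commute)
qed

lemma e_one_hom: "dg_one AT \<in> dg_hom AT 0"
  by (simp add: hom_iff[OF anti] ops2 pdeg_e0)

lemma e_d_add: "x \<in> CT \<Longrightarrow> y \<in> CT \<Longrightarrow> dg_diff AT (dg_add AT x y) = dg_add AT (dg_diff AT x) (dg_diff AT y)"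
  by (rule inj[OF anti]) (simp_all add: ops2 lin_add[OF lin_dop])

lemma e_d_sm: "x \<in> CT \<Longrightarrow> dg_diff AT (dg_smult AT a x) = dg_smult AT a (dg_diff AT x)"
  by (rule inj[OF anti]) (simp_all add: ops2 lin_smult[OF lin_dop])

lemma e_d_hom: "x \<in> dg_hom AT k \<Longrightarrow> dg_diff AT x \<in> dg_hom AT (k + 1)"
  by (auto simp: hom_iff[OF anti] ops2 pdeg_dop)

lemma e_dd: "x \<in> CT \<Longrightarrow> dg_diff AT (dg_diff AT x) = dg_zero AT"
  by (rule inj[OF anti]) (simp_all add: ops2 dop_dop)

lemma RR_diff: "x \<in> CT \<Longrightarrow> RR th (dg_diff AT x) = rho th (fa_d (A_rep x))"
  using repFA[OF anti, of x] by (simp add: At_diff RR_cls'[OF anti] FA_d)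

lemma e_leibniz:
  assumes x: "x \<in> dg_hom AT k" and y: "y \<in> CT"
  shows "dg_diff AT (dg_mult AT x y) =
    dg_add AT (dg_mult AT (dg_diff AT x) y) (dg_smult AT (if even k then 1 else -1) (dg_mult AT x (dg_diff AT y)))"
proof -
  obtain f where f: "f \<in> FA n" "fa_homog k f" "RR th x = rho th f" "NN th x = Lmap th f"
    using hom_rep[OF anti x] by blast
  have xc: "x \<in> CT" using x hom_iff[OF anti] by auto
  have rx: "A_rep x \<in> FA n" using repFA[OF anti xc] .
  have "Lmap th (fa_d (A_rep x)) = Lmap th (fa_d f)"
    using f(4) rx f(1) by (simp add: Lmap_d FA_fin NN_def)
  then have rd: "RR th (dg_diff AT x) = rho th (fa_d f)"
    unfolding RR_diff[OF xc] by (rule rho_eq[OF anti FA_d[OF rx] FA_d[OF f(1)]])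
  show ?thesis
    by (rule inj[OF anti]) (simp_all add: ops2 xc y rd f(3) dop_rho_homog[OF FA_fin[OF f(1)] f(2)])
qed

lemma dga_A: "dga AT"
  unfolding dga_def Let_def
  apply (intro conjI)
  subgoal by (simp add: ops2)
  subgoal by (simp add: ops2)
  subgoal by (simp add: ops2)
  subgoal by (simp add: ops2)
  subgoal by (simp add: ops2)
  subgoal by (simp add: e_add_assoc)
  subgoal using e_add_comm by blast
  subgoal by (simp add: e_zero_add)
  subgoal using e_inv ops2 by blast
  subgoal by (simp add: e_sm_sm)
  subgoal by (simp add: e_sm_one)
  subgoal by (simp add: e_sm_add)
  subgoal by (simp add: e_add_sm)
  subgoal by (simp add: e_mult_assoc)
  subgoal by (simp add: e_unit)
  subgoal by (simp add: e_distrib)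
  subgoal using e_sm_mult by blast
  subgoal using e_grading by blast
  subgoal using decomp[OF anti] by blast
  subgoal by (blast intro: e_hom_mult)
  subgoal by (rule e_one_hom)
  subgoal by (simp add: e_d_add)
  subgoal by (simp add: e_d_sm)
  subgoal by (blast intro: e_d_hom)
  subgoal by (simp add: e_dd)
  subgoal using e_leibniz by blast
  done

end

definition Vset :: "nat \<Rightarrow> pv set" where
  "Vset n = {v \<in> Pset n. pdeg 1 v \<and> (\<forall>a i. v (a, Some i) \<noteq> 0 \<longrightarrow> (\<exists>j<i. 0 < a j))}"

lemma Vset_add: "v \<in> Vset n \<Longrightarrow> w \<in> Vset n \<Longrightarrow> (\<lambda>m. v m + w m) \<in> Vset n"
proof -
  assume v: "v \<in> Vset n" and w: "w \<in> Vset n"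
  have "(\<lambda>m. v m + w m) \<in> Pset n" using v w by (simp add: Vset_def Pset_add)
  moreover have "pdeg 1 (\<lambda>m. v m + w m)" using v w by (simp add: Vset_def pdeg_add)
  moreover have "\<exists>j<i. 0 < a j" if "v (a, Some i) + w (a, Some i) \<noteq> 0" for a i
  proof -
    have "v (a, Some i) \<noteq> 0 \<or> w (a, Some i) \<noteq> 0" using that by auto
    then show ?thesis using v w unfolding Vset_def by blast
  qed
  ultimately show ?thesis unfolding Vset_def by blast
qed

lemma Vset_smult: "v \<in> Vset n \<Longrightarrow> (\<lambda>m. c * v m) \<in> Vset n"
proof -
  assume v: "v \<in> Vset n"
  have "(\<lambda>m. c * v m) \<in> Pset n" using v by (simp add: Vset_def Pset_smult)
  moreover have "pdeg 1 (\<lambda>m. c * v m)" using v by (simp add: Vset_def pdeg_smult)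
  moreover have "\<exists>j<i. 0 < a j" if "c * v (a, Some i) \<noteq> 0" for a i
  proof -
    have "v (a, Some i) \<noteq> 0" using that by auto
    then show ?thesis using v unfolding Vset_def by blast
  qed
  ultimately show ?thesis unfolding Vset_def by blast
qed

lemma Vset_zero: "(\<lambda>m. 0) \<in> Vset n"
  by (simp add: Vset_def Pset_zero pdeg_zero)

lemma dop_pdeg1: "pdeg 1 v \<Longrightarrow> dop v = (\<lambda>m. 0)"
proof (rule ext, clarify)
  fix a s assume v: "pdeg 1 v"
  have "v (b, None) = 0" for b using pdegD[OF v, of b None] by (auto simp: sdeg_def)
  then show "dop v (a,s) = 0" by (simp add: dop_def derop_def split: option.splits)
qed

lemma pdeg0_None: "pdeg 0 p \<Longrightarrow> p (a, Some i) = 0"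
  using pdegD[of 0 p a "Some i"] by (auto simp: sdeg_def)

lemma nz_least:
  fixes b :: "nat \<Rightarrow> nat"
  assumes "b \<noteq> (\<lambda>_. 0)"
  shows "0 < b (LEAST i. 0 < b i) \<and> (\<forall>j < (LEAST i. 0 < b i). b j = 0)"
proof -
  obtain i where "0 < b i" using assms by (auto simp: fun_eq_iff)
  then have "0 < b (LEAST i. 0 < b i)" by (rule LeastI[where P="\<lambda>i. 0 < b i"])
  moreover have "\<forall>j < (LEAST i. 0 < b i). b j = 0" using not_less_Least by blast
  ultimately show ?thesis by blast
qed

lemma upd_ne0: "a(i := Suc (a i)) \<noteq> (\<lambda>_. 0::nat)"
  by (metis fun_upd_same nat.distinct(1))

lemma upd_back: "0 < b i \<Longrightarrow> (b(i := b i - 1))(i := Suc ((b(i := b i - 1)) i)) = b"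
  by (auto simp: fun_eq_iff)

definition lst :: "(nat \<Rightarrow> nat) \<Rightarrow> nat" where
  "lst b = (LEAST i. 0 < b i)"

lemma lst_prop: "b \<noteq> (\<lambda>_. 0) \<Longrightarrow> 0 < b (lst b) \<and> (\<forall>j < lst b. b j = 0)"
  unfolding lst_def by (rule nz_least)

lemma lst_eq: "0 < b i \<Longrightarrow> (\<forall>j<i. b j = 0) \<Longrightarrow> lst b = i"
  unfolding lst_def by (rule Least_equality) (auto simp: not_less)

lemma dop_at: "dop q (a, Some i) = real (Suc (a i)) * q (a(i := Suc (a i)), None)"
  by (simp add: dop_def derop_def)

lemma dop_back:
  assumes "0 < b i"
  shows "dop q (b(i := b i - 1), Some i) = real (b i) * q (b, None)"
  using assms by (simp add: dop_at)

lemma comp_zero: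
  assumes h: "\<And>a i. dop q (a, Some i) \<noteq> 0 \<Longrightarrow> \<exists>j<i. 0 < a j"
  shows "dop q = (\<lambda>m. 0)"
proof -
  have qz: "q (b, None) = 0" if b: "b \<noteq> (\<lambda>_. 0)" for b
  proof -
    have l: "0 < b (lst b)" "\<forall>j < lst b. b j = 0" using lst_prop[OF b] by auto
    have "\<not> (\<exists>j<lst b. 0 < (b(lst b := b (lst b) - 1)) j)" using l by auto
    then have "dop q (b(lst b := b (lst b) - 1), Some (lst b)) = 0" using h by blast
    then show ?thesis unfolding dop_back[where b=b and i="lst b", OF l(1)] using l(1) by simp
  qed
  show ?thesis
  proof (rule ext, clarify)
    fix a s show "dop q (a, s) = 0"
    proof (cases s)
      case None then show ?thesis by (simp add: dop_def)
    next
      case (Some i) then show ?thesis unfolding Some dop_at using qz[OF upd_ne0] by simp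
    qed
  qed
qed

lemma kernel0:
  assumes p: "pdeg 0 p" and d: "dop p = (\<lambda>m. 0)"
  shows "p = (\<lambda>m. p (\<lambda>_. 0, None) * e0 m)"
proof (rule ext, clarify)
  fix b s
  show "p (b, s) = p (\<lambda>_. 0, None) * e0 (b, s)"
  proof (cases s)
    case (Some i) then show ?thesis using pdeg0_None[OF p] by (simp add: e0_def)
  next
    case None
    show ?thesis
    proof (cases "b = (\<lambda>_. 0)")
      case True then show ?thesis using None by (simp add: e0_def)
    next
      case False
      have l: "0 < b (lst b)" using lst_prop[OF False] by auto
      have "dop p (b(lst b := b (lst b) - 1), Some (lst b)) = 0" using d by simp
      then have "p (b, None) = 0" unfolding dop_back[where b=b and i="lst b", OF l] using l by simp
      then show ?thesis using None False by (simp add: e0_def)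
    qed
  qed
qed

lemma Pset_dop: "p \<in> Pset n \<Longrightarrow> dop p \<in> Pset n"
proof -
  assume p: "p \<in> Pset n"
  have "fsupp (dop p) \<subseteq> (\<Union>i<n. (\<lambda>(b,s). (b(i := b i - 1), Some i)) ` fsupp p)"
  proof clarify
    fix a s assume "(a, s) \<in> fsupp (dop p)"
    then obtain i where s: "s = Some i" and nz: "p (a(i := Suc (a i)), None) \<noteq> 0"
      by (auto simp: fsupp_def dop_def derop_def split: option.splits)
    have "Valid n (a(i := Suc (a i)), None)" using p nz unfolding Pset_def by blast
    then have i: "i < n" by (auto simp: Valid_def dest: spec[of _ i])
    show "(a, s) \<in> (\<Union>i<n. (\<lambda>(b,s). (b(i := b i - 1), Some i)) ` fsupp p)"
      using i nz s by (auto simp: fsupp_def intro!: bexI[of _ i] image_eqI[of _ _ "(a(i := Suc (a i)), None)"])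
  qed
  then have "finite (fsupp (dop p))" by (rule finite_subset) (use p in \<open>auto simp: Pset_def\<close>)
  moreover have "Valid n m" if nzm: "dop p m \<noteq> 0" for m
  proof -
    obtain a s where m: "m = (a,s)" by (cases m)
    then obtain i where s: "s = Some i" and nz: "p (a(i := Suc (a i)), None) \<noteq> 0"
      using nzm by (auto simp: dop_def derop_def split: option.splits)
    have v: "Valid n (a(i := Suc (a i)), None)" using p nz unfolding Pset_def by blast
    then have i: "i < n" by (auto simp: Valid_def dest: spec[of _ i])
    then show ?thesis using v m s by (auto simp: Valid_def)
  qed
  ultimately show ?thesis unfolding Pset_def by blast
qed

definition antid :: "pv \<Rightarrow> pv" where
  "antid p = (\<lambda>(b,s). if s = None \<and> b \<noteq> (\<lambda>_. 0)
      then p (b(lst b := b (lst b) - 1), Some (lst b)) / real (b (lst b))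
      else 0)"

lemma antid_ap: "antid p (b, s) = (if s = None \<and> b \<noteq> (\<lambda>_. 0)
      then p (b(lst b := b (lst b) - 1), Some (lst b)) / real (b (lst b)) else 0)"
  by (simp add: antid_def)

lemma antid_pdeg: "pdeg 0 (antid p)"
  by (rule pdegI) (auto simp: antid_ap sdeg_def split: if_splits)

lemma antid_Pset: "p \<in> Pset n \<Longrightarrow> antid p \<in> Pset n"
proof -
  assume p: "p \<in> Pset n"
  have "fsupp (antid p) \<subseteq> (\<lambda>(a,s). (a(the s := Suc (a (the s))), None)) ` fsupp p"
  proof clarify
    fix b s assume "(b,s) \<in> fsupp (antid p)"
    then have h: "s = None" "b \<noteq> (\<lambda>_. 0)" "p (b(lst b := b (lst b) - 1), Some (lst b)) \<noteq> 0"
      by (auto simp: fsupp_def antid_ap split: if_splits)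
    have l: "0 < b (lst b)" using lst_prop[OF h(2)] by auto
    have "(b(lst b := b (lst b) - 1))(lst b := Suc ((b(lst b := b (lst b) - 1)) (lst b))) = b"
      by (rule upd_back[where b=b and i="lst b", OF l])
    then show "(b,s) \<in> (\<lambda>(a,s). (a(the s := Suc (a (the s))), None)) ` fsupp p"
      using h(3) h(1)
      by (intro image_eqI[of _ _ "(b(lst b := b (lst b) - 1), Some (lst b))"]) (auto simp: fsupp_def)
  qed
  then have "finite (fsupp (antid p))" by (rule finite_subset) (use p in \<open>auto simp: Pset_def\<close>)
  moreover have "Valid n m" if nzm: "antid p m \<noteq> 0" for m
  proof -
    obtain b s where m: "m = (b,s)" by (cases m)
    then have h: "s = None" "b \<noteq> (\<lambda>_. 0)" "p (b(lst b := b (lst b) - 1), Some (lst b)) \<noteq> 0"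
      using nzm by (auto simp: antid_ap split: if_splits)
    have v: "Valid n (b(lst b := b (lst b) - 1), Some (lst b))" using p h(3) unfolding Pset_def by blast
    then have "lst b < n" by (simp add: Valid_def)
    then show ?thesis using v m h(1) by (auto simp: Valid_def)
  qed
  ultimately show ?thesis unfolding Pset_def by blast
qed

lemma antid_dop:
  assumes "\<forall>j<i. a j = 0"
  shows "dop (antid p) (a, Some i) = p (a, Some i)"
proof -
  let ?b = "a(i := Suc (a i))"
  have ne: "?b \<noteq> (\<lambda>_. 0)" by (rule upd_ne0)
  have L: "lst ?b = i" by (rule lst_eq) (use assms in auto)
  have e: "?b(i := ?b i - 1) = a" by (auto simp: fun_eq_iff)
  have "dop (antid p) (a, Some i) = real (Suc (a i)) * antid p (?b, None)"
    by (rule dop_at)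
  also have "antid p (?b, None) = p (a, Some i) / real (Suc (a i))"
    unfolding antid_ap using ne by (simp only: L e if_True simp_thms) simp
  finally show ?thesis by simp
qed

lemma split1:
  assumes p: "p \<in> Pset n" "pdeg 1 p"
  shows "(\<lambda>m. p m - dop (antid p) m) \<in> Vset n"
proof -
  have P: "(\<lambda>m. p m - dop (antid p) m) \<in> Pset n"
  proof -
    have "(\<lambda>m. p m + (-1) * dop (antid p) m) \<in> Pset n"
      by (intro Pset_add Pset_smult Pset_dop antid_Pset p)
    then show ?thesis by simp
  qed
  have D: "pdeg 1 (\<lambda>m. p m - dop (antid p) m)"
  proof -
    have "pdeg 1 (dop (antid p))" using pdeg_dop[OF antid_pdeg] by simp
    then have "pdeg 1 (\<lambda>m. p m + (-1) * dop (antid p) m)" by (intro pdeg_add pdeg_smult p)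
    then show ?thesis by simp
  qed
  have "\<exists>j<i. 0 < a j" if "p (a, Some i) - dop (antid p) (a, Some i) \<noteq> 0" for a i
  proof (rule ccontr)
    assume "\<not> (\<exists>j<i. 0 < a j)"
    then have "\<forall>j<i. a j = 0" by auto
    then show False using that antid_dop by simp
  qed
  then show ?thesis using P D unfolding Vset_def by blast
qed


lemma cohom_decomp:
  assumes p: "p \<in> Pset n" "pdeg k p" "dop p = (\<lambda>m. 0)"
  shows "\<exists>F c v. F \<in> Pset n \<and> pdeg (k - 1) F \<and> v \<in> Vset n \<and> pdeg k (\<lambda>m. c * e0 m + v m) \<and>
     p = (\<lambda>m. dop F m + (c * e0 m + v m))"
proof -
  have d0: "dop (\<lambda>m. 0) = (\<lambda>m. 0)" using lin_zero[OF lin_dop] .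
  consider "k = 0" | "k = 1" | "k \<noteq> 0 \<and> k \<noteq> 1" by blast
  then show ?thesis
  proof cases
    case 1
    have pk: "pdeg 0 p" using p 1 by simp
    have "p = (\<lambda>m. p (\<lambda>_. 0, None) * e0 m)" by (rule kernel0[OF pk p(3)])
    then have "p = (\<lambda>m. dop (\<lambda>m. 0) m + (p (\<lambda>_. 0, None) * e0 m + 0))" unfolding d0 by simp
    moreover have "pdeg k (\<lambda>m. p (\<lambda>_. 0, None) * e0 m + 0)" using pdeg_smult[OF pdeg_e0] 1 by simp
    ultimately show ?thesis using Pset_zero pdeg_zero Vset_zero by blast
  next
    case 2
    have pk: "pdeg 1 p" using p 2 by simp
    let ?v = "\<lambda>m. p m - dop (antid p) m"
    have v: "?v \<in> Vset n" by (rule split1[OF p(1) pk])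
    have "pdeg k (\<lambda>m. 0 * e0 m + ?v m)" using v 2 by (simp add: Vset_def)
    moreover have "p = (\<lambda>m. dop (antid p) m + (0 * e0 m + ?v m))" by simp
    moreover have "pdeg (k - 1) (antid p)" using antid_pdeg 2 by simp
    ultimately show ?thesis using antid_Pset[OF p(1)] v by blast
  next
    case 3
    have "p = (\<lambda>m. 0)" using pdeg_range[OF p(2)] 3 by blast
    then have "p = (\<lambda>m. dop (\<lambda>m. 0) m + (0 * e0 m + 0))" unfolding d0 by simp
    moreover have "pdeg k (\<lambda>m. 0 * e0 m + 0)" by (simp add: pdeg_zero)
    ultimately show ?thesis using Pset_zero pdeg_zero Vset_zero by blast
  qed
qed

lemma word_of_e0: "word_of n (\<lambda>_. 0, None) = []"
  by (simp add: word_of_def xw_zero tl_of_def)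

lemma Valid_e0: "Valid n (\<lambda>_. 0, None)" by (simp add: Valid_def)

lemma Sn_e0: "Sn n e0 = fa_one"
  unfolding e0_em Sn_em[OF Valid_e0] word_of_e0 fa_one_dl ..

lemma Vset_Pset: "v \<in> Vset n \<Longrightarrow> v \<in> Pset n" by (simp add: Vset_def)
lemma Vset_pdeg: "v \<in> Vset n \<Longrightarrow> pdeg 1 v" by (simp add: Vset_def)

lemma Bform_Pset: "v \<in> Vset n \<Longrightarrow> (\<lambda>m. c * e0 m + v m) \<in> Pset n"
  by (intro Pset_add Pset_smult Pset_e0 Vset_Pset)

lemma pproj_Bform:
  assumes v: "v \<in> Vset n"
  shows "pproj k (\<lambda>m. c * e0 m + v m) = (\<lambda>m. (if k = 0 then c else 0) * e0 m + (if k = 1 then v m else 0))"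
proof -
  have "pproj k (\<lambda>m. c * e0 m + v m) = (\<lambda>m. pproj k (\<lambda>m. c * e0 m) m + pproj k v m)"
    by (auto simp: pproj_def fun_eq_iff)
  also have "\<dots> = (\<lambda>m. (if k = 0 then c else 0) * e0 m + (if k = 1 then v m else 0))"
    using pproj_of_pdeg[OF pdeg_smult[OF pdeg_e0, of c], of k] pproj_of_pdeg[OF Vset_pdeg[OF v], of k]
    by (auto simp: fun_eq_iff)
  finally show ?thesis .
qed

definition Bcar :: "nat \<Rightarrow> (nat \<Rightarrow> nat \<Rightarrow> real) \<Rightarrow> (gen list \<Rightarrow> real) set set" where
  "Bcar n th = {x \<in> dg_carrier (A_theta n th). \<exists>c v. v \<in> Vset n \<and> NN th x = (\<lambda>m. c * e0 m + v m)}"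

definition Bdga :: "nat \<Rightarrow> (nat \<Rightarrow> nat \<Rightarrow> real) \<Rightarrow> (gen list \<Rightarrow> real) set dga" where
  "Bdga n th = (A_theta n th)\<lparr>dg_carrier := Bcar n th, dg_hom := (\<lambda>k. dg_hom (A_theta n th) k \<inter> Bcar n th)\<rparr>"

definition gmap :: "nat \<Rightarrow> (nat \<Rightarrow> nat \<Rightarrow> real) \<Rightarrow> (nat \<Rightarrow> nat \<Rightarrow> real) \<Rightarrow> (gen list \<Rightarrow> real) set \<Rightarrow> (gen list \<Rightarrow> real) set" where
  "gmap n th' th x = A_cls n th' (Sn n (NN th x))"

lemma B_fields:
  "dg_carrier (Bdga n th) = Bcar n th"
  "dg_hom (Bdga n th) k = dg_hom (A_theta n th) k \<inter> Bcar n th"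
  "dg_add (Bdga n th) = dg_add (A_theta n th)"
  "dg_zero (Bdga n th) = dg_zero (A_theta n th)"
  "dg_smult (Bdga n th) = dg_smult (A_theta n th)"
  "dg_mult (Bdga n th) = dg_mult (A_theta n th)"
  "dg_one (Bdga n th) = dg_one (A_theta n th)"
  "dg_diff (Bdga n th) = dg_diff (A_theta n th)"
  by (simp_all add: Bdga_def)

lemma B_sum: "dg_sum (Bdga n th) c = dg_sum (A_theta n th) c"
  by (simp add: dg_sum_def B_fields)

context
  fixes n :: nat and th :: "nat \<Rightarrow> nat \<Rightarrow> real"
  assumes anti: "antisymmetric_matrix n th"
begin

lemmas opsB = add_C[OF anti] smult_C[OF anti] mult_C[OF anti] zero_C[OF anti] one_C[OF anti] diff_C[OF anti]

lemma Bsub: "x \<in> Bcar n th \<Longrightarrow> x \<in> dg_carrier (A_theta n th)"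
  by (simp add: Bcar_def)

lemma BI: "x \<in> dg_carrier (A_theta n th) \<Longrightarrow> v \<in> Vset n \<Longrightarrow> NN th x = (\<lambda>m. c * e0 m + v m) \<Longrightarrow> x \<in> Bcar n th"
  unfolding Bcar_def by blast

lemma RR_B:
  assumes x: "x \<in> dg_carrier (A_theta n th)" and v: "v \<in> Vset n" and nx: "NN th x = (\<lambda>m. c * e0 m + v m)"
    and q: "pdeg 1 q"
  shows "RR th x q = (\<lambda>m. c * q m)"
proof -
  let ?f = "Sn n (NN th x)"
  have fF: "?f \<in> FA n" by (simp add: FA_Sn NN_Pset[OF anti x])
  have "Lmap th ?f = Lmap th (A_rep x)" using Lmap_Sn[OF NN_Pset[OF anti x]] by (simp add: NN_def)
  then have "RR th x = rho th ?f" unfolding RR_def using rho_eq[OF anti repFA[OF anti x] fF] by simp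
  moreover have "?f = fa_add (fa_smult c fa_one) (Sn n v)"
    unfolding nx Sn_add Sn_smult Sn_e0 ..
  moreover have "rho th (Sn n v) q = (\<lambda>m. 0)"
  proof -
    have "pdeg (1 + 1) (rho th (Sn n v) q)" by (rule pdeg_rho[OF homog_Sn[OF Vset_pdeg[OF v]] q])
    then show ?thesis using pdeg_range by simp
  qed
  ultimately show ?thesis
    using FA_Sn[OF Vset_Pset[OF v]]
    by (simp add: rho_add rho_smult rho_one FA_fin FA_smult FA_one)
qed

lemma B_zero: "dg_zero (A_theta n th) \<in> Bcar n th"
  by (rule BI[of _ "\<lambda>m. 0" 0]) (simp_all add: opsB Vset_zero)

lemma B_one: "dg_one (A_theta n th) \<in> Bcar n th"
  by (rule BI[of _ "\<lambda>m. 0" 1]) (simp_all add: opsB Vset_zero)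

lemma B_elim: "x \<in> Bcar n th \<Longrightarrow> \<exists>c v. v \<in> Vset n \<and> NN th x = (\<lambda>m. c * e0 m + v m)"
  by (simp add: Bcar_def)

lemma B_add: "x \<in> Bcar n th \<Longrightarrow> y \<in> Bcar n th \<Longrightarrow> dg_add (A_theta n th) x y \<in> Bcar n th"
proof -
  assume x: "x \<in> Bcar n th" and y: "y \<in> Bcar n th"
  obtain c v where cv: "v \<in> Vset n" "NN th x = (\<lambda>m. c * e0 m + v m)" using B_elim[OF x] by blast
  obtain c' v' where cv': "v' \<in> Vset n" "NN th y = (\<lambda>m. c' * e0 m + v' m)" using B_elim[OF y] by blast
  show ?thesis
    by (rule BI[of _ "\<lambda>m. v m + v' m" "c + c'"])
       (use x y cv cv' in \<open>simp_all add: opsB Bsub Vset_add fun_eq_iff algebra_simps\<close>)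
qed

lemma B_smult: "x \<in> Bcar n th \<Longrightarrow> dg_smult (A_theta n th) a x \<in> Bcar n th"
proof -
  assume x: "x \<in> Bcar n th"
  obtain c v where cv: "v \<in> Vset n" "NN th x = (\<lambda>m. c * e0 m + v m)" using B_elim[OF x] by blast
  show ?thesis
    by (rule BI[of _ "\<lambda>m. a * v m" "a * c"])
       (use x cv in \<open>simp_all add: opsB Bsub Vset_smult fun_eq_iff algebra_simps\<close>)
qed

lemma B_mult_NN:
  assumes x: "x \<in> Bcar n th" and y: "y \<in> Bcar n th"
    and cv: "v \<in> Vset n" "NN th x = (\<lambda>m. c * e0 m + v m)"
    and cv': "v' \<in> Vset n" "NN th y = (\<lambda>m. c' * e0 m + v' m)"
  shows "NN th (dg_mult (A_theta n th) x y) = (\<lambda>m. (c * c') * e0 m + (c' * v m + c * v' m))"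
proof -
  have xc: "x \<in> dg_carrier (A_theta n th)" using x by (rule Bsub)
  have yc: "y \<in> dg_carrier (A_theta n th)" using y by (rule Bsub)
  have "NN th (dg_mult (A_theta n th) x y) = RR th x (\<lambda>m. c' * e0 m + v' m)"
    using opsB xc yc cv' by simp
  also have "\<dots> = (\<lambda>m. c' * RR th x e0 m + RR th x v' m)"
    unfolding lin_add[OF lin_RR[OF anti]] lin_smult[OF lin_RR[OF anti]] ..
  also have "\<dots> = (\<lambda>m. (c * c') * e0 m + (c' * v m + c * v' m))"
    unfolding RR_e0[OF anti xc] RR_B[OF xc cv Vset_pdeg[OF cv'(1)]] cv(2)
    by (simp add: fun_eq_iff algebra_simps)
  finally show ?thesis .
qed

lemma B_mult: "x \<in> Bcar n th \<Longrightarrow> y \<in> Bcar n th \<Longrightarrow> dg_mult (A_theta n th) x y \<in> Bcar n th"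
proof -
  assume x: "x \<in> Bcar n th" and y: "y \<in> Bcar n th"
  obtain c v where cv: "v \<in> Vset n" "NN th x = (\<lambda>m. c * e0 m + v m)" using B_elim[OF x] by blast
  obtain c' v' where cv': "v' \<in> Vset n" "NN th y = (\<lambda>m. c' * e0 m + v' m)" using B_elim[OF y] by blast
  show ?thesis
    by (rule BI[OF _ _ B_mult_NN[OF x y cv cv']])
       (use x y cv cv' in \<open>simp_all add: opsB Bsub Vset_add Vset_smult\<close>)
qed

lemma B_diff_NN: "x \<in> Bcar n th \<Longrightarrow> NN th (dg_diff (A_theta n th) x) = (\<lambda>m. 0)"
proof -
  assume x: "x \<in> Bcar n th"
  obtain c v where cv: "v \<in> Vset n" "NN th x = (\<lambda>m. c * e0 m + v m)" using B_elim[OF x] by blast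
  have "NN th (dg_diff (A_theta n th) x) = dop (\<lambda>m. c * e0 m + v m)" using opsB Bsub[OF x] cv by simp
  also have "\<dots> = (\<lambda>m. 0)"
    unfolding lin_add[OF lin_dop] lin_smult[OF lin_dop] dop_e0 dop_pdeg1[OF Vset_pdeg[OF cv(1)]] by simp
  finally show ?thesis .
qed

lemma B_diff: "x \<in> Bcar n th \<Longrightarrow> dg_diff (A_theta n th) x = dg_zero (A_theta n th)"
proof -
  assume x: "x \<in> Bcar n th"
  show ?thesis
  proof (rule inj[OF anti])
    show "dg_diff (A_theta n th) x \<in> dg_carrier (A_theta n th)" using opsB Bsub[OF x] by simp
    show "dg_zero (A_theta n th) \<in> dg_carrier (A_theta n th)" using opsB by simp
    show "NN th (dg_diff (A_theta n th) x) = NN th (dg_zero (A_theta n th))"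
      unfolding B_diff_NN[OF x] using opsB by simp
  qed
qed

end

context
  fixes n :: nat and th :: "nat \<Rightarrow> nat \<Rightarrow> real"
  assumes anti: "antisymmetric_matrix n th"
begin

lemmas opsC = add_C[OF anti] smult_C[OF anti] mult_C[OF anti] zero_C[OF anti] one_C[OF anti] diff_C[OF anti]

lemma B_decomp:
  assumes x: "x \<in> Bcar n th"
  shows "\<exists>!c. (\<forall>k. c k \<in> dg_hom (A_theta n th) k \<inter> Bcar n th) \<and> finite {k. c k \<noteq> dg_zero (A_theta n th)} \<and>
              x = dg_sum (A_theta n th) c"
proof -
  have xc: "x \<in> dg_carrier (A_theta n th)" using x by (rule Bsub[OF anti])
  obtain c0 v where cv: "v \<in> Vset n" "NN th x = (\<lambda>m. c0 * e0 m + v m)" using B_elim[OF anti x] by blast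
  obtain c where c: "(\<forall>k. c k \<in> dg_hom (A_theta n th) k) \<and> finite {k. c k \<noteq> dg_zero (A_theta n th)} \<and>
              x = dg_sum (A_theta n th) c"
    and u: "\<And>c'. (\<forall>k. c' k \<in> dg_hom (A_theta n th) k) \<and> finite {k. c' k \<noteq> dg_zero (A_theta n th)} \<and>
              x = dg_sum (A_theta n th) c' \<Longrightarrow> c' = c"
    using decomp[OF anti xc] by metis
  have cB: "c k \<in> Bcar n th" for k
  proof -
    have ck: "c k \<in> dg_carrier (A_theta n th)" using c hom_iff[OF anti] by blast
    have vk: "(\<lambda>m. if k = 1 then v m else 0) \<in> Vset n" using cv(1) Vset_zero by (cases "k = 1") simp_all
    have "NN th (c k) = pproj k (NN th x)" by (rule decomp_NN[OF anti c])
    also have "\<dots> = (\<lambda>m. (if k = 0 then c0 else 0) * e0 m + (if k = 1 then v m else 0))"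
      unfolding cv(2) by (rule pproj_Bform[OF cv(1)])
    finally show ?thesis by (rule BI[OF anti ck vk])
  qed
  show ?thesis
  proof (rule ex1I[of _ c])
    show "(\<forall>k. c k \<in> dg_hom (A_theta n th) k \<inter> Bcar n th) \<and> finite {k. c k \<noteq> dg_zero (A_theta n th)} \<and>
              x = dg_sum (A_theta n th) c" using c cB by blast
  next
    fix c' assume "(\<forall>k. c' k \<in> dg_hom (A_theta n th) k \<inter> Bcar n th) \<and> finite {k. c' k \<noteq> dg_zero (A_theta n th)} \<and>
              x = dg_sum (A_theta n th) c'"
    then show "c' = c" using u by blast
  qed
qed

lemma dga_B: "dga (Bdga n th)"
  unfolding dga_def Let_def B_fields B_sum
  apply (intro conjI)
  subgoal by (rule B_zero[OF anti])
  subgoal by (rule B_one[OF anti])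
  subgoal using B_add[OF anti] B_mult[OF anti] by blast
  subgoal using B_smult[OF anti] by blast
  subgoal using B_diff[OF anti] B_zero[OF anti] by simp
  subgoal using e_add_assoc[OF anti] Bsub[OF anti] by simp
  subgoal using e_add_comm[OF anti] Bsub[OF anti] by blast
  subgoal using e_zero_add[OF anti] Bsub[OF anti] by simp
  subgoal using e_inv[OF anti] Bsub[OF anti] B_smult[OF anti] by blast
  subgoal using e_sm_sm[OF anti] Bsub[OF anti] by simp
  subgoal using e_sm_one[OF anti] Bsub[OF anti] by simp
  subgoal using e_sm_add[OF anti] Bsub[OF anti] by simp
  subgoal using e_add_sm[OF anti] Bsub[OF anti] by simp
  subgoal using e_mult_assoc[OF anti] Bsub[OF anti] by simp
  subgoal using e_unit[OF anti] Bsub[OF anti] by simp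
  subgoal using e_distrib[OF anti] Bsub[OF anti] by simp
  subgoal using e_sm_mult[OF anti] Bsub[OF anti] by blast
  subgoal using e_grading[OF anti] B_zero[OF anti] B_add[OF anti] B_smult[OF anti] by blast
  subgoal using B_decomp by blast
  subgoal using e_hom_mult[OF anti] B_mult[OF anti] by blast
  subgoal using e_one_hom[OF anti] B_one[OF anti] by blast
  subgoal using e_d_add[OF anti] Bsub[OF anti] by simp
  subgoal using e_d_sm[OF anti] Bsub[OF anti] by simp
  subgoal
  proof (intro allI ballI)
    fix k x assume x: "x \<in> dg_hom (A_theta n th) k \<inter> Bcar n th"
    then have "dg_diff (A_theta n th) x \<in> dg_hom (A_theta n th) (k + 1)" using e_d_hom[OF anti, of x k] by blast
    moreover have "dg_diff (A_theta n th) x \<in> Bcar n th" using B_diff[OF anti, of x] B_zero[OF anti] x by simp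
    ultimately show "dg_diff (A_theta n th) x \<in> dg_hom (A_theta n th) (k + 1) \<inter> Bcar n th" by blast
  qed
  subgoal using e_dd[OF anti] Bsub[OF anti] by simp
  subgoal using e_leibniz[OF anti] Bsub[OF anti] by blast
  done

end


lemma pproj0_dop: "pproj 0 (dop q) = (\<lambda>m. 0)"
  by (auto simp: pproj_def dop_def sdeg_def fun_eq_iff split: option.splits)

context
  fixes n :: nat and th th' :: "nat \<Rightarrow> nat \<Rightarrow> real"
  assumes anti: "antisymmetric_matrix n th" and anti': "antisymmetric_matrix n th'"
begin

lemmas opsT = add_C[OF anti] smult_C[OF anti] mult_C[OF anti] zero_C[OF anti] one_C[OF anti] diff_C[OF anti]
lemmas opsT' = add_C[OF anti'] smult_C[OF anti'] mult_C[OF anti'] zero_C[OF anti'] one_C[OF anti'] diff_C[OF anti']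

lemma gC: "x \<in> Bcar n th \<Longrightarrow> gmap n th' th x \<in> dg_carrier (A_theta n th') \<and> NN th' (gmap n th' th x) = NN th x"
proof -
  assume x: "x \<in> Bcar n th"
  have P: "NN th x \<in> Pset n" using NN_Pset[OF anti Bsub[OF anti x]] .
  show ?thesis unfolding gmap_def
    using clsC[OF anti' FA_Sn[OF P]] NN_cls'[OF anti' FA_Sn[OF P]] Lmap_Sn[OF P] by simp
qed

lemma gB: "x \<in> Bcar n th \<Longrightarrow> gmap n th' th x \<in> Bcar n th'"
proof -
  assume x: "x \<in> Bcar n th"
  obtain c v where cv: "v \<in> Vset n" "NN th x = (\<lambda>m. c * e0 m + v m)" using B_elim[OF anti x] by blast
  show ?thesis by (rule BI[OF anti', of _ v c]) (use gC[OF x] cv in auto)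
qed

lemma gN: "x \<in> Bcar n th \<Longrightarrow> NN th' (gmap n th' th x) = NN th x"
  using gC by blast
lemma gCC: "x \<in> Bcar n th \<Longrightarrow> gmap n th' th x \<in> dg_carrier (A_theta n th')"
  using gC by blast

lemma morph_add: "x \<in> Bcar n th \<Longrightarrow> y \<in> Bcar n th \<Longrightarrow>
  gmap n th' th (dg_add (A_theta n th) x y) = dg_add (A_theta n th') (gmap n th' th x) (gmap n th' th y)"
proof -
  assume x: "x \<in> Bcar n th" and y: "y \<in> Bcar n th"
  have xc: "x \<in> dg_carrier (A_theta n th)" and yc: "y \<in> dg_carrier (A_theta n th)" using x y Bsub[OF anti] by auto
  have gxy: "gmap n th' th x \<in> dg_carrier (A_theta n th')" "gmap n th' th y \<in> dg_carrier (A_theta n th')"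
    using gCC x y by auto
  show ?thesis
  proof (rule inj[OF anti'])
    show "gmap n th' th (dg_add (A_theta n th) x y) \<in> dg_carrier (A_theta n th')" by (rule gCC[OF B_add[OF anti x y]])
    show "dg_add (A_theta n th') (gmap n th' th x) (gmap n th' th y) \<in> dg_carrier (A_theta n th')"
      using add_C[OF anti' gxy] by blast
    have "NN th' (gmap n th' th (dg_add (A_theta n th) x y)) = NN th (dg_add (A_theta n th) x y)"
      by (rule gN[OF B_add[OF anti x y]])
    also have "\<dots> = (\<lambda>m. NN th x m + NN th y m)" using add_C[OF anti xc yc] by blast
    also have "\<dots> = (\<lambda>m. NN th' (gmap n th' th x) m + NN th' (gmap n th' th y) m)" using gN x y by simp
    also have "\<dots> = NN th' (dg_add (A_theta n th') (gmap n th' th x) (gmap n th' th y))"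
      using add_C[OF anti' gxy] by simp
    finally show "NN th' (gmap n th' th (dg_add (A_theta n th) x y)) = NN th' (dg_add (A_theta n th') (gmap n th' th x) (gmap n th' th y))" .
  qed
qed

lemma morph_smult: "x \<in> Bcar n th \<Longrightarrow>
  gmap n th' th (dg_smult (A_theta n th) a x) = dg_smult (A_theta n th') a (gmap n th' th x)"
proof -
  assume x: "x \<in> Bcar n th"
  have xc: "x \<in> dg_carrier (A_theta n th)" using x Bsub[OF anti] by auto
  have gx: "gmap n th' th x \<in> dg_carrier (A_theta n th')" using gCC x by auto
  show ?thesis
  proof (rule inj[OF anti'])
    show "gmap n th' th (dg_smult (A_theta n th) a x) \<in> dg_carrier (A_theta n th')" by (rule gCC[OF B_smult[OF anti x]])
    show "dg_smult (A_theta n th') a (gmap n th' th x) \<in> dg_carrier (A_theta n th')"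
      using smult_C[OF anti' gx] by blast
    have "NN th' (gmap n th' th (dg_smult (A_theta n th) a x)) = NN th (dg_smult (A_theta n th) a x)"
      by (rule gN[OF B_smult[OF anti x]])
    also have "\<dots> = (\<lambda>m. a * NN th x m)" using smult_C[OF anti xc] by blast
    also have "\<dots> = (\<lambda>m. a * NN th' (gmap n th' th x) m)" using gN x by simp
    also have "\<dots> = NN th' (dg_smult (A_theta n th') a (gmap n th' th x))"
      using smult_C[OF anti' gx] by simp
    finally show "NN th' (gmap n th' th (dg_smult (A_theta n th) a x)) = NN th' (dg_smult (A_theta n th') a (gmap n th' th x))" .
  qed
qed

lemma morph_mult: "x \<in> Bcar n th \<Longrightarrow> y \<in> Bcar n th \<Longrightarrow>
  gmap n th' th (dg_mult (A_theta n th) x y) = dg_mult (A_theta n th') (gmap n th' th x) (gmap n th' th y)"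
proof -
  assume x: "x \<in> Bcar n th" and y: "y \<in> Bcar n th"
  obtain c v where cv: "v \<in> Vset n" "NN th x = (\<lambda>m. c * e0 m + v m)" using B_elim[OF anti x] by blast
  obtain c' v' where cv': "v' \<in> Vset n" "NN th y = (\<lambda>m. c' * e0 m + v' m)" using B_elim[OF anti y] by blast
  have gx: "NN th' (gmap n th' th x) = (\<lambda>m. c * e0 m + v m)" using gN[OF x] cv by simp
  have gy: "NN th' (gmap n th' th y) = (\<lambda>m. c' * e0 m + v' m)" using gN[OF y] cv' by simp
  have gxy: "gmap n th' th x \<in> dg_carrier (A_theta n th')" "gmap n th' th y \<in> dg_carrier (A_theta n th')"
    using gCC x y by auto
  show ?thesis
  proof (rule inj[OF anti'])
    show "gmap n th' th (dg_mult (A_theta n th) x y) \<in> dg_carrier (A_theta n th')"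
      by (rule gCC[OF B_mult[OF anti x y]])
    show "dg_mult (A_theta n th') (gmap n th' th x) (gmap n th' th y) \<in> dg_carrier (A_theta n th')"
      using mult_C[OF anti' gxy] by blast
    have "NN th' (gmap n th' th (dg_mult (A_theta n th) x y)) = NN th (dg_mult (A_theta n th) x y)"
      by (rule gN[OF B_mult[OF anti x y]])
    also have "\<dots> = (\<lambda>m. (c * c') * e0 m + (c' * v m + c * v' m))" by (rule B_mult_NN[OF anti x y cv cv'])
    also have "\<dots> = NN th' (dg_mult (A_theta n th') (gmap n th' th x) (gmap n th' th y))"
      by (rule B_mult_NN[OF anti' gB[OF x] gB[OF y] cv(1) gx cv'(1) gy, symmetric])
    finally show "NN th' (gmap n th' th (dg_mult (A_theta n th) x y)) =
          NN th' (dg_mult (A_theta n th') (gmap n th' th x) (gmap n th' th y))" .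
  qed
qed

lemma morph_one: "gmap n th' th (dg_one (A_theta n th)) = dg_one (A_theta n th')"
proof (rule inj[OF anti'])
  show "gmap n th' th (dg_one (A_theta n th)) \<in> dg_carrier (A_theta n th')" by (rule gCC[OF B_one[OF anti]])
  show "dg_one (A_theta n th') \<in> dg_carrier (A_theta n th')" using one_C[OF anti'] by blast
  have "NN th' (gmap n th' th (dg_one (A_theta n th))) = NN th (dg_one (A_theta n th))" by (rule gN[OF B_one[OF anti]])
  also have "\<dots> = e0" using one_C[OF anti] by blast
  also have "\<dots> = NN th' (dg_one (A_theta n th'))" using one_C[OF anti'] by simp
  finally show "NN th' (gmap n th' th (dg_one (A_theta n th))) = NN th' (dg_one (A_theta n th'))" .
qed

lemma morph_hom: "x \<in> dg_hom (A_theta n th) k \<inter> Bcar n th \<Longrightarrow> gmap n th' th x \<in> dg_hom (A_theta n th') k"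
proof -
  assume x: "x \<in> dg_hom (A_theta n th) k \<inter> Bcar n th"
  then have p: "pdeg k (NN th x)" using hom_iff[OF anti] by blast
  have xB: "x \<in> Bcar n th" using x by blast
  show ?thesis unfolding hom_iff[OF anti'] using gCC[OF xB] gN[OF xB] p by simp
qed

lemma morph_diff: "x \<in> Bcar n th \<Longrightarrow>
  gmap n th' th (dg_diff (A_theta n th) x) = dg_diff (A_theta n th') (gmap n th' th x)"
proof -
  assume x: "x \<in> Bcar n th"
  have xc: "x \<in> dg_carrier (A_theta n th)" using x Bsub[OF anti] by auto
  have gx: "gmap n th' th x \<in> dg_carrier (A_theta n th')" using gCC x by auto
  have dx: "dg_diff (A_theta n th) x = dg_zero (A_theta n th)" by (rule B_diff[OF anti x])
  show ?thesis
  proof (rule inj[OF anti'])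
    show "gmap n th' th (dg_diff (A_theta n th) x) \<in> dg_carrier (A_theta n th')"
      unfolding dx by (rule gCC[OF B_zero[OF anti]])
    show "dg_diff (A_theta n th') (gmap n th' th x) \<in> dg_carrier (A_theta n th')"
      using diff_C[OF anti' gx] by blast
    have "NN th' (gmap n th' th (dg_diff (A_theta n th) x)) = NN th (dg_diff (A_theta n th) x)"
      unfolding dx by (rule gN[OF B_zero[OF anti]])
    also have "\<dots> = dop (NN th x)" using diff_C[OF anti xc] by blast
    also have "\<dots> = dop (NN th' (gmap n th' th x))" using gN[OF x] by simp
    also have "\<dots> = NN th' (dg_diff (A_theta n th') (gmap n th' th x))" using diff_C[OF anti' gx] by simp
    finally show "NN th' (gmap n th' th (dg_diff (A_theta n th) x)) = NN th' (dg_diff (A_theta n th') (gmap n th' th x))" .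
  qed
qed

lemma morph: "dga_morphism (Bdga n th) (A_theta n th') (gmap n th' th)"
  unfolding dga_morphism_def B_fields
  using dga_B[OF anti] dga_A[OF anti'] gCC morph_add morph_smult morph_mult morph_one morph_hom morph_diff
  by blast

lemma surj_part:
  assumes z': "z' \<in> dg_hom (A_theta n th') k" and dz': "dg_diff (A_theta n th') z' = dg_zero (A_theta n th')"
  shows "\<exists>z\<in>dg_hom (A_theta n th) k \<inter> Bcar n th. dg_diff (A_theta n th) z = dg_zero (A_theta n th) \<and>
           (\<exists>b\<in>dg_hom (A_theta n th') (k - 1). dg_add (A_theta n th') (gmap n th' th z) (dg_diff (A_theta n th') b) = z')"
proof -
  have z'C: "z' \<in> dg_carrier (A_theta n th')" and pk: "pdeg k (NN th' z')" using z' hom_iff[OF anti'] by auto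
  let ?p = "NN th' z'"
  have pP: "?p \<in> Pset n" by (rule NN_Pset[OF anti' z'C])
  have "dop ?p = NN th' (dg_diff (A_theta n th') z')" using diff_C[OF anti' z'C] by simp
  also have "\<dots> = (\<lambda>m. 0)" unfolding dz' using zero_C[OF anti'] by simp
  finally have dp: "dop ?p = (\<lambda>m. 0)" .
  obtain F c v where Fcv: "F \<in> Pset n" "pdeg (k - 1) F" "v \<in> Vset n" "pdeg k (\<lambda>m. c * e0 m + v m)"
     "?p = (\<lambda>m. dop F m + (c * e0 m + v m))"
    using cohom_decomp[OF pP pk dp] by blast
  let ?q = "\<lambda>m. c * e0 m + v m"
  let ?z = "A_cls n th (Sn n ?q)"
  have qP: "?q \<in> Pset n" by (rule Bform_Pset[OF Fcv(3)])
  have zC: "?z \<in> dg_carrier (A_theta n th)" by (rule clsC[OF anti FA_Sn[OF qP]])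
  have zN: "NN th ?z = ?q" using NN_cls'[OF anti FA_Sn[OF qP]] Lmap_Sn[OF qP] by simp
  have zB: "?z \<in> Bcar n th" by (rule BI[OF anti zC Fcv(3) zN])
  have zH: "?z \<in> dg_hom (A_theta n th) k" using zC zN Fcv(4) by (simp add: hom_iff[OF anti])
  have dz: "dg_diff (A_theta n th) ?z = dg_zero (A_theta n th)" by (rule B_diff[OF anti zB])
  let ?b = "A_cls n th' (Sn n F)"
  have bC: "?b \<in> dg_carrier (A_theta n th')" by (rule clsC[OF anti' FA_Sn[OF Fcv(1)]])
  have bN: "NN th' ?b = F" using NN_cls'[OF anti' FA_Sn[OF Fcv(1)]] Lmap_Sn[OF Fcv(1)] by simp
  have bH: "?b \<in> dg_hom (A_theta n th') (k - 1)" using bC bN Fcv(2) by (simp add: hom_iff[OF anti'])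
  have eq: "dg_add (A_theta n th') (gmap n th' th ?z) (dg_diff (A_theta n th') ?b) = z'"
  proof (rule inj[OF anti'])
    have g1: "gmap n th' th ?z \<in> dg_carrier (A_theta n th')" by (rule gCC[OF zB])
    have g2: "dg_diff (A_theta n th') ?b \<in> dg_carrier (A_theta n th')" using diff_C[OF anti' bC] by blast
    show "dg_add (A_theta n th') (gmap n th' th ?z) (dg_diff (A_theta n th') ?b) \<in> dg_carrier (A_theta n th')"
      using add_C[OF anti' g1 g2] by blast
    show "z' \<in> dg_carrier (A_theta n th')" by (rule z'C)
    have "NN th' (dg_add (A_theta n th') (gmap n th' th ?z) (dg_diff (A_theta n th') ?b))
        = (\<lambda>m. NN th' (gmap n th' th ?z) m + NN th' (dg_diff (A_theta n th') ?b) m)"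
      using add_C[OF anti' g1 g2] by blast
    also have "\<dots> = (\<lambda>m. ?q m + dop F m)"
      unfolding gN[OF zB] zN using diff_C[OF anti' bC] bN by simp
    also have "\<dots> = NN th' z'" unfolding Fcv(5) by (simp add: fun_eq_iff)
    finally show "NN th' (dg_add (A_theta n th') (gmap n th' th ?z) (dg_diff (A_theta n th') ?b)) = NN th' z'" .
  qed
  show ?thesis using zH zB dz bH eq by blast
qed

lemma inj_part:
  assumes z: "z \<in> dg_hom (A_theta n th) k \<inter> Bcar n th"
    and b: "b \<in> dg_hom (A_theta n th') (k - 1)" and gz: "gmap n th' th z = dg_diff (A_theta n th') b"
  shows "\<exists>a\<in>dg_hom (A_theta n th) (k - 1) \<inter> Bcar n th. z = dg_diff (A_theta n th) a"
proof -
  have zB: "z \<in> Bcar n th" using z by blast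
  have zC: "z \<in> dg_carrier (A_theta n th)" by (rule Bsub[OF anti zB])
  have bC: "b \<in> dg_carrier (A_theta n th')" using b hom_iff[OF anti'] by blast
  obtain c v where cv: "v \<in> Vset n" "NN th z = (\<lambda>m. c * e0 m + v m)" using B_elim[OF anti zB] by blast
  let ?q = "NN th' b"
  have E: "(\<lambda>m. c * e0 m + v m) = dop ?q"
  proof -
    have "NN th z = NN th' (gmap n th' th z)" using gC[OF zB] by simp
    also have "\<dots> = dop ?q" unfolding gz using opsT' bC by simp
    finally show ?thesis using cv(2) by simp
  qed
  have "pproj 0 (\<lambda>m. c * e0 m + v m) = (\<lambda>m. c * e0 m + 0)" unfolding pproj_Bform[OF cv(1)] by simp
  then have "(\<lambda>m. c * e0 m + 0) = (\<lambda>m. 0)" unfolding E pproj0_dop by simp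
  then have "c * e0 (\<lambda>_. 0, None) + 0 = 0" by (rule fun_cong)
  then have "c * e0 (\<lambda>_. 0, None) = 0" by simp
  then have c0: "c = 0" by (simp add: e0_def)
  have vq: "v = dop ?q" using E c0 by simp
  have "dop ?q = (\<lambda>m. 0)"
  proof (rule comp_zero)
    fix a i assume "dop ?q (a, Some i) \<noteq> 0"
    then have "v (a, Some i) \<noteq> 0" using vq by simp
    then show "\<exists>j<i. 0 < a j" using cv(1) unfolding Vset_def by blast
  qed
  then have "NN th z = (\<lambda>m. 0)" using cv(2) c0 vq by simp
  then have zz: "z = dg_zero (A_theta n th)" using inj[OF anti zC] opsT by simp
  have "dg_zero (A_theta n th) \<in> dg_hom (A_theta n th) (k - 1) \<inter> Bcar n th"
    using e_grading[OF anti] B_zero[OF anti] by blast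
  moreover have "z = dg_diff (A_theta n th) (dg_zero (A_theta n th))"
    using zz B_diff[OF anti B_zero[OF anti]] by simp
  ultimately show ?thesis by blast
qed

lemma qiso: "quasi_isomorphism (Bdga n th) (A_theta n th') (gmap n th' th)"
  unfolding quasi_isomorphism_def
proof (intro conjI allI)
  show "dga_morphism (Bdga n th) (A_theta n th') (gmap n th' th)" by (rule morph)
next
  fix k
  show "\<forall>z'\<in>dg_hom (A_theta n th') k. dg_diff (A_theta n th') z' = dg_zero (A_theta n th') \<longrightarrow>
            (\<exists>z\<in>dg_hom (Bdga n th) k. dg_diff (Bdga n th) z = dg_zero (Bdga n th) \<and>
               (\<exists>b\<in>dg_hom (A_theta n th') (k - 1). dg_add (A_theta n th') (gmap n th' th z) (dg_diff (A_theta n th') b) = z'))"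
    unfolding B_fields using surj_part by blast
  show "\<forall>z\<in>dg_hom (Bdga n th) k. dg_diff (Bdga n th) z = dg_zero (Bdga n th) \<and>
               (\<exists>b\<in>dg_hom (A_theta n th') (k - 1). gmap n th' th z = dg_diff (A_theta n th') b) \<longrightarrow>
            (\<exists>a\<in>dg_hom (Bdga n th) (k - 1). z = dg_diff (Bdga n th) a)"
    unfolding B_fields using inj_part by blast
qed

end

theorem proposition1:
  fixes n :: nat and \<theta> \<theta>' :: "nat \<Rightarrow> nat \<Rightarrow> real"
  assumes "n \<ge> 1"
    and "antisymmetric_matrix n \<theta>"
    and "antisymmetric_matrix n \<theta>'"
  shows "quasi_isomorphic (A_theta n \<theta>) (A_theta n \<theta>')"
proof -
  have q1: "qiso_from (Bdga n \<theta>) (A_theta n \<theta>)"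
    unfolding qiso_from_def using qiso[OF assms(2) assms(2)] by blast
  have q2: "qiso_from (Bdga n \<theta>) (A_theta n \<theta>')"
    unfolding qiso_from_def using qiso[OF assms(2) assms(3)] by blast
  show ?thesis
    unfolding quasi_isomorphic_def
  proof (intro exI[of _ "[Bdga n \<theta>]"] conjI)
    show "odd (length [Bdga n \<theta>])" by simp
    show "let D = A_theta n \<theta> # [Bdga n \<theta>] @ [A_theta n \<theta>'] in
      \<forall>j\<le>length [Bdga n \<theta>]. if even j then qiso_from (D ! (j + 1)) (D ! j) else qiso_from (D ! j) (D ! (j + 1))"
      unfolding Let_def
    proof (intro allI impI)
      fix j :: nat assume "j \<le> length [Bdga n \<theta>]"
      then have "j = 0 \<or> j = 1" by auto
      then show "if even j then qiso_from ((A_theta n \<theta> # [Bdga n \<theta>] @ [A_theta n \<theta>']) ! (j + 1)) ((A_theta n \<theta> # [Bdga n \<theta>] @ [A_theta n \<theta>']) ! j)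
          else qiso_from ((A_theta n \<theta> # [Bdga n \<theta>] @ [A_theta n \<theta>']) ! j) ((A_theta n \<theta> # [Bdga n \<theta>] @ [A_theta n \<theta>']) ! (j + 1))"
        using q1 q2 by auto
    qed
  qed
qed

end
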